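(* Let $n, m, k, l, s, t, i$ be positive integers with $\min\{m,n\}\geq (t+1)(k-t+1)$, $k\geq l> t\geq 3$, $i+2\leq s \leq i+k-t$ and $t+2 \leq i\leq k$. Then \[\frac{(m-l+t-i)(n-s-k+i)\,S(n,s,i,k)\,S(m,s,s+t-i,l)}{(m-s+1)(n-s+1)\,T(n,s,i,k)\,T(m,s,s+t-i,l)}>1,\] where for positive integers $n,s,i,j$, \[S(n,s,i,j)=s(n-s+1)-i(j-i),\qquad T(n,s,i,j)=i(n-j-s+i+1)+(s-i)(j-i+1).\] *)

theory Defs
  imports Complex_Main
begin

definition S :: "int \<Rightarrow> int \<Rightarrow> int \<Rightarrow> int \<Rightarrow> int" where
  "S n s i j = s * (n - s + 1) - i * (j - i)"

definition T :: "int \<Rightarrow> int \<Rightarrow> int \<Rightarrow> int \<Rightarrow> int" where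
  "T n s i j = i * (n - j - s + i + 1) + (s - i) * (j - i + 1)"

end

theory Submission
  imports Defs
begin

lemma pos_int_add: "0 < (c::nat) \<Longrightarrow> 0 < int (c + X)"
  by simp

lemma poly_pos1:
  fixes x1 x2 x3 x4 x5 x6 x7 :: nat and n m k l s t i :: int
  assumes "t = int x1 + 3" "i = int x1 + int x2 + int x3 + 5" "s = int x1 + 2 * int x2 + int x3 + 7"
    "k = int x1 + int x2 + int x3 + int x4 + 5" "l = int x1 + int x2 + int x3 + int x4 + 5 - int x5"
    "n = (int x1 + 4) * (int x2 + int x3 + int x4 + 3) + int x6"
    "m = (int x1 + 4) * (int x2 + int x3 + int x4 + 3) + int x7"
  shows "0 < (m - l + t - i) * (n - s - k + i) * S n s i k * S m s (s + t - i) l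
       - (m - s + 1) * (n - s + 1) * T n s i k * T m s (s + t - i) l"
proof -
  have eq: "(m - l + t - i) * (n - s - k + i) * S n s i k * S m s (s + t - i) l
       - (m - s + 1) * (n - s + 1) * T n s i k * T m s (s + t - i) l = int (7236 + (4266 * x7 + 510 * x7^2 + 4266 * x6 + 2085 * x6 * x7 + 229 * x6 * x7^2 + 510 * x6^2 + 229 * x6^2 * x7 + 24 * x6^2 * x7^2 + 10614 * x5 + 1944 * x5 * x7 + 4043 * x5 * x6 + 738 * x5 * x6 * x7 + 379 * x5 * x6^2 + 69 * x5 * x6^2 * x7 + 1050 * x5^2 + 385 * x5^2 * x6 + 35 * x5^2 * x6^2 + 12900 * x4 + 6433 * x4 * x7 + 537 * x4 * x7^2 + 6433 * x4 * x6 + 2188 * x4 * x6 * x7 + 123 * x4 * x6 * x7^2 + 537 * x4 * x6^2 + 123 * x4 * x6^2 * x7 + 17683 * x4 * x5 + 2202 * x4 * x5 * x7 + 4464 * x4 * x5 * x6 + 417 * x4 * x5 * x6 * x7 + 206 * x4 * x5 * x6^2 + 1205 * x4 * x5^2 + 220 * x4 * x5^2 * x6 + 8049 * x4^2 + 3191 * x4^2 * x7 + 143 * x4^2 * x7^2 + 3191 * x4^2 * x6 + 567 * x4^2 * x6 * x7 + 143 * x4^2 * x6^2 + 9797 * x4^2 * x5 + 624 * x4^2 * x5 * x7 + 1228 * x4^2 * x5 * x6 + 345 * x4^2 * x5^2 + 1978 * x4^3 + 520 * x4^3 * x7 + 520 * x4^3 * x6 + 1806 * x4^3 * x5 + 137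 * x4^4 + 19518 * x3 + 9567 * x3 * x7 + 927 * x3 * x7^2 + 7216 * x3 * x6 + 2898 * x3 * x6 * x7 + 238 * x3 * x6 * x7^2 + 506 * x3 * x6^2 + 162 * x3 * x6^2 * x7 + 9 * x3 * x6^2 * x7^2 + 19635 * x3 * x5 + 2868 * x3 * x5 * x7 + 5073 * x3 * x5 * x6 + 649 * x3 * x5 * x6 * x7 + 258 * x3 * x5 * x6^2 + 21 * x3 * x5 * x6^2 * x7 + 1305 * x3 * x5^2 + 265 * x3 * x5^2 * x6 + 5 * x3 * x5^2 * x6^2 + 30641 * x3 * x4 + 11208 * x3 * x4 * x7 + 631 * x3 * x4 * x7^2 + 8533 * x3 * x4 * x6 + 2051 * x3 * x4 * x6 * x7 + 51 * x3 * x4 * x6 * x7^2 + 390 * x3 * x4 * x6^2 + 51 * x3 * x4 * x6^2 * x7 + 24185 * x3 * x4 * x5 + 1992 * x3 * x4 * x5 * x7 + 3639 * x3 * x4 * x5 * x6 + 132 * x3 * x4 * x5 * x6 * x7 + 74 * x3 * x4 * x5 * x6^2 + 825 * x3 * x4 * x5^2 + 30 * x3 * x4 * x5^2 * x6 + 17122 * x3 * x4^2 + 3930 * x3 * x4^2 * x7 + 72 * x3 * x4^2 * x7^2 + 3088 * x3 * x4^2 * x6 + 276 * x3 * x4^2 * x6 * x7 + 65 * x3 * x4^2 * x6^2 + 8709 * x3 * x4^2 * x5 + 209 * x3 * x4^2 * x5 * x7 + 468 * x3 * x4^2 * x5 * x6 + 45 * x3 * x4^2 * x5^2 + 4058 *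 x3 * x4^3 + 367 * x3 * x4^3 * x7 + 318 * x3 * x4^3 * x6 + 746 * x3 * x4^3 * x5 + 361 * x3 * x4^4 + 20364 * x3^2 + 7713 * x3^2 * x7 + 528 * x3^2 * x7^2 + 4835 * x3^2 * x6 + 1410 * x3^2 * x6 * x7 + 65 * x3^2 * x6 * x7^2 + 208 * x3^2 * x6^2 + 43 * x3^2 * x6^2 * x7 + x3^2 * x6^2 * x7^2 + 13866 * x3^2 * x5 + 1392 * x3^2 * x5 * x7 + 2281 * x3^2 * x5 * x6 + 149 * x3^2 * x5 * x6 * x7 + 65 * x3^2 * x5 * x6^2 + 2 * x3^2 * x5 * x6^2 * x7 + 480 * x3^2 * x5^2 + 30 * x3^2 * x5^2 * x6 + 25991 * x3^2 * x4 + 6372 * x3^2 * x4 * x7 + 186 * x3^2 * x4 * x7^2 + 4236 * x3^2 * x4 * x6 + 604 * x3^2 * x4 * x6 * x7 + 6 * x3^2 * x4 * x6 * x7^2 + 107 * x3^2 * x4 * x6^2 + 6 * x3^2 * x4 * x6^2 * x7 + 11670 * x3^2 * x4 * x5 + 471 * x3^2 * x4 * x5 * x7 + 950 * x3^2 * x4 * x5 * x6 + 13 * x3^2 * x4 * x5 * x6 * x7 + 8 * x3^2 * x4 * x5 * x6^2 + 90 * x3^2 * x4 * x5^2 + 11127 * x3^2 * x4^2 + 1327 * x3^2 * x4^2 * x7 + 9 * x3^2 * x4^2 * x7^2 + 992 * x3^2 * x4^2 * x6 + 35 * x3^2 * x4^2 * x6 * x7 + 8 * x3^2 * x4^2 *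 x6^2 + 2367 * x3^2 * x4^2 * x5 + 21 * x3^2 * x4^2 * x5 * x7 + 52 * x3^2 * x4^2 * x5 * x6 + 1759 * x3^2 * x4^3 + 51 * x3^2 * x4^3 * x7 + 44 * x3^2 * x4^3 * x6 + 84 * x3^2 * x4^3 * x5 + 60 * x3^2 * x4^4 + 10785 * x3^3 + 2886 * x3^3 * x7 + 114 * x3^3 * x7^2 + 1633 * x3^3 * x6 + 301 * x3^3 * x6 * x7 + 6 * x3^3 * x6 * x7^2 + 41 * x3^3 * x6^2 + 4 * x3^3 * x6^2 * x7 + 4719 * x3^3 * x5 + 258 * x3^3 * x5 * x7 + 459 * x3^3 * x5 * x6 + 12 * x3^3 * x5 * x6 * x7 + 6 * x3^3 * x5 * x6^2 + 45 * x3^3 * x5^2 + 10269 * x3^3 * x4 + 1476 * x3^3 * x4 * x7 + 18 * x3^3 * x4 * x7^2 + 937 * x3^3 * x4 * x6 + 59 * x3^3 * x4 * x6 * x7 + 10 * x3^3 * x4 * x6^2 + 2409 * x3^3 * x4 * x5 + 39 * x3^3 * x4 * x5 * x7 + 87 * x3^3 * x4 * x5 * x6 + 2859 * x3^3 * x4^2 + 138 * x3^3 * x4^2 * x7 + 101 * x3^3 * x4^2 * x6 + 219 * x3^3 * x4^2 * x5 + 201 * x3^3 * x4^3 + 3099 * x3^4 + 516 * x3^4 * x7 + 9 * x3^4 * x7^2 + 276 * x3^4 * x6 + 24 * x3^4 * x6 * x7 + 3 * x3^4 * x6^2 + 792 * x3^4 * x5 + 18 * x3^4 * x5 * x7 +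 36 * x3^4 * x5 * x6 + 1920 * x3^4 * x4 + 123 * x3^4 * x4 * x7 + 75 * x3^4 * x4 * x6 + 189 * x3^4 * x4 * x5 + 249 * x3^4 * x4^2 + 459 * x3^5 + 36 * x3^5 * x7 + 18 * x3^5 * x6 + 54 * x3^5 * x5 + 135 * x3^5 * x4 + 27 * x3^6 + 26136 * x2 + 10350 * x2 * x7 + 896 * x2 * x7^2 + 10350 * x2 * x6 + 3608 * x2 * x6 * x7 + 277 * x2 * x6 * x7^2 + 896 * x2 * x6^2 + 277 * x2 * x6^2 * x7 + 18 * x2 * x6^2 * x7^2 + 18808 * x2 * x5 + 2700 * x2 * x5 * x7 + 5541 * x2 * x5 * x6 + 732 * x2 * x5 * x6 * x7 + 373 * x2 * x5 * x6^2 + 42 * x2 * x5 * x6^2 * x7 + 1280 * x2 * x5^2 + 327 * x2 * x5^2 * x6 + 17 * x2 * x5^2 * x6^2 + 45184 * x2 * x4 + 13359 * x2 * x4 * x7 + 735 * x2 * x4 * x7^2 + 13359 * x2 * x4 * x6 + 2968 * x2 * x4 * x6 * x7 + 102 * x2 * x4 * x6 * x7^2 + 735 * x2 * x4 * x6^2 + 102 * x2 * x4 * x6^2 * x7 + 25126 * x2 * x4 * x5 + 2253 * x2 * x4 * x5 * x7 + 4583 * x2 * x4 * x5 * x6 + 264 * x2 * x4 * x5 * x6 * x7 + 134 * x2 * x4 * x5 * x6^2 + 1036 * x2 * x4 * x5^2 + 109 * x2 * x4 * x5^2 * x6 + 28310 * x2 * x4^2 + 5458 * x2 * x4^2 * x7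 + 137 * x2 * x4^2 * x7^2 + 5458 * x2 * x4^2 * x6 + 552 * x2 * x4^2 * x6 * x7 + 137 * x2 * x4^2 * x6^2 + 10480 * x2 * x4^2 * x5 + 411 * x2 * x4^2 * x5 * x7 + 838 * x2 * x4^2 * x5 * x6 + 174 * x2 * x4^2 * x5^2 + 7568 * x2 * x4^3 + 685 * x2 * x4^3 * x7 + 685 * x2 * x4^3 * x6 + 1296 * x2 * x4^3 * x5 + 722 * x2 * x4^4 + 53408 * x2 * x3 + 17046 * x2 * x3 * x7 + 1103 * x2 * x3 * x7^2 + 13965 * x2 * x3 * x6 + 3631 * x2 * x3 * x6 * x7 + 176 * x2 * x3 * x6 * x7^2 + 704 * x2 * x3 * x6^2 + 132 * x2 * x3 * x6^2 * x7 + 3 * x2 * x3 * x6^2 * x7^2 + 27303 * x2 * x3 * x5 + 2858 * x2 * x3 * x5 * x7 + 5131 * x2 * x3 * x5 * x6 + 404 * x2 * x3 * x5 * x6 * x7 + 169 * x2 * x3 * x5 * x6^2 + 6 * x2 * x3 * x5 * x6^2 * x7 + 1121 * x2 * x3 * x5^2 + 133 * x2 * x3 * x5^2 * x6 + x2 * x3 * x5^2 * x6^2 + 72850 * x2 * x3 * x4 + 15482 * x2 * x3 * x4 * x7 + 503 * x2 * x3 * x4 * x7^2 + 12894 * x2 * x3 * x4 * x6 + 1732 * x2 * x3 * x4 * x6 * x7 + 18 * x2 * x3 * x4 * x6 * x7^2 + 359 * x2 * x3 * x4 * x6^2 + 18 * x2 * x3 * x4 * x6^2 * x7 + 25109 *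 x2 * x3 * x4 * x5 + 1278 * x2 * x3 * x4 * x5 * x7 + 2416 * x2 * x3 * x4 * x5 * x6 + 39 * x2 * x3 * x4 * x5 * x6 * x7 + 22 * x2 * x3 * x4 * x5 * x6^2 + 420 * x2 * x3 * x4 * x5^2 + 6 * x2 * x3 * x4 * x5^2 * x6 + 33285 * x2 * x3 * x4^2 + 3702 * x2 * x3 * x4^2 * x7 + 27 * x2 * x3 * x4^2 * x7^2 + 3179 * x2 * x3 * x4^2 * x6 + 105 * x2 * x3 * x4^2 * x6 * x7 + 25 * x2 * x3 * x4^2 * x6^2 + 5950 * x2 * x3 * x4^2 * x5 + 64 * x2 * x3 * x4^2 * x5 * x7 + 144 * x2 * x3 * x4^2 * x5 * x6 + 9 * x2 * x3 * x4^2 * x5^2 + 5502 * x2 * x3 * x4^3 + 152 * x2 * x3 * x4^3 * x7 + 138 * x2 * x3 * x4^3 * x6 + 238 * x2 * x3 * x4^3 * x5 + 185 * x2 * x3 * x4^4 + 41677 * x2 * x3^2 + 9708 * x2 * x3^2 * x7 + 388 * x2 * x3^2 * x7^2 + 6928 * x2 * x3^2 * x6 + 1132 * x2 * x3^2 * x6 * x7 + 22 * x2 * x3^2 * x6 * x7^2 + 194 * x2 * x3^2 * x6^2 + 16 * x2 * x3^2 * x6^2 * x7 + 14150 * x2 * x3^2 * x5 + 880 * x2 * x3^2 * x5 * x7 + 1502 * x2 * x3^2 * x5 * x6 + 44 * x2 * x3^2 * x5 * x6 * x7 + 20 * x2 * x3^2 * x5 * x6^2 + 246 * x2 * x3^2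 * x5^2 + 6 * x2 * x3^2 * x5^2 * x6 + 41411 * x2 * x3^2 * x4 + 5354 * x2 * x3^2 * x4 * x7 + 66 * x2 * x3^2 * x4 * x7^2 + 4027 * x2 * x3^2 * x4 * x6 + 225 * x2 * x3^2 * x4 * x6 * x7 + 44 * x2 * x3^2 * x4 * x6^2 + 7804 * x2 * x3^2 * x4 * x5 + 143 * x2 * x3^2 * x4 * x5 * x7 + 295 * x2 * x3^2 * x4 * x5 * x6 + 18 * x2 * x3^2 * x4 * x5^2 + 11868 * x2 * x3^2 * x4^2 + 519 * x2 * x3^2 * x4^2 * x7 + 423 * x2 * x3^2 * x4^2 * x6 + 752 * x2 * x3^2 * x4^2 * x5 + 822 * x2 * x3^2 * x4^3 + 15656 * x2 * x3^3 + 2294 * x2 * x3^3 * x7 + 39 * x2 * x3^3 * x7^2 + 1509 * x2 * x3^3 * x6 + 112 * x2 * x3^3 * x6 * x7 + 18 * x2 * x3^3 * x6^2 + 3123 * x2 * x3^3 * x5 + 78 * x2 * x3^3 * x5 * x7 + 144 * x2 * x3^3 * x5 * x6 + 9 * x2 * x3^3 * x5^2 + 9908 * x2 * x3^3 * x4 + 559 * x2 * x3^3 * x4 * x7 + 401 * x2 * x3^3 * x4 * x6 + 765 * x2 * x3^3 * x4 * x5 + 1276 * x2 * x3^3 * x4^2 + 2841 * x2 * x3^4 + 192 * x2 * x3^4 * x7 + 120 * x2 * x3^4 * x6 + 252 * x2 * x3^4 * x5 + 837 * x2 * x3^4 * x4 + 198 * x2 * x3^5 + 30816 * x2^2 + 8826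 * x2^2 * x7 + 536 * x2^2 * x7^2 + 8826 * x2^2 * x6 + 2147 * x2^2 * x6 * x7 + 103 * x2^2 * x6 * x7^2 + 536 * x2^2 * x6^2 + 103 * x2^2 * x6^2 * x7 + 3 * x2^2 * x6^2 * x7^2 + 13034 * x2^2 * x5 + 1368 * x2^2 * x5 * x7 + 2778 * x2^2 * x5 * x6 + 234 * x2^2 * x5 * x6 * x7 + 118 * x2^2 * x5 * x6^2 + 6 * x2^2 * x5 * x6^2 * x7 + 574 * x2^2 * x5^2 + 90 * x2^2 * x5^2 * x6 + 2 * x2^2 * x5^2 * x6^2 + 44540 * x2^2 * x4 + 8730 * x2^2 * x4 * x7 + 294 * x2^2 * x4 * x7^2 + 8730 * x2^2 * x4 * x6 + 1180 * x2^2 * x4 * x6 * x7 + 18 * x2^2 * x4 * x6 * x7^2 + 294 * x2^2 * x4 * x6^2 + 18 * x2^2 * x4 * x6^2 * x7 + 12987 * x2^2 * x4 * x5 + 741 * x2^2 * x4 * x5 * x7 + 1505 * x2^2 * x4 * x5 * x6 + 39 * x2^2 * x4 * x5 * x6 * x7 + 20 * x2^2 * x4 * x5 * x6^2 + 289 * x2^2 * x4 * x5^2 + 13 * x2^2 * x4 * x5^2 * x6 + 21933 * x2^2 * x4^2 + 2413 * x2^2 * x4^2 * x7 + 26 * x2^2 * x4^2 * x7^2 + 2413 * x2^2 * x4^2 * x6 + 105 * x2^2 * x4^2 * x6 * x7 + 26 * x2^2 * x4^2 * x6^2 + 3565 * x2^2 * x4^2 * x5 + 63 * x2^2 * x4^2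 * x5 * x7 + 130 * x2^2 * x4^2 * x5 * x6 + 21 * x2^2 * x4^2 * x5^2 + 4058 * x2^2 * x4^3 + 145 * x2^2 * x4^3 * x7 + 145 * x2^2 * x4^3 * x6 + 210 * x2^2 * x4^3 * x5 + 185 * x2^2 * x4^4 + 48322 * x2^2 * x3 + 10355 * x2^2 * x3 * x7 + 409 * x2^2 * x3 * x7^2 + 8869 * x2^2 * x3 * x6 + 1394 * x2^2 * x3 * x6 * x7 + 30 * x2^2 * x3 * x6 * x7^2 + 287 * x2^2 * x3 * x6^2 + 24 * x2^2 * x3 * x6^2 * x7 + 13892 * x2^2 * x3 * x5 + 922 * x2^2 * x3 * x5 * x7 + 1674 * x2^2 * x3 * x5 * x6 + 60 * x2^2 * x3 * x5 * x6 * x7 + 26 * x2^2 * x3 * x5 * x6^2 + 312 * x2^2 * x3 * x5^2 + 16 * x2^2 * x3 * x5^2 * x6 + 50637 * x2^2 * x3 * x4 + 6283 * x2^2 * x3 * x4 * x7 + 90 * x2^2 * x3 * x4 * x7^2 + 5479 * x2^2 * x3 * x4 * x6 + 321 * x2^2 * x3 * x4 * x6 * x7 + 70 * x2^2 * x3 * x4 * x6^2 + 8384 * x2^2 * x3 * x4 * x5 + 195 * x2^2 * x3 * x4 * x5 * x7 + 377 * x2^2 * x3 * x4 * x5 * x6 + 51 * x2^2 * x3 * x4 * x5^2 + 15609 * x2^2 * x3 * x4^2 + 726 * x2^2 * x3 * x4^2 * x7 + 651 * x2^2 * x3 * x4^2 * x6 + 953 * x2^2 * x3 * x4^2 * x5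 + 1240 * x2^2 * x3 * x4^3 + 27325 * x2^2 * x3^2 + 3763 * x2^2 * x3^2 * x7 + 67 * x2^2 * x3^2 * x7^2 + 2893 * x2^2 * x3^2 * x6 + 208 * x2^2 * x3^2 * x6 * x7 + 39 * x2^2 * x3^2 * x6^2 + 4676 * x2^2 * x3^2 * x5 + 134 * x2^2 * x3^2 * x5 * x7 + 236 * x2^2 * x3^2 * x5 * x6 + 30 * x2^2 * x3^2 * x5^2 + 18179 * x2^2 * x3^2 * x4 + 1011 * x2^2 * x3^2 * x4 * x7 + 816 * x2^2 * x3^2 * x4 * x6 + 1245 * x2^2 * x3^2 * x4 * x5 + 2531 * x2^2 * x3^2 * x4^2 + 6622 * x2^2 * x3^3 + 424 * x2^2 * x3^3 * x7 + 306 * x2^2 * x3^3 * x6 + 498 * x2^2 * x3^3 * x5 + 2052 * x2^2 * x3^3 * x4 + 579 * x2^2 * x3^4 + 17368 * x2^3 + 3498 * x2^3 * x7 + 134 * x2^3 * x7^2 + 3498 * x2^3 * x6 + 536 * x2^3 * x6 * x7 + 12 * x2^3 * x6 * x7^2 + 134 * x2^3 * x6^2 + 12 * x2^3 * x6^2 * x7 + 4424 * x2^3 * x5 + 300 * x2^3 * x5 * x7 + 604 * x2^3 * x5 * x6 + 24 * x2^3 * x5 * x6 * x7 + 12 * x2^3 * x5 * x6^2 + 112 * x2^3 * x5^2 + 8 * x2^3 * x5^2 * x6 + 19136 * x2^3 * x4 + 2312 * x2^3 * x4 * x7 + 36 * x2^3 * x4 * x7^2 + 2312 * x2^3 * x4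 * x6 + 144 * x2^3 * x4 * x6 * x7 + 36 * x2^3 * x4 * x6^2 + 2900 * x2^3 * x4 * x5 + 78 * x2^3 * x4 * x5 * x7 + 158 * x2^3 * x4 * x5 * x6 + 26 * x2^3 * x4 * x5^2 + 6348 * x2^3 * x4^2 + 314 * x2^3 * x4^2 * x7 + 314 * x2^3 * x4^2 * x6 + 386 * x2^3 * x4^2 * x5 + 580 * x2^3 * x4^3 + 19896 * x2^3 * x3 + 2632 * x2^3 * x3 * x7 + 48 * x2^3 * x3 * x7^2 + 2320 * x2^3 * x3 * x6 + 168 * x2^3 * x3 * x6 * x7 + 36 * x2^3 * x3 * x6^2 + 3068 * x2^3 * x3 * x5 + 96 * x2^3 * x3 * x5 * x7 + 176 * x2^3 * x3 * x5 * x6 + 28 * x2^3 * x3 * x5^2 + 13964 * x2^3 * x3 * x4 + 786 * x2^3 * x3 * x4 * x7 + 706 * x2^3 * x3 * x4 * x6 + 900 * x2^3 * x3 * x4 * x5 + 2126 * x2^3 * x3 * x4^2 + 7320 * x2^3 * x3^2 + 460 * x2^3 * x3^2 * x7 + 372 * x2^3 * x3^2 * x6 + 500 * x2^3 * x3^2 * x5 + 2410 * x2^3 * x3^2 * x4 + 864 * x2^3 * x3^3 + 5164 * x2^4 + 660 * x2^4 * x7 + 12 * x2^4 * x7^2 + 660 * x2^4 * x6 + 48 * x2^4 * x6 * x7 + 12 * x2^4 * x6^2 + 736 * x2^4 * x5 + 24 * x2^4 * x5 * x7 + 48 * x2^4 * x5 * x6 + 8 * x2^4 * x5^2 + 3808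 * x2^4 * x4 + 216 * x2^4 * x4 * x7 + 216 * x2^4 * x4 * x6 + 236 * x2^4 * x4 * x5 + 628 * x2^4 * x4^2 + 3864 * x2^4 * x3 + 240 * x2^4 * x3 * x7 + 216 * x2^4 * x3 * x6 + 248 * x2^4 * x3 * x5 + 1348 * x2^4 * x3 * x4 + 696 * x2^4 * x3^2 + 784 * x2^5 + 48 * x2^5 * x7 + 48 * x2^5 * x6 + 48 * x2^5 * x5 + 288 * x2^5 * x4 + 288 * x2^5 * x3 + 48 * x2^6 + 15840 * x1 + 6294 * x1 * x7 + 506 * x1 * x7^2 + 6294 * x1 * x6 + 2038 * x1 * x6 * x7 + 128 * x1 * x6 * x7^2 + 506 * x1 * x6^2 + 128 * x1 * x6^2 * x7 + 4 * x1 * x6^2 * x7^2 + 14494 * x1 * x5 + 1956 * x1 * x5 * x7 + 3988 * x1 * x5 * x6 + 464 * x1 * x5 * x6 * x7 + 234 * x1 * x5 * x6^2 + 18 * x1 * x5 * x6^2 * x7 + 1130 * x1 * x5^2 + 272 * x1 * x5^2 * x6 + 12 * x1 * x5^2 * x6^2 + 29896 * x1 * x4 + 9361 * x1 * x4 * x7 + 507 * x1 * x4 * x7^2 + 9361 * x1 * x4 * x6 + 2036 * x1 * x4 * x6 * x7 + 62 * x1 * x4 * x6 * x7^2 + 507 * x1 * x4 * x6^2 + 62 * x1 * x4 * x6^2 * x7 + 23245 * x1 * x4 * x5 + 2094 * x1 * x4 * x5 * x7 + 4180 * x1 * x4 * x5 * x6 + 240 * x1 * x4 * x5 * x6 * x7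 + 117 * x1 * x4 * x5 * x6^2 + 1231 * x1 * x4 * x5^2 + 144 * x1 * x4 * x5^2 * x6 + 20632 * x1 * x4^2 + 4594 * x1 * x4^2 * x7 + 127 * x1 * x4^2 * x7^2 + 4594 * x1 * x4^2 * x6 + 502 * x1 * x4^2 * x6 * x7 + 127 * x1 * x4^2 * x6^2 + 12384 * x1 * x4^2 * x5 + 559 * x1 * x4^2 * x5 * x7 + 1089 * x1 * x4^2 * x5 * x6 + 334 * x1 * x4^2 * x5^2 + 6122 * x1 * x4^3 + 743 * x1 * x4^3 * x7 + 743 * x1 * x4^3 * x6 + 2192 * x1 * x4^3 * x5 + 650 * x1 * x4^4 + 40370 * x1 * x3 + 13227 * x1 * x3 * x7 + 825 * x1 * x3 * x7^2 + 10991 * x1 * x3 * x6 + 2798 * x1 * x3 * x6 * x7 + 118 * x1 * x3 * x6 * x7^2 + 571 * x1 * x3 * x6^2 + 99 * x1 * x3 * x6^2 * x7 + x1 * x3 * x6^2 * x7^2 + 26087 * x1 * x3 * x5 + 2690 * x1 * x3 * x5 * x7 + 4889 * x1 * x3 * x5 * x6 + 363 * x1 * x3 * x5 * x6 * x7 + 158 * x1 * x3 * x5 * x6^2 + 3 * x1 * x3 * x5 * x6^2 * x7 + 1341 * x1 * x3 * x5^2 + 173 * x1 * x3 * x5^2 * x6 + x1 * x3 * x5^2 * x6^2 + 64071 * x1 * x3 * x4 + 15000 * x1 * x3 * x4 * x7 + 529 * x1 * x3 * x4 * x7^2 + 12631 * x1 * x3 * x4 * x6 + 1854 * x1 * x3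 * x4 * x6 * x7 + 23 * x1 * x3 * x4 * x6 * x7^2 + 400 * x1 * x3 * x4 * x6^2 + 23 * x1 * x3 * x4 * x6^2 * x7 + 30562 * x1 * x3 * x4 * x5 + 1735 * x1 * x3 * x4 * x5 * x7 + 3212 * x1 * x3 * x4 * x5 * x6 + 60 * x1 * x3 * x4 * x5 * x6 * x7 + 31 * x1 * x3 * x4 * x5 * x6^2 + 800 * x1 * x3 * x4 * x5^2 + 16 * x1 * x3 * x4 * x5^2 * x6 + 36150 * x1 * x3 * x4^2 + 5053 * x1 * x3 * x4^2 * x7 + 57 * x1 * x3 * x4^2 * x7^2 + 4391 * x1 * x3 * x4^2 * x6 + 226 * x1 * x3 * x4^2 * x6 * x7 + 56 * x1 * x3 * x4^2 * x6^2 + 10298 * x1 * x3 * x4^2 * x5 + 159 * x1 * x3 * x4^2 * x5 * x7 + 340 * x1 * x3 * x4^2 * x5 * x6 + 39 * x1 * x3 * x4^2 * x5^2 + 8464 * x1 * x3 * x4^3 + 441 * x1 * x3 * x4^3 * x7 + 420 * x1 * x3 * x4^3 * x6 + 767 * x1 * x3 * x4^3 * x5 + 682 * x1 * x3 * x4^4 + 41063 * x1 * x3^2 + 10296 * x1 * x3^2 * x7 + 434 * x1 * x3^2 * x7^2 + 7597 * x1 * x3^2 * x6 + 1349 * x1 * x3^2 * x6 * x7 + 28 * x1 * x3^2 * x6 * x7^2 + 252 * x1 * x3^2 * x6^2 + 25 * x1 * x3^2 * x6^2 * x7 + 17822 * x1 * x3^2 * x5 + 1208 * x1 * x3^2 *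 x5 * x7 + 2082 * x1 * x3^2 * x5 * x6 + 68 * x1 * x3^2 * x5 * x6 * x7 + 32 * x1 * x3^2 * x5 * x6^2 + 466 * x1 * x3^2 * x5^2 + 16 * x1 * x3^2 * x5^2 * x6 + 51721 * x1 * x3^2 * x4 + 8112 * x1 * x3^2 * x4 * x7 + 143 * x1 * x3^2 * x4 * x7^2 + 6317 * x1 * x3^2 * x4 * x6 + 510 * x1 * x3^2 * x4 * x6 * x7 + 2 * x1 * x3^2 * x4 * x6 * x7^2 + 111 * x1 * x3^2 * x4 * x6^2 + 2 * x1 * x3^2 * x4 * x6^2 * x7 + 13919 * x1 * x3^2 * x4 * x5 + 361 * x1 * x3^2 * x4 * x5 * x7 + 719 * x1 * x3^2 * x4 * x5 * x6 + 4 * x1 * x3^2 * x4 * x5 * x6 * x7 + 2 * x1 * x3^2 * x4 * x5 * x6^2 + 78 * x1 * x3^2 * x4 * x5^2 + 21559 * x1 * x3^2 * x4^2 + 1577 * x1 * x3^2 * x4^2 * x7 + 6 * x1 * x3^2 * x4^2 * x7^2 + 1362 * x1 * x3^2 * x4^2 * x6 + 24 * x1 * x3^2 * x4^2 * x6 * x7 + 6 * x1 * x3^2 * x4^2 * x6^2 + 2487 * x1 * x3^2 * x4^2 * x5 + 13 * x1 * x3^2 * x4^2 * x5 * x7 + 29 * x1 * x3^2 * x4^2 * x5 * x6 + 3209 * x1 * x3^2 * x4^3 + 53 * x1 * x3^2 * x4^3 * x7 + 51 * x1 * x3^2 * x4^3 * x6 + 73 * x1 * x3^2 * x4^3 * x5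 + 95 * x1 * x3^2 * x4^4 + 21505 * x1 * x3^3 + 3740 * x1 * x3^3 * x7 + 86 * x1 * x3^3 * x7^2 + 2618 * x1 * x3^3 * x6 + 274 * x1 * x3^3 * x6 * x7 + 2 * x1 * x3^3 * x6 * x7^2 + 52 * x1 * x3^3 * x6^2 + 2 * x1 * x3^3 * x6^2 * x7 + 5761 * x1 * x3^3 * x5 + 200 * x1 * x3^3 * x5 * x7 + 369 * x1 * x3^3 * x5 * x6 + 4 * x1 * x3^3 * x5 * x6 * x7 + 2 * x1 * x3^3 * x5 * x6^2 + 39 * x1 * x3^3 * x5^2 + 19860 * x1 * x3^3 * x4 + 1776 * x1 * x3^3 * x4 * x7 + 12 * x1 * x3^3 * x4 * x7^2 + 1386 * x1 * x3^3 * x4 * x6 + 44 * x1 * x3^3 * x4 * x6 * x7 + 10 * x1 * x3^3 * x4 * x6^2 + 2606 * x1 * x3^3 * x4 * x5 + 25 * x1 * x3^3 * x4 * x5 * x7 + 53 * x1 * x3^3 * x4 * x5 * x6 + 5255 * x1 * x3^3 * x4^2 + 148 * x1 * x3^3 * x4^2 * x7 + 130 * x1 * x3^3 * x4^2 * x6 + 199 * x1 * x3^3 * x4^2 * x5 + 334 * x1 * x3^3 * x4^3 + 6145 * x1 * x3^4 + 640 * x1 * x3^4 * x7 + 6 * x1 * x3^4 * x7^2 + 449 * x1 * x3^4 * x6 + 20 * x1 * x3^4 * x6 * x7 + 4 * x1 * x3^4 * x6^2 + 888 * x1 * x3^4 * x5 + 12 * x1 * x3^4 * x5 * x7 + 24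 * x1 * x3^4 * x5 * x6 + 3637 * x1 * x3^4 * x4 + 137 * x1 * x3^4 * x4 * x7 + 109 * x1 * x3^4 * x4 * x6 + 180 * x1 * x3^4 * x4 * x5 + 437 * x1 * x3^4 * x4^2 + 909 * x1 * x3^5 + 42 * x1 * x3^5 * x7 + 30 * x1 * x3^5 * x6 + 54 * x1 * x3^5 * x5 + 252 * x1 * x3^5 * x4 + 54 * x1 * x3^6 + 50844 * x1 * x2 + 14857 * x1 * x2 * x7 + 889 * x1 * x2 * x7^2 + 14857 * x1 * x2 * x6 + 3560 * x1 * x2 * x6 * x7 + 155 * x1 * x2 * x6 * x7^2 + 889 * x1 * x2 * x6^2 + 155 * x1 * x2 * x6^2 * x7 + 2 * x1 * x2 * x6^2 * x7^2 + 26339 * x1 * x2 * x5 + 2746 * x1 * x2 * x5 * x7 + 5563 * x1 * x2 * x5 * x6 + 442 * x1 * x2 * x5 * x6 * x7 + 222 * x1 * x2 * x5 * x6^2 + 6 * x1 * x2 * x5 * x6^2 * x7 + 1393 * x1 * x2 * x5^2 + 219 * x1 * x2 * x5^2 * x6 + 3 * x1 * x2 * x5^2 * x6^2 + 86878 * x1 * x2 * x4 + 18443 * x1 * x2 * x4 * x7 + 675 * x1 * x2 * x4 * x7^2 + 18443 * x1 * x2 * x4 * x6 + 2704 * x1 * x2 * x4 * x6 * x7 + 46 * x1 * x2 * x4 * x6 * x7^2 + 675 * x1 * x2 * x4 * x6^2 + 46 * x1 * x2 * x4 * x6^2 * x7 + 33197 * x1 * x2 * x4 * x5 + 2070 * x1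 * x2 * x4 * x5 * x7 + 4154 * x1 * x2 * x4 * x5 * x6 + 120 * x1 * x2 * x4 * x5 * x6 * x7 + 60 * x1 * x2 * x4 * x5 * x6^2 + 1017 * x1 * x2 * x4 * x5^2 + 53 * x1 * x2 * x4 * x5^2 * x6 + 53934 * x1 * x2 * x4^2 + 7215 * x1 * x2 * x4^2 * x7 + 113 * x1 * x2 * x4^2 * x7^2 + 7215 * x1 * x2 * x4^2 * x6 + 452 * x1 * x2 * x4^2 * x6 * x7 + 113 * x1 * x2 * x4^2 * x6^2 + 12826 * x1 * x2 * x4^2 * x5 + 317 * x1 * x2 * x4^2 * x5 * x7 + 638 * x1 * x2 * x4^2 * x5 * x6 + 139 * x1 * x2 * x4^2 * x5^2 + 14328 * x1 * x2 * x4^3 + 861 * x1 * x2 * x4^3 * x7 + 861 * x1 * x2 * x4^3 * x6 + 1401 * x1 * x2 * x4^3 * x5 + 1364 * x1 * x2 * x4^4 + 102043 * x1 * x2 * x3 + 23470 * x1 * x2 * x3 * x7 + 992 * x1 * x2 * x3 * x7^2 + 20441 * x1 * x2 * x3 * x6 + 3500 * x1 * x2 * x3 * x6 * x7 + 82 * x1 * x2 * x3 * x6 * x7^2 + 757 * x1 * x2 * x3 * x6^2 + 76 * x1 * x2 * x3 * x6^2 * x7 + 36971 * x1 * x2 * x3 * x5 + 2663 * x1 * x2 * x3 * x5 * x7 + 4921 * x1 * x2 * x3 * x5 * x6 + 198 * x1 * x2 * x3 * x5 * x6 * x7 + 93 * x1 * x2 * x3 * x5 * x6^2 + 1123 * x1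 * x2 * x3 * x5^2 + 70 * x1 * x2 * x3 * x5^2 * x6 + 136044 * x1 * x2 * x3 * x4 + 20233 * x1 * x2 * x3 * x4 * x7 + 405 * x1 * x2 * x3 * x4 * x7^2 + 17967 * x1 * x2 * x3 * x4 * x6 + 1496 * x1 * x2 * x3 * x4 * x6 * x7 + 6 * x1 * x2 * x3 * x4 * x6 * x7^2 + 343 * x1 * x2 * x3 * x4 * x6^2 + 6 * x1 * x2 * x3 * x4 * x6^2 * x7 + 31490 * x1 * x2 * x3 * x4 * x5 + 1022 * x1 * x2 * x3 * x4 * x5 * x7 + 1974 * x1 * x2 * x3 * x4 * x5 * x6 + 12 * x1 * x2 * x3 * x4 * x5 * x6 * x7 + 6 * x1 * x2 * x3 * x4 * x5 * x6^2 + 353 * x1 * x2 * x3 * x4 * x5^2 + 2 * x1 * x2 * x3 * x4 * x5^2 * x6 + 60536 * x1 * x2 * x3 * x4^2 + 4515 * x1 * x2 * x3 * x4^2 * x7 + 18 * x1 * x2 * x3 * x4^2 * x7^2 + 4148 * x1 * x2 * x3 * x4^2 * x6 + 72 * x1 * x2 * x3 * x4^2 * x6 * x7 + 18 * x1 * x2 * x3 * x4^2 * x6^2 + 6627 * x1 * x2 * x3 * x4^2 * x5 + 39 * x1 * x2 * x3 * x4^2 * x5 * x7 + 83 * x1 * x2 * x3 * x4^2 * x5 * x6 + 6 * x1 * x2 * x3 * x4^2 * x5^2 + 9644 * x1 * x2 * x3 * x4^3 + 159 * x1 * x2 * x3 * x4^3 * x7 + 155 * x1 * x2 * x3 * x4^3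 * x6 + 208 * x1 * x2 * x3 * x4^3 * x5 + 290 * x1 * x2 * x3 * x4^4 + 78962 * x1 * x2 * x3^2 + 12938 * x1 * x2 * x3^2 * x7 + 315 * x1 * x2 * x3^2 * x7^2 + 10311 * x1 * x2 * x3^2 * x6 + 1056 * x1 * x2 * x3^2 * x6 * x7 + 8 * x1 * x2 * x3^2 * x6 * x7^2 + 216 * x1 * x2 * x3^2 * x6^2 + 8 * x1 * x2 * x3^2 * x6^2 * x7 + 18341 * x1 * x2 * x3^2 * x5 + 731 * x1 * x2 * x3^2 * x5 * x7 + 1325 * x1 * x2 * x3^2 * x5 * x6 + 16 * x1 * x2 * x3^2 * x5 * x6 * x7 + 8 * x1 * x2 * x3^2 * x5 * x6^2 + 214 * x1 * x2 * x3^2 * x5^2 + 2 * x1 * x2 * x3^2 * x5^2 * x6 + 75926 * x1 * x2 * x3^2 * x4 + 6642 * x1 * x2 * x3^2 * x4 * x7 + 46 * x1 * x2 * x3^2 * x4 * x7^2 + 5591 * x1 * x2 * x3^2 * x4 * x6 + 172 * x1 * x2 * x3^2 * x4 * x6 * x7 + 40 * x1 * x2 * x3^2 * x4 * x6^2 + 9057 * x1 * x2 * x3^2 * x4 * x5 + 96 * x1 * x2 * x3^2 * x4 * x5 * x7 + 196 * x1 * x2 * x3^2 * x4 * x5 * x6 + 12 * x1 * x2 * x3^2 * x4 * x5^2 + 20834 * x1 * x2 * x3^2 * x4^2 + 569 * x1 * x2 * x3^2 * x4^2 * x7 + 519 * x1 * x2 * x3^2 * x4^2 * x6 + 719 * x1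 * x2 * x3^2 * x4^2 * x5 + 1327 * x1 * x2 * x3^2 * x4^3 + 29497 * x1 * x2 * x3^3 + 2943 * x1 * x2 * x3^3 * x7 + 28 * x1 * x2 * x3^3 * x7^2 + 2257 * x1 * x2 * x3^3 * x6 + 96 * x1 * x2 * x3^3 * x6 * x7 + 20 * x1 * x2 * x3^3 * x6^2 + 3789 * x1 * x2 * x3^3 * x5 + 56 * x1 * x2 * x3^3 * x5 * x7 + 108 * x1 * x2 * x3^3 * x5 * x6 + 6 * x1 * x2 * x3^3 * x5^2 + 17844 * x1 * x2 * x3^3 * x4 + 642 * x1 * x2 * x3^3 * x4 * x7 + 540 * x1 * x2 * x3^3 * x4 * x6 + 786 * x1 * x2 * x3^3 * x4 * x5 + 2141 * x1 * x2 * x3^3 * x4^2 + 5312 * x1 * x2 * x3^4 + 232 * x1 * x2 * x3^4 * x7 + 178 * x1 * x2 * x3^4 * x6 + 276 * x1 * x2 * x3^4 * x5 + 1470 * x1 * x2 * x3^4 * x4 + 366 * x1 * x2 * x3^5 + 58604 * x1 * x2^2 + 12734 * x1 * x2^2 * x7 + 537 * x1 * x2^2 * x7^2 + 12734 * x1 * x2^2 * x6 + 2148 * x1 * x2^2 * x6 * x7 + 56 * x1 * x2^2 * x6 * x7^2 + 537 * x1 * x2^2 * x6^2 + 56 * x1 * x2^2 * x6^2 * x7 + 18707 * x1 * x2^2 * x5 + 1400 * x1 * x2^2 * x5 * x7 + 2822 * x1 * x2^2 * x5 * x6 + 132 * x1 * x2^2 * x5 * x6 * x7 + 66 * x1 *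 x2^2 * x5 * x6^2 + 621 * x1 * x2^2 * x5^2 + 54 * x1 * x2^2 * x5^2 * x6 + 82110 * x1 * x2^2 * x4 + 11885 * x1 * x2^2 * x4 * x7 + 261 * x1 * x2^2 * x4 * x7^2 + 11885 * x1 * x2^2 * x4 * x6 + 1044 * x1 * x2^2 * x4 * x6 * x7 + 6 * x1 * x2^2 * x4 * x6 * x7^2 + 261 * x1 * x2^2 * x4 * x6^2 + 6 * x1 * x2^2 * x4 * x6^2 * x7 + 17226 * x1 * x2^2 * x4 * x5 + 648 * x1 * x2^2 * x4 * x5 * x7 + 1304 * x1 * x2^2 * x4 * x5 * x6 + 12 * x1 * x2^2 * x4 * x5 * x6 * x7 + 6 * x1 * x2^2 * x4 * x5 * x6^2 + 263 * x1 * x2^2 * x4 * x5^2 + 4 * x1 * x2^2 * x4 * x5^2 * x6 + 39044 * x1 * x2^2 * x4^2 + 3040 * x1 * x2^2 * x4^2 * x7 + 18 * x1 * x2^2 * x4^2 * x7^2 + 3040 * x1 * x2^2 * x4^2 * x6 + 72 * x1 * x2^2 * x4^2 * x6 * x7 + 18 * x1 * x2^2 * x4^2 * x6^2 + 4199 * x1 * x2^2 * x4^2 * x5 + 39 * x1 * x2^2 * x4^2 * x5 * x7 + 79 * x1 * x2^2 * x4^2 * x5 * x6 + 13 * x1 * x2^2 * x4^2 * x5^2 + 6916 * x1 * x2^2 * x4^3 + 157 * x1 * x2^2 * x4^3 * x7 + 157 * x1 * x2^2 * x4^3 * x6 + 193 * x1 * x2^2 * x4^3 * x5 + 290 * x1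 * x2^2 * x4^4 + 90825 * x1 * x2^2 * x3 + 14368 * x1 * x2^2 * x3 * x7 + 367 * x1 * x2^2 * x3 * x7^2 + 12874 * x1 * x2^2 * x3 * x6 + 1332 * x1 * x2^2 * x3 * x6 * x7 + 12 * x1 * x2^2 * x3 * x6 * x7^2 + 299 * x1 * x2^2 * x3 * x6^2 + 12 * x1 * x2^2 * x3 * x6^2 * x7 + 19111 * x1 * x2^2 * x3 * x5 + 842 * x1 * x2^2 * x3 * x5 * x7 + 1580 * x1 * x2^2 * x3 * x5 * x6 + 24 * x1 * x2^2 * x3 * x5 * x6 * x7 + 12 * x1 * x2^2 * x3 * x5 * x6^2 + 295 * x1 * x2^2 * x3 * x5^2 + 6 * x1 * x2^2 * x3 * x5^2 * x6 + 91508 * x1 * x2^2 * x3 * x4 + 8068 * x1 * x2^2 * x3 * x4 * x7 + 66 * x1 * x2^2 * x3 * x4 * x7^2 + 7384 * x1 * x2^2 * x3 * x4 * x6 + 252 * x1 * x2^2 * x3 * x4 * x6 * x7 + 60 * x1 * x2^2 * x3 * x4 * x6^2 + 10364 * x1 * x2^2 * x3 * x4 * x5 + 138 * x1 * x2^2 * x3 * x4 * x5 * x7 + 274 * x1 * x2^2 * x3 * x4 * x5 * x6 + 35 * x1 * x2^2 * x3 * x4 * x5^2 + 26829 * x1 * x2^2 * x3 * x4^2 + 817 * x1 * x2^2 * x3 * x4^2 * x7 + 773 * x1 * x2^2 * x3 * x4^2 * x6 + 973 * x1 * x2^2 * x3 * x4^2 * x5 + 1957 * x1 * x2^2 * x3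 * x4^3 + 50874 * x1 * x2^2 * x3^2 + 5008 * x1 * x2^2 * x3^2 * x7 + 52 * x1 * x2^2 * x3^2 * x7^2 + 4192 * x1 * x2^2 * x3^2 * x6 + 184 * x1 * x2^2 * x3^2 * x6 * x7 + 40 * x1 * x2^2 * x3^2 * x6^2 + 6070 * x1 * x2^2 * x3^2 * x5 + 104 * x1 * x2^2 * x3^2 * x5 * x7 + 196 * x1 * x2^2 * x3^2 * x5 * x6 + 22 * x1 * x2^2 * x3^2 * x5^2 + 32171 * x1 * x2^2 * x3^2 * x4 + 1200 * x1 * x2^2 * x3^2 * x4 * x7 + 1060 * x1 * x2^2 * x3^2 * x4 * x6 + 1380 * x1 * x2^2 * x3^2 * x4 * x5 + 4146 * x1 * x2^2 * x3^2 * x4^2 + 12175 * x1 * x2^2 * x3^3 + 532 * x1 * x2^2 * x3^3 * x7 + 434 * x1 * x2^2 * x3^3 * x6 + 592 * x1 * x2^2 * x3^3 * x5 + 3517 * x1 * x2^2 * x3^3 * x4 + 1042 * x1 * x2^2 * x3^4 + 33180 * x1 * x2^3 + 5119 * x1 * x2^3 * x7 + 135 * x1 * x2^3 * x7^2 + 5119 * x1 * x2^3 * x6 + 540 * x1 * x2^3 * x6 * x7 + 6 * x1 * x2^3 * x6 * x7^2 + 135 * x1 * x2^3 * x6^2 + 6 * x1 * x2^3 * x6^2 * x7 + 6486 * x1 * x2^3 * x5 + 306 * x1 * x2^3 * x5 * x7 + 614 * x1 * x2^3 * x5 * x6 + 12 * x1 * x2^3 * x5 * x6 * x7 + 6 *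 x1 * x2^3 * x5 * x6^2 + 118 * x1 * x2^3 * x5^2 + 4 * x1 * x2^3 * x5^2 * x6 + 34976 * x1 * x2^3 * x4 + 3124 * x1 * x2^3 * x4 * x7 + 30 * x1 * x2^3 * x4 * x7^2 + 3124 * x1 * x2^3 * x4 * x6 + 120 * x1 * x2^3 * x4 * x6 * x7 + 30 * x1 * x2^3 * x4 * x6^2 + 3838 * x1 * x2^3 * x4 * x5 + 63 * x1 * x2^3 * x4 * x5 * x7 + 127 * x1 * x2^3 * x4 * x5 * x6 + 21 * x1 * x2^3 * x4 * x5^2 + 10970 * x1 * x2^3 * x4^2 + 373 * x1 * x2^3 * x4^2 * x7 + 373 * x1 * x2^3 * x4^2 * x6 + 429 * x1 * x2^3 * x4^2 * x5 + 918 * x1 * x2^3 * x4^3 + 37496 * x1 * x2^3 * x3 + 3680 * x1 * x2^3 * x3 * x7 + 42 * x1 * x2^3 * x3 * x7^2 + 3364 * x1 * x2^3 * x3 * x6 + 156 * x1 * x2^3 * x3 * x6 * x7 + 36 * x1 * x2^3 * x3 * x6^2 + 4260 * x1 * x2^3 * x3 * x5 + 84 * x1 * x2^3 * x3 * x5 * x7 + 160 * x1 * x2^3 * x3 * x5 * x6 + 24 * x1 * x2^3 * x3 * x5^2 + 24906 * x1 * x2^3 * x3 * x4 + 981 * x1 * x2^3 * x3 * x4 * x7 + 917 * x1 * x2^3 * x3 * x4 * x6 + 1080 * x1 * x2^3 * x3 * x4 * x5 + 3497 * x1 * x2^3 * x3 * x4^2 + 13572 * x1 * x2^3 * x3^2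 + 606 * x1 * x2^3 * x3^2 * x7 + 526 * x1 * x2^3 * x3^2 * x6 + 642 * x1 * x2^3 * x3^2 * x5 + 4151 * x1 * x2^3 * x3^2 * x4 + 1562 * x1 * x2^3 * x3^3 + 10004 * x1 * x2^4 + 980 * x1 * x2^4 * x7 + 12 * x1 * x2^4 * x7^2 + 980 * x1 * x2^4 * x6 + 48 * x1 * x2^4 * x6 * x7 + 12 * x1 * x2^4 * x6^2 + 1096 * x1 * x2^4 * x5 + 24 * x1 * x2^4 * x5 * x7 + 48 * x1 * x2^4 * x5 * x6 + 8 * x1 * x2^4 * x5^2 + 6968 * x1 * x2^4 * x4 + 288 * x1 * x2^4 * x4 * x7 + 288 * x1 * x2^4 * x4 * x6 + 308 * x1 * x2^4 * x4 * x5 + 1060 * x1 * x2^4 * x4^2 + 7344 * x1 * x2^4 * x3 + 336 * x1 * x2^4 * x3 * x7 + 312 * x1 * x2^4 * x3 * x6 + 344 * x1 * x2^4 * x3 * x5 + 2380 * x1 * x2^4 * x3 * x4 + 1288 * x1 * x2^4 * x3^2 + 1544 * x1 * x2^5 + 72 * x1 * x2^5 * x7 + 72 * x1 * x2^5 * x6 + 72 * x1 * x2^5 * x5 + 528 * x1 * x2^5 * x4 + 552 * x1 * x2^5 * x3 + 96 * x1 * x2^6 + 12360 * x1^2 + 3250 * x1^2 * x7 + 154 * x1^2 * x7^2 + 3250 * x1^2 * x6 + 617 * x1^2 * x6 * x7 + 15 * x1^2 * x6 * x7^2 + 154 * x1^2 * x6^2 + 15 * x1^2 * x6^2 * x7 +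 7534 * x1^2 * x5 + 676 * x1^2 * x5 * x7 + 1361 * x1^2 * x5 * x6 + 82 * x1^2 * x5 * x6 * x7 + 41 * x1^2 * x5 * x6^2 + x1^2 * x5 * x6^2 * x7 + 434 * x1^2 * x5^2 + 59 * x1^2 * x5^2 * x6 + x1^2 * x5^2 * x6^2 + 23520 * x1^2 * x4 + 4713 * x1^2 * x4 * x7 + 147 * x1^2 * x4 * x7^2 + 4713 * x1^2 * x4 * x6 + 588 * x1^2 * x4 * x6 * x7 + 7 * x1^2 * x4 * x6 * x7^2 + 147 * x1^2 * x4 * x6^2 + 7 * x1^2 * x4 * x6^2 * x7 + 11679 * x1^2 * x4 * x5 + 692 * x1^2 * x4 * x5 * x7 + 1370 * x1^2 * x4 * x5 * x6 + 41 * x1^2 * x4 * x5 * x6 * x7 + 20 * x1^2 * x4 * x5 * x6^2 + 453 * x1^2 * x4 * x5^2 + 30 * x1^2 * x4 * x5^2 * x6 + 16534 * x1^2 * x4^2 + 2258 * x1^2 * x4^2 * x7 + 35 * x1^2 * x4^2 * x7^2 + 2258 * x1^2 * x4^2 * x6 + 139 * x1^2 * x4^2 * x6 * x7 + 35 * x1^2 * x4^2 * x6^2 + 6018 * x1^2 * x4^2 * x5 + 177 * x1^2 * x4^2 * x5 * x7 + 344 * x1^2 * x4^2 * x5 * x6 + 118 * x1^2 * x4^2 * x5^2 + 5072 * x1^2 * x4^3 + 357 * x1^2 * x4^3 * x7 + 357 * x1^2 * x4^3 * x6 + 1031 * x1^2 * x4^3 * x5 + 570 * x1^2 * x4^4 +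 30554 * x1^2 * x3 + 6517 * x1^2 * x3 * x7 + 229 * x1^2 * x3 * x7^2 + 5780 * x1^2 * x3 * x6 + 830 * x1^2 * x3 * x6 * x7 + 12 * x1^2 * x3 * x6 * x7^2 + 186 * x1^2 * x3 * x6^2 + 11 * x1^2 * x3 * x6^2 * x7 + 13165 * x1^2 * x3 * x5 + 860 * x1^2 * x3 * x5 * x7 + 1608 * x1^2 * x3 * x5 * x6 + 54 * x1^2 * x3 * x5 * x6 * x7 + 25 * x1^2 * x3 * x5 * x6^2 + 491 * x1^2 * x3 * x5^2 + 34 * x1^2 * x3 * x5^2 * x6 + 47907 * x1^2 * x3 * x4 + 7122 * x1^2 * x3 * x4 * x7 + 139 * x1^2 * x3 * x4 * x7^2 + 6384 * x1^2 * x3 * x4 * x6 + 513 * x1^2 * x3 * x4 * x6 * x7 + 2 * x1^2 * x3 * x4 * x6 * x7^2 + 118 * x1^2 * x3 * x4 * x6^2 + 2 * x1^2 * x3 * x4 * x6^2 * x7 + 14701 * x1^2 * x3 * x4 * x5 + 516 * x1^2 * x3 * x4 * x5 * x7 + 968 * x1^2 * x3 * x4 * x5 * x6 + 6 * x1^2 * x3 * x4 * x5 * x6 * x7 + 3 * x1^2 * x3 * x4 * x5 * x6^2 + 277 * x1^2 * x3 * x4 * x5^2 + 2 * x1^2 * x3 * x4 * x5^2 * x6 + 26597 * x1^2 * x3 * x4^2 + 2297 * x1^2 * x3 * x4^2 * x7 + 14 * x1^2 * x3 * x4^2 * x7^2 + 2109 * x1^2 * x3 * x4^2 * x6 + 56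 * x1^2 * x3 * x4^2 * x6 * x7 + 14 * x1^2 * x3 * x4^2 * x6^2 + 4640 * x1^2 * x3 * x4^2 * x5 + 39 * x1^2 * x3 * x4^2 * x5 * x7 + 80 * x1^2 * x3 * x4^2 * x5 * x6 + 11 * x1^2 * x3 * x4^2 * x5^2 + 6036 * x1^2 * x3 * x4^3 + 187 * x1^2 * x3 * x4^3 * x7 + 185 * x1^2 * x3 * x4^3 * x6 + 293 * x1^2 * x3 * x4^3 * x5 + 448 * x1^2 * x3 * x4^4 + 30487 * x1^2 * x3^2 + 4894 * x1^2 * x3^2 * x7 + 110 * x1^2 * x3^2 * x7^2 + 4031 * x1^2 * x3^2 * x6 + 384 * x1^2 * x3^2 * x6 * x7 + 2 * x1^2 * x3^2 * x6 * x7^2 + 83 * x1^2 * x3^2 * x6^2 + 2 * x1^2 * x3^2 * x6^2 * x7 + 8627 * x1^2 * x3^2 * x5 + 347 * x1^2 * x3^2 * x5 * x7 + 627 * x1^2 * x3^2 * x5 * x6 + 6 * x1^2 * x3^2 * x5 * x6 * x7 + 3 * x1^2 * x3^2 * x5 * x6^2 + 159 * x1^2 * x3^2 * x5^2 + 2 * x1^2 * x3^2 * x5^2 * x6 + 37347 * x1^2 * x3^2 * x4 + 3658 * x1^2 * x3^2 * x4 * x7 + 33 * x1^2 * x3^2 * x4 * x7^2 + 3142 * x1^2 * x3^2 * x4 * x6 + 126 * x1^2 * x3^2 * x4 * x6 * x7 + 30 * x1^2 * x3^2 * x4 * x6^2 + 6223 * x1^2 * x3^2 * x4 * x5 + 86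 * x1^2 * x3^2 * x4 * x5 * x7 + 170 * x1^2 * x3^2 * x4 * x5 * x6 + 22 * x1^2 * x3^2 * x4 * x5^2 + 14956 * x1^2 * x3^2 * x4^2 + 657 * x1^2 * x3^2 * x4^2 * x7 + x1^2 * x3^2 * x4^2 * x7^2 + 613 * x1^2 * x3^2 * x4^2 * x6 + 4 * x1^2 * x3^2 * x4^2 * x6 * x7 + x1^2 * x3^2 * x4^2 * x6^2 + 953 * x1^2 * x3^2 * x4^2 * x5 + 2 * x1^2 * x3^2 * x4^2 * x5 * x7 + 4 * x1^2 * x3^2 * x4^2 * x5 * x6 + 2077 * x1^2 * x3^2 * x4^3 + 18 * x1^2 * x3^2 * x4^3 * x7 + 18 * x1^2 * x3^2 * x4^3 * x6 + 21 * x1^2 * x3^2 * x4^3 * x5 + 52 * x1^2 * x3^2 * x4^4 + 15714 * x1^2 * x3^3 + 1706 * x1^2 * x3^3 * x7 + 19 * x1^2 * x3^3 * x7^2 + 1375 * x1^2 * x3^3 * x6 + 70 * x1^2 * x3^3 * x6 * x7 + 16 * x1^2 * x3^3 * x6^2 + 2602 * x1^2 * x3^3 * x5 + 47 * x1^2 * x3^3 * x5 * x7 + 90 * x1^2 * x3^3 * x5 * x6 + 11 * x1^2 * x3^3 * x5^2 + 13888 * x1^2 * x3^3 * x4 + 743 * x1^2 * x3^3 * x4 * x7 + 2 * x1^2 * x3^3 * x4 * x7^2 + 655 * x1^2 * x3^3 * x4 * x6 + 8 * x1^2 * x3^3 * x4 * x6 * x7 + 2 * x1^2 * x3^3 * x4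 * x6^2 + 1015 * x1^2 * x3^3 * x4 * x5 + 4 * x1^2 * x3^3 * x4 * x5 * x7 + 8 * x1^2 * x3^3 * x4 * x5 * x6 + 3438 * x1^2 * x3^3 * x4^2 + 52 * x1^2 * x3^3 * x4^2 * x7 + 50 * x1^2 * x3^3 * x4^2 * x6 + 60 * x1^2 * x3^3 * x4^2 * x5 + 191 * x1^2 * x3^3 * x4^3 + 4404 * x1^2 * x3^4 + 273 * x1^2 * x3^4 * x7 + x1^2 * x3^4 * x7^2 + 227 * x1^2 * x3^4 * x6 + 4 * x1^2 * x3^4 * x6 * x7 + x1^2 * x3^4 * x6^2 + 355 * x1^2 * x3^4 * x5 + 2 * x1^2 * x3^4 * x5 * x7 + 4 * x1^2 * x3^4 * x5 * x6 + 2442 * x1^2 * x3^4 * x4 + 50 * x1^2 * x3^4 * x4 * x7 + 46 * x1^2 * x3^4 * x4 * x6 + 57 * x1^2 * x3^4 * x4 * x5 + 262 * x1^2 * x3^4 * x4^2 + 633 * x1^2 * x3^5 + 16 * x1^2 * x3^5 * x7 + 14 * x1^2 * x3^5 * x6 + 18 * x1^2 * x3^5 * x5 + 159 * x1^2 * x3^5 * x4 + 36 * x1^2 * x3^6 + 37588 * x1^2 * x2 + 7584 * x1^2 * x2 * x7 + 268 * x1^2 * x2 * x7^2 + 7584 * x1^2 * x2 * x6 + 1072 * x1^2 * x2 * x6 * x7 + 16 * x1^2 * x2 * x6 * x7^2 + 268 * x1^2 * x2 * x6^2 + 16 * x1^2 * x2 * x6^2 * x7 + 13820 * x1^2 * x2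 * x5 + 924 * x1^2 * x2 * x5 * x7 + 1856 * x1^2 * x2 * x5 * x6 + 64 * x1^2 * x2 * x5 * x6 * x7 + 32 * x1^2 * x2 * x5 * x6^2 + 524 * x1^2 * x2 * x5^2 + 40 * x1^2 * x2 * x5^2 * x6 + 62746 * x1^2 * x2 * x4 + 8990 * x1^2 * x2 * x4 * x7 + 187 * x1^2 * x2 * x4 * x7^2 + 8990 * x1^2 * x2 * x4 * x6 + 748 * x1^2 * x2 * x4 * x6 * x7 + 4 * x1^2 * x2 * x4 * x6 * x7^2 + 187 * x1^2 * x2 * x4 * x6^2 + 4 * x1^2 * x2 * x4 * x6^2 * x7 + 16425 * x1^2 * x2 * x4 * x5 + 626 * x1^2 * x2 * x4 * x5 * x7 + 1246 * x1^2 * x2 * x4 * x5 * x6 + 12 * x1^2 * x2 * x4 * x5 * x6 * x7 + 6 * x1^2 * x2 * x4 * x5 * x6^2 + 343 * x1^2 * x2 * x4 * x5^2 + 6 * x1^2 * x2 * x4 * x5^2 * x6 + 37978 * x1^2 * x2 * x4^2 + 3335 * x1^2 * x2 * x4^2 * x7 + 28 * x1^2 * x2 * x4^2 * x7^2 + 3335 * x1^2 * x2 * x4^2 * x6 + 112 * x1^2 * x2 * x4^2 * x6 * x7 + 28 * x1^2 * x2 * x4^2 * x6^2 + 5867 * x1^2 * x2 * x4^2 * x5 + 78 * x1^2 * x2 * x4^2 * x5 * x7 + 156 * x1^2 * x2 * x4^2 * x5 * x6 + 36 * x1^2 * x2 * x4^2 * x5^2 + 9792 * x1^2 * x2 * x4^3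 + 372 * x1^2 * x2 * x4^3 * x7 + 372 * x1^2 * x2 * x4^3 * x6 + 557 * x1^2 * x2 * x4^3 * x5 + 896 * x1^2 * x2 * x4^4 + 74302 * x1^2 * x2 * x3 + 11512 * x1^2 * x2 * x3 * x7 + 269 * x1^2 * x2 * x3 * x7^2 + 10524 * x1^2 * x2 * x3 * x6 + 1010 * x1^2 * x2 * x3 * x6 * x7 + 6 * x1^2 * x2 * x3 * x6 * x7^2 + 236 * x1^2 * x2 * x3 * x6^2 + 6 * x1^2 * x2 * x3 * x6^2 * x7 + 18618 * x1^2 * x2 * x3 * x5 + 799 * x1^2 * x2 * x3 * x5 * x7 + 1521 * x1^2 * x2 * x3 * x5 * x6 + 18 * x1^2 * x2 * x3 * x5 * x6 * x7 + 9 * x1^2 * x2 * x3 * x5 * x6^2 + 382 * x1^2 * x2 * x3 * x5^2 + 8 * x1^2 * x2 * x3 * x5^2 * x6 + 95894 * x1^2 * x2 * x3 * x4 + 9352 * x1^2 * x2 * x3 * x4 * x7 + 97 * x1^2 * x2 * x3 * x4 * x7^2 + 8696 * x1^2 * x2 * x3 * x4 * x6 + 376 * x1^2 * x2 * x3 * x4 * x6 * x7 + 91 * x1^2 * x2 * x3 * x4 * x6^2 + 14585 * x1^2 * x2 * x3 * x4 * x5 + 252 * x1^2 * x2 * x3 * x4 * x5 * x7 + 494 * x1^2 * x2 * x3 * x4 * x5 * x6 + 95 * x1^2 * x2 * x3 * x4 * x5^2 + 41020 * x1^2 * x2 * x3 * x4^2 + 1922 * x1^2 * x2 * x3 * x4^2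 * x7 + 3 * x1^2 * x2 * x3 * x4^2 * x7^2 + 1840 * x1^2 * x2 * x3 * x4^2 * x6 + 12 * x1^2 * x2 * x3 * x4^2 * x6 * x7 + 3 * x1^2 * x2 * x3 * x4^2 * x6^2 + 2669 * x1^2 * x2 * x3 * x4^2 * x5 + 6 * x1^2 * x2 * x3 * x4^2 * x5 * x7 + 12 * x1^2 * x2 * x3 * x4^2 * x5 * x6 + x1^2 * x2 * x3 * x4^2 * x5^2 + 6174 * x1^2 * x2 * x3 * x4^3 + 54 * x1^2 * x2 * x3 * x4^3 * x7 + 54 * x1^2 * x2 * x3 * x4^3 * x6 + 61 * x1^2 * x2 * x3 * x4^3 * x5 + 157 * x1^2 * x2 * x3 * x4^4 + 56782 * x1^2 * x2 * x3^2 + 6086 * x1^2 * x2 * x3^2 * x7 + 74 * x1^2 * x2 * x3^2 * x7^2 + 5288 * x1^2 * x2 * x3^2 * x6 + 278 * x1^2 * x2 * x3^2 * x6 * x7 + 65 * x1^2 * x2 * x3^2 * x6^2 + 8693 * x1^2 * x2 * x3^2 * x5 + 182 * x1^2 * x2 * x3^2 * x5 * x7 + 348 * x1^2 * x2 * x3^2 * x5 * x6 + 59 * x1^2 * x2 * x3^2 * x5^2 + 52254 * x1^2 * x2 * x3^2 * x4 + 2862 * x1^2 * x2 * x3^2 * x4 * x7 + 8 * x1^2 * x2 * x3^2 * x4 * x7^2 + 2608 * x1^2 * x2 * x3^2 * x4 * x6 + 32 * x1^2 * x2 * x3^2 * x4 * x6 * x7 + 8 * x1^2 * x2 * x3^2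 * x4 * x6^2 + 3748 * x1^2 * x2 * x3^2 * x4 * x5 + 16 * x1^2 * x2 * x3^2 * x4 * x5 * x7 + 32 * x1^2 * x2 * x3^2 * x4 * x5 * x6 + 2 * x1^2 * x2 * x3^2 * x4 * x5^2 + 13487 * x1^2 * x2 * x3^2 * x4^2 + 204 * x1^2 * x2 * x3^2 * x4^2 * x7 + 198 * x1^2 * x2 * x3^2 * x4^2 * x6 + 228 * x1^2 * x2 * x3^2 * x4^2 * x5 + 753 * x1^2 * x2 * x3^2 * x4^3 + 20879 * x1^2 * x2 * x3^3 + 1302 * x1^2 * x2 * x3^3 * x7 + 5 * x1^2 * x2 * x3^3 * x7^2 + 1124 * x1^2 * x2 * x3^3 * x6 + 20 * x1^2 * x2 * x3^3 * x6 * x7 + 5 * x1^2 * x2 * x3^3 * x6^2 + 1624 * x1^2 * x2 * x3^3 * x5 + 10 * x1^2 * x2 * x3^3 * x5 * x7 + 20 * x1^2 * x2 * x3^3 * x5 * x6 + x1^2 * x2 * x3^3 * x5^2 + 11867 * x1^2 * x2 * x3^3 * x4 + 242 * x1^2 * x2 * x3^3 * x4 * x7 + 226 * x1^2 * x2 * x3^3 * x4 * x6 + 267 * x1^2 * x2 * x3^3 * x4 * x5 + 1274 * x1^2 * x2 * x3^3 * x4^2 + 3663 * x1^2 * x2 * x3^4 + 92 * x1^2 * x2 * x3^4 * x7 + 82 * x1^2 * x2 * x3^4 * x6 + 100 * x1^2 * x2 * x3^4 * x5 + 919 * x1^2 * x2 * x3^4 * x4 + 241 * x1^2 * x2 * x3^5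 + 42929 * x1^2 * x2^2 + 6523 * x1^2 * x2^2 * x7 + 159 * x1^2 * x2^2 * x7^2 + 6523 * x1^2 * x2^2 * x6 + 636 * x1^2 * x2^2 * x6 * x7 + 4 * x1^2 * x2^2 * x6 * x7^2 + 159 * x1^2 * x2^2 * x6^2 + 4 * x1^2 * x2^2 * x6^2 * x7 + 9868 * x1^2 * x2^2 * x5 + 449 * x1^2 * x2^2 * x5 * x7 + 900 * x1^2 * x2^2 * x5 * x6 + 12 * x1^2 * x2^2 * x5 * x6 * x7 + 6 * x1^2 * x2^2 * x5 * x6^2 + 220 * x1^2 * x2^2 * x5^2 + 6 * x1^2 * x2^2 * x5^2 * x6 + 57916 * x1^2 * x2^2 * x4 + 5689 * x1^2 * x2^2 * x4 * x7 + 66 * x1^2 * x2^2 * x4 * x7^2 + 5689 * x1^2 * x2^2 * x4 * x6 + 264 * x1^2 * x2^2 * x4 * x6 * x7 + 66 * x1^2 * x2^2 * x4 * x6^2 + 8309 * x1^2 * x2^2 * x4 * x5 + 168 * x1^2 * x2^2 * x4 * x5 * x7 + 336 * x1^2 * x2^2 * x4 * x5 * x6 + 73 * x1^2 * x2^2 * x4 * x5^2 + 26332 * x1^2 * x2^2 * x4^2 + 1323 * x1^2 * x2^2 * x4^2 * x7 + 3 * x1^2 * x2^2 * x4^2 * x7^2 + 1323 * x1^2 * x2^2 * x4^2 * x6 + 12 * x1^2 * x2^2 * x4^2 * x6 * x7 + 3 * x1^2 * x2^2 * x4^2 * x6^2 + 1759 * x1^2 * x2^2 * x4^2 * x5 +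 6 * x1^2 * x2^2 * x4^2 * x5 * x7 + 12 * x1^2 * x2^2 * x4^2 * x5 * x6 + 2 * x1^2 * x2^2 * x4^2 * x5^2 + 4382 * x1^2 * x2^2 * x4^3 + 54 * x1^2 * x2^2 * x4^3 * x7 + 54 * x1^2 * x2^2 * x4^3 * x6 + 59 * x1^2 * x2^2 * x4^3 * x5 + 157 * x1^2 * x2^2 * x4^4 + 65612 * x1^2 * x2^2 * x3 + 7026 * x1^2 * x2^2 * x3 * x7 + 93 * x1^2 * x2^2 * x3 * x7^2 + 6556 * x1^2 * x2^2 * x3 * x6 + 360 * x1^2 * x2^2 * x3 * x6 * x7 + 87 * x1^2 * x2^2 * x3 * x6^2 + 9517 * x1^2 * x2^2 * x3 * x5 + 225 * x1^2 * x2^2 * x3 * x5 * x7 + 438 * x1^2 * x2^2 * x3 * x5 * x6 + 85 * x1^2 * x2^2 * x3 * x5^2 + 63022 * x1^2 * x2^2 * x3 * x4 + 3587 * x1^2 * x2^2 * x3 * x4 * x7 + 12 * x1^2 * x2^2 * x3 * x4 * x7^2 + 3415 * x1^2 * x2^2 * x3 * x4 * x6 + 48 * x1^2 * x2^2 * x3 * x4 * x6 * x7 + 12 * x1^2 * x2^2 * x3 * x4 * x6^2 + 4518 * x1^2 * x2^2 * x3 * x4 * x5 + 24 * x1^2 * x2^2 * x3 * x4 * x5 * x7 + 48 * x1^2 * x2^2 * x3 * x4 * x5 * x6 + 6 * x1^2 * x2^2 * x3 * x4 * x5^2 + 17316 * x1^2 * x2^2 * x3 * x4^2 + 300 * x1^2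 * x2^2 * x3 * x4^2 * x7 + 294 * x1^2 * x2^2 * x3 * x4^2 * x6 + 326 * x1^2 * x2^2 * x3 * x4^2 * x5 + 1109 * x1^2 * x2^2 * x3 * x4^3 + 36146 * x1^2 * x2^2 * x3^2 + 2302 * x1^2 * x2^2 * x3^2 * x7 + 10 * x1^2 * x2^2 * x3^2 * x7^2 + 2078 * x1^2 * x2^2 * x3^2 * x6 + 40 * x1^2 * x2^2 * x3^2 * x6 * x7 + 10 * x1^2 * x2^2 * x3^2 * x6^2 + 2766 * x1^2 * x2^2 * x3^2 * x5 + 20 * x1^2 * x2^2 * x3^2 * x5 * x7 + 40 * x1^2 * x2^2 * x3^2 * x5 * x6 + 4 * x1^2 * x2^2 * x3^2 * x5^2 + 21424 * x1^2 * x2^2 * x3^2 * x4 + 468 * x1^2 * x2^2 * x3^2 * x4 * x7 + 444 * x1^2 * x2^2 * x3^2 * x4 * x6 + 502 * x1^2 * x2^2 * x3^2 * x4 * x5 + 2469 * x1^2 * x2^2 * x3^2 * x4^2 + 8426 * x1^2 * x2^2 * x3^3 + 220 * x1^2 * x2^2 * x3^3 * x7 + 200 * x1^2 * x2^2 * x3^3 * x6 + 232 * x1^2 * x2^2 * x3^3 * x5 + 2204 * x1^2 * x2^2 * x3^3 * x4 + 688 * x1^2 * x2^2 * x3^4 + 24436 * x1^2 * x2^3 + 2631 * x1^2 * x2^3 * x7 + 38 * x1^2 * x2^3 * x7^2 + 2631 * x1^2 * x2^3 * x6 + 152 * x1^2 * x2^3 * x6 * x7 + 38 * x1^2 * x2^3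 * x6^2 + 3413 * x1^2 * x2^3 * x5 + 90 * x1^2 * x2^3 * x5 * x7 + 180 * x1^2 * x2^3 * x5 * x6 + 37 * x1^2 * x2^3 * x5^2 + 24460 * x1^2 * x2^3 * x4 + 1452 * x1^2 * x2^3 * x4 * x7 + 6 * x1^2 * x2^3 * x4 * x7^2 + 1452 * x1^2 * x2^3 * x4 * x6 + 24 * x1^2 * x2^3 * x4 * x6 * x7 + 6 * x1^2 * x2^3 * x4 * x6^2 + 1770 * x1^2 * x2^3 * x4 * x5 + 12 * x1^2 * x2^3 * x4 * x5 * x7 + 24 * x1^2 * x2^3 * x4 * x5 * x6 + 4 * x1^2 * x2^3 * x4 * x5^2 + 7162 * x1^2 * x2^3 * x4^2 + 144 * x1^2 * x2^3 * x4^2 * x7 + 144 * x1^2 * x2^3 * x4^2 * x6 + 154 * x1^2 * x2^3 * x4^2 * x5 + 530 * x1^2 * x2^3 * x4^3 + 27100 * x1^2 * x2^3 * x3 + 1774 * x1^2 * x2^3 * x3 * x7 + 9 * x1^2 * x2^3 * x3 * x7^2 + 1682 * x1^2 * x2^3 * x3 * x6 + 36 * x1^2 * x2^3 * x3 * x6 * x7 + 9 * x1^2 * x2^3 * x3 * x6^2 + 2065 * x1^2 * x2^3 * x3 * x5 + 18 * x1^2 * x2^3 * x3 * x5 * x7 + 36 * x1^2 * x2^3 * x3 * x5 * x6 + 5 * x1^2 * x2^3 * x3 * x5^2 + 16826 * x1^2 * x2^3 * x3 * x4 + 402 * x1^2 * x2^3 * x3 * x4 * x7 + 390 * x1^2 *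 x2^3 * x3 * x4 * x6 + 423 * x1^2 * x2^3 * x3 * x4 * x5 + 2117 * x1^2 * x2^3 * x3 * x4^2 + 9546 * x1^2 * x2^3 * x3^2 + 264 * x1^2 * x2^3 * x3^2 * x7 + 246 * x1^2 * x2^3 * x3^2 * x6 + 272 * x1^2 * x2^3 * x3^2 * x5 + 2645 * x1^2 * x2^3 * x3^2 * x4 + 1049 * x1^2 * x2^3 * x3^3 + 7435 * x1^2 * x2^4 + 501 * x1^2 * x2^4 * x7 + 3 * x1^2 * x2^4 * x7^2 + 501 * x1^2 * x2^4 * x6 + 12 * x1^2 * x2^4 * x6 * x7 + 3 * x1^2 * x2^4 * x6^2 + 568 * x1^2 * x2^4 * x5 + 6 * x1^2 * x2^4 * x5 * x7 + 12 * x1^2 * x2^4 * x5 * x6 + 2 * x1^2 * x2^4 * x5^2 + 4832 * x1^2 * x2^4 * x4 + 126 * x1^2 * x2^4 * x4 * x7 + 126 * x1^2 * x2^4 * x4 * x6 + 131 * x1^2 * x2^4 * x4 * x5 + 661 * x1^2 * x2^4 * x4^2 + 5306 * x1^2 * x2^4 * x3 + 156 * x1^2 * x2^4 * x3 * x7 + 150 * x1^2 * x2^4 * x3 * x6 + 158 * x1^2 * x2^4 * x3 * x5 + 1561 * x1^2 * x2^4 * x3 * x4 + 890 * x1^2 * x2^4 * x3^2 + 1156 * x1^2 * x2^5 + 36 * x1^2 * x2^5 * x7 + 36 * x1^2 * x2^5 * x6 + 36 * x1^2 * x2^5 * x5 + 360 * x1^2 * x2^5 * x4 + 396 * x1^2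 * x2^5 * x3 + 72 * x1^2 * x2^6 + 4464 * x1^3 + 698 * x1^3 * x7 + 14 * x1^3 * x7^2 + 698 * x1^3 * x6 + 56 * x1^3 * x6 * x7 + 14 * x1^3 * x6^2 + 1834 * x1^3 * x5 + 92 * x1^3 * x5 * x7 + 184 * x1^3 * x5 * x6 + 4 * x1^3 * x5 * x6 * x7 + 2 * x1^3 * x5 * x6^2 + 70 * x1^3 * x5^2 + 4 * x1^3 * x5^2 * x6 + 8416 * x1^3 * x4 + 985 * x1^3 * x4 * x7 + 13 * x1^3 * x4 * x7^2 + 985 * x1^3 * x4 * x6 + 52 * x1^3 * x4 * x6 * x7 + 13 * x1^3 * x4 * x6^2 + 2769 * x1^3 * x4 * x5 + 92 * x1^3 * x4 * x5 * x7 + 182 * x1^3 * x4 * x5 * x6 + 2 * x1^3 * x4 * x5 * x6 * x7 + x1^3 * x4 * x5 * x6^2 + 71 * x1^3 * x4 * x5^2 + 2 * x1^3 * x4 * x5^2 * x6 + 5884 * x1^3 * x4^2 + 460 * x1^3 * x4^2 * x7 + 3 * x1^3 * x4^2 * x7^2 + 460 * x1^3 * x4^2 * x6 + 12 * x1^3 * x4^2 * x6 * x7 + 3 * x1^3 * x4^2 * x6^2 + 1392 * x1^3 * x4^2 * x5 + 23 * x1^3 * x4^2 * x5 * x7 + 45 * x1^3 * x4^2 * x5 * x6 + 18 * x1^3 * x4^2 * x5^2 + 1804 * x1^3 * x4^3 + 71 * x1^3 * x4^3 * x7 + 71 * x1^3 * x4^3 * x6 + 233 * x1^3 * x4^3 *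 x5 + 204 * x1^3 * x4^4 + 10814 * x1^3 * x3 + 1345 * x1^3 * x3 * x7 + 19 * x1^3 * x3 * x7^2 + 1249 * x1^3 * x3 * x6 + 72 * x1^3 * x3 * x6 * x7 + 17 * x1^3 * x3 * x6^2 + 3093 * x1^3 * x3 * x5 + 106 * x1^3 * x3 * x5 * x7 + 204 * x1^3 * x3 * x5 * x6 + 2 * x1^3 * x3 * x5 * x6 * x7 + x1^3 * x3 * x5 * x6^2 + 75 * x1^3 * x3 * x5^2 + 2 * x1^3 * x3 * x5^2 * x6 + 16591 * x1^3 * x3 * x4 + 1416 * x1^3 * x3 * x4 * x7 + 11 * x1^3 * x3 * x4 * x7^2 + 1322 * x1^3 * x3 * x4 * x6 + 42 * x1^3 * x3 * x4 * x6 * x7 + 10 * x1^3 * x3 * x4 * x6^2 + 3306 * x1^3 * x3 * x4 * x5 + 59 * x1^3 * x3 * x4 * x5 * x7 + 113 * x1^3 * x3 * x4 * x5 * x6 + 40 * x1^3 * x3 * x4 * x5^2 + 8978 * x1^3 * x3 * x4^2 + 437 * x1^3 * x3 * x4^2 * x7 + x1^3 * x3 * x4^2 * x7^2 + 414 * x1^3 * x3 * x4^2 * x6 + 4 * x1^3 * x3 * x4^2 * x6 * x7 + x1^3 * x3 * x4^2 * x6^2 + 977 * x1^3 * x3 * x4^2 * x5 + 3 * x1^3 * x3 * x4^2 * x5 * x7 + 6 * x1^3 * x3 * x4^2 * x5 * x6 + x1^3 * x3 * x4^2 * x5^2 + 1963 * x1^3 * x3 * x4^3 + 33 * x1^3 *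 x3 * x4^3 * x7 + 33 * x1^3 * x3 * x4^3 * x6 + 49 * x1^3 * x3 * x4^3 * x5 + 135 * x1^3 * x3 * x4^4 + 10593 * x1^3 * x3^2 + 968 * x1^3 * x3^2 * x7 + 8 * x1^3 * x3^2 * x7^2 + 862 * x1^3 * x3^2 * x6 + 30 * x1^3 * x3^2 * x6 * x7 + 7 * x1^3 * x3^2 * x6^2 + 1916 * x1^3 * x3^2 * x5 + 36 * x1^3 * x3^2 * x5 * x7 + 68 * x1^3 * x3^2 * x5 * x6 + 22 * x1^3 * x3^2 * x5^2 + 12531 * x1^3 * x3^2 * x4 + 683 * x1^3 * x3^2 * x4 * x7 + 2 * x1^3 * x3^2 * x4 * x7^2 + 625 * x1^3 * x3^2 * x4 * x6 + 8 * x1^3 * x3^2 * x4 * x6 * x7 + 2 * x1^3 * x3^2 * x4 * x6^2 + 1266 * x1^3 * x3^2 * x4 * x5 + 6 * x1^3 * x3^2 * x4 * x5 * x7 + 12 * x1^3 * x3^2 * x4 * x5 * x6 + 2 * x1^3 * x3^2 * x4 * x5^2 + 4787 * x1^3 * x3^2 * x4^2 + 111 * x1^3 * x3^2 * x4^2 * x7 + 108 * x1^3 * x3^2 * x4^2 * x6 + 156 * x1^3 * x3^2 * x4^2 * x5 + 614 * x1^3 * x3^2 * x4^3 + 2 * x1^3 * x3^2 * x4^3 * x7 + 2 * x1^3 * x3^2 * x4^3 * x6 + 2 * x1^3 * x3^2 * x4^3 * x5 + 12 * x1^3 * x3^2 * x4^4 + 5339 * x1^3 * x3^3 + 317 * x1^3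 * x3^3 * x7 + x1^3 * x3^3 * x7^2 + 282 * x1^3 * x3^3 * x6 + 4 * x1^3 * x3^3 * x6 * x7 + x1^3 * x3^3 * x6^2 + 522 * x1^3 * x3^3 * x5 + 3 * x1^3 * x3^3 * x5 * x7 + 6 * x1^3 * x3^3 * x5 * x6 + x1^3 * x3^3 * x5^2 + 4474 * x1^3 * x3^3 * x4 + 123 * x1^3 * x3^3 * x4 * x7 + 117 * x1^3 * x3^3 * x4 * x6 + 165 * x1^3 * x3^3 * x4 * x5 + 1019 * x1^3 * x3^3 * x4^2 + 6 * x1^3 * x3^3 * x4^2 * x7 + 6 * x1^3 * x3^3 * x4^2 * x6 + 6 * x1^3 * x3^3 * x4^2 * x5 + 46 * x1^3 * x3^3 * x4^3 + 1446 * x1^3 * x3^4 + 45 * x1^3 * x3^4 * x7 + 42 * x1^3 * x3^4 * x6 + 58 * x1^3 * x3^4 * x5 + 736 * x1^3 * x3^4 * x4 + 6 * x1^3 * x3^4 * x4 * x7 + 6 * x1^3 * x3^4 * x4 * x6 + 6 * x1^3 * x3^4 * x4 * x5 + 66 * x1^3 * x3^4 * x4^2 + 196 * x1^3 * x3^5 + 2 * x1^3 * x3^5 * x7 + 2 * x1^3 * x3^5 * x6 + 2 * x1^3 * x3^5 * x5 + 42 * x1^3 * x3^5 * x4 + 10 * x1^3 * x3^6 + 13212 * x1^3 * x2 + 1609 * x1^3 * x2 * x7 + 23 * x1^3 * x2 * x7^2 + 1609 * x1^3 * x2 * x6 + 92 * x1^3 * x2 * x6 * x7 + 23 * x1^3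 * x2 * x6^2 + 3313 * x1^3 * x2 * x5 + 114 * x1^3 * x2 * x5 * x7 + 228 * x1^3 * x2 * x5 * x6 + 2 * x1^3 * x2 * x5 * x6 * x7 + x1^3 * x2 * x5 * x6^2 + 79 * x1^3 * x2 * x5^2 + 2 * x1^3 * x2 * x5^2 * x6 + 21414 * x1^3 * x2 * x4 + 1818 * x1^3 * x2 * x4 * x7 + 15 * x1^3 * x2 * x4 * x7^2 + 1818 * x1^3 * x2 * x4 * x6 + 60 * x1^3 * x2 * x4 * x6 * x7 + 15 * x1^3 * x2 * x4 * x6^2 + 3718 * x1^3 * x2 * x4 * x5 + 69 * x1^3 * x2 * x4 * x5 * x7 + 137 * x1^3 * x2 * x4 * x5 * x6 + 46 * x1^3 * x2 * x4 * x5^2 + 12544 * x1^3 * x2 * x4^2 + 638 * x1^3 * x2 * x4^2 * x7 + 2 * x1^3 * x2 * x4^2 * x7^2 + 638 * x1^3 * x2 * x4^2 * x6 + 8 * x1^3 * x2 * x4^2 * x6 * x7 + 2 * x1^3 * x2 * x4^2 * x6^2 + 1222 * x1^3 * x2 * x4^2 * x5 + 6 * x1^3 * x2 * x4^2 * x5 * x7 + 12 * x1^3 * x2 * x4^2 * x5 * x6 + 3 * x1^3 * x2 * x4^2 * x5^2 + 3110 * x1^3 * x2 * x4^3 + 66 * x1^3 * x2 * x4^3 * x7 + 66 * x1^3 * x2 * x4^3 * x6 + 96 * x1^3 * x2 * x4^3 * x5 + 270 * x1^3 * x2 * x4^4 + 25721 * x1^3 * x2 * x3 + 2336 * x1^3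 * x2 * x3 * x7 + 20 * x1^3 * x2 * x3 * x7^2 + 2218 * x1^3 * x2 * x3 * x6 + 78 * x1^3 * x2 * x3 * x6 * x7 + 19 * x1^3 * x2 * x3 * x6^2 + 4220 * x1^3 * x2 * x3 * x5 + 82 * x1^3 * x2 * x3 * x5 * x7 + 160 * x1^3 * x2 * x3 * x5 * x6 + 50 * x1^3 * x2 * x3 * x5^2 + 31938 * x1^3 * x2 * x3 * x4 + 1777 * x1^3 * x2 * x3 * x4 * x7 + 6 * x1^3 * x2 * x3 * x4 * x7^2 + 1707 * x1^3 * x2 * x3 * x4 * x6 + 24 * x1^3 * x2 * x3 * x4 * x6 * x7 + 6 * x1^3 * x2 * x3 * x4 * x6^2 + 3006 * x1^3 * x2 * x3 * x4 * x5 + 18 * x1^3 * x2 * x3 * x4 * x5 * x7 + 36 * x1^3 * x2 * x3 * x4 * x5 * x6 + 8 * x1^3 * x2 * x3 * x4 * x5^2 + 13027 * x1^3 * x2 * x3 * x4^2 + 330 * x1^3 * x2 * x3 * x4^2 * x7 + 324 * x1^3 * x2 * x3 * x4^2 * x6 + 455 * x1^3 * x2 * x3 * x4^2 * x5 + 1826 * x1^3 * x2 * x3 * x4^3 + 6 * x1^3 * x2 * x3 * x4^3 * x7 + 6 * x1^3 * x2 * x3 * x4^3 * x6 + 6 * x1^3 * x2 * x3 * x4^3 * x5 + 36 * x1^3 * x2 * x3 * x4^4 + 19293 * x1^3 * x2 * x3^2 + 1161 * x1^3 * x2 * x3^2 * x7 + 4 * x1^3 * x2 * x3^2 * x7^2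 + 1079 * x1^3 * x2 * x3^2 * x6 + 16 * x1^3 * x2 * x3^2 * x6 * x7 + 4 * x1^3 * x2 * x3^2 * x6^2 + 1795 * x1^3 * x2 * x3^2 * x5 + 12 * x1^3 * x2 * x3^2 * x5 * x7 + 24 * x1^3 * x2 * x3^2 * x5 * x6 + 5 * x1^3 * x2 * x3^2 * x5^2 + 16834 * x1^3 * x2 * x3^2 * x4 + 486 * x1^3 * x2 * x3^2 * x4 * x7 + 468 * x1^3 * x2 * x3^2 * x4 * x6 + 640 * x1^3 * x2 * x3^2 * x4 * x5 + 4015 * x1^3 * x2 * x3^2 * x4^2 + 24 * x1^3 * x2 * x3^2 * x4^2 * x7 + 24 * x1^3 * x2 * x3^2 * x4^2 * x6 + 24 * x1^3 * x2 * x3^2 * x4^2 * x5 + 182 * x1^3 * x2 * x3^2 * x4^3 + 6890 * x1^3 * x2 * x3^3 + 222 * x1^3 * x2 * x3^3 * x7 + 210 * x1^3 * x2 * x3^3 * x6 + 281 * x1^3 * x2 * x3^3 * x5 + 3606 * x1^3 * x2 * x3^3 * x4 + 30 * x1^3 * x2 * x3^3 * x4 * x7 + 30 * x1^3 * x2 * x3^3 * x4 * x6 + 30 * x1^3 * x2 * x3^3 * x4 * x5 + 324 * x1^3 * x2 * x3^3 * x4^2 + 1147 * x1^3 * x2 * x3^4 + 12 * x1^3 * x2 * x3^4 * x7 + 12 * x1^3 * x2 * x3^4 * x6 + 12 * x1^3 * x2 * x3^4 * x5 + 246 * x1^3 * x2 * x3^4 * x4 + 68 * x1^3 * x2 * x3^5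 + 15014 * x1^3 * x2^2 + 1368 * x1^3 * x2^2 * x7 + 12 * x1^3 * x2^2 * x7^2 + 1368 * x1^3 * x2^2 * x6 + 48 * x1^3 * x2^2 * x6 * x7 + 12 * x1^3 * x2^2 * x6^2 + 2298 * x1^3 * x2^2 * x5 + 46 * x1^3 * x2^2 * x5 * x7 + 92 * x1^3 * x2^2 * x5 * x6 + 28 * x1^3 * x2^2 * x5^2 + 19394 * x1^3 * x2^2 * x4 + 1104 * x1^3 * x2^2 * x4 * x7 + 4 * x1^3 * x2^2 * x4 * x7^2 + 1104 * x1^3 * x2^2 * x4 * x6 + 16 * x1^3 * x2^2 * x4 * x6 * x7 + 4 * x1^3 * x2^2 * x4 * x6^2 + 1743 * x1^3 * x2^2 * x4 * x5 + 12 * x1^3 * x2^2 * x4 * x5 * x7 + 24 * x1^3 * x2^2 * x4 * x5 * x6 + 6 * x1^3 * x2^2 * x4 * x5^2 + 8362 * x1^3 * x2^2 * x4^2 + 228 * x1^3 * x2^2 * x4^2 * x7 + 228 * x1^3 * x2^2 * x4^2 * x6 + 306 * x1^3 * x2^2 * x4^2 * x5 + 1286 * x1^3 * x2^2 * x4^3 + 6 * x1^3 * x2^2 * x4^3 * x7 + 6 * x1^3 * x2^2 * x4^3 * x6 + 6 * x1^3 * x2^2 * x4^3 * x5 + 36 * x1^3 * x2^2 * x4^4 + 22522 * x1^3 * x2^2 * x3 + 1381 * x1^3 * x2^2 * x3 * x7 + 5 * x1^3 * x2^2 * x3 * x7^2 + 1334 * x1^3 * x2^2 * x3 * x6 + 20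 * x1^3 * x2^2 * x3 * x6 * x7 + 5 * x1^3 * x2^2 * x3 * x6^2 + 2027 * x1^3 * x2^2 * x3 * x5 + 15 * x1^3 * x2^2 * x3 * x5 * x7 + 30 * x1^3 * x2^2 * x3 * x5 * x6 + 7 * x1^3 * x2^2 * x3 * x5^2 + 20437 * x1^3 * x2^2 * x3 * x4 + 621 * x1^3 * x2^2 * x3 * x4 * x7 + 609 * x1^3 * x2^2 * x3 * x4 * x6 + 799 * x1^3 * x2^2 * x3 * x4 * x5 + 5169 * x1^3 * x2^2 * x3 * x4^2 + 36 * x1^3 * x2^2 * x3 * x4^2 * x7 + 36 * x1^3 * x2^2 * x3 * x4^2 * x6 + 36 * x1^3 * x2^2 * x3 * x4^2 * x5 + 270 * x1^3 * x2^2 * x3 * x4^3 + 12063 * x1^3 * x2^2 * x3^2 + 405 * x1^3 * x2^2 * x3^2 * x7 + 390 * x1^3 * x2^2 * x3^2 * x6 + 502 * x1^3 * x2^2 * x3^2 * x5 + 6572 * x1^3 * x2^2 * x3^2 * x4 + 60 * x1^3 * x2^2 * x3^2 * x4 * x7 + 60 * x1^3 * x2^2 * x3^2 * x4 * x6 + 60 * x1^3 * x2^2 * x3^2 * x4 * x5 + 636 * x1^3 * x2^2 * x3^2 * x4^2 + 2676 * x1^3 * x2^2 * x3^3 + 30 * x1^3 * x2^2 * x3^3 * x7 + 30 * x1^3 * x2^2 * x3^3 * x6 + 30 * x1^3 * x2^2 * x3^3 * x5 + 600 * x1^3 * x2^2 * x3^3 * x4 + 198 * x1^3 * x2^2 *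 x3^4 + 8550 * x1^3 * x2^3 + 537 * x1^3 * x2^3 * x7 + 2 * x1^3 * x2^3 * x7^2 + 537 * x1^3 * x2^3 * x6 + 8 * x1^3 * x2^3 * x6 * x7 + 2 * x1^3 * x2^3 * x6^2 + 754 * x1^3 * x2^3 * x5 + 6 * x1^3 * x2^3 * x5 * x7 + 12 * x1^3 * x2^3 * x5 * x6 + 3 * x1^3 * x2^3 * x5^2 + 8050 * x1^3 * x2^3 * x4 + 258 * x1^3 * x2^3 * x4 * x7 + 258 * x1^3 * x2^3 * x4 * x6 + 324 * x1^3 * x2^3 * x4 * x5 + 2160 * x1^3 * x2^3 * x4^2 + 18 * x1^3 * x2^3 * x4^2 * x7 + 18 * x1^3 * x2^3 * x4^2 * x6 + 18 * x1^3 * x2^3 * x4^2 * x5 + 132 * x1^3 * x2^3 * x4^3 + 9213 * x1^3 * x2^3 * x3 + 324 * x1^3 * x2^3 * x3 * x7 + 318 * x1^3 * x2^3 * x3 * x6 + 393 * x1^3 * x2^3 * x3 * x5 + 5244 * x1^3 * x2^3 * x3 * x4 + 54 * x1^3 * x2^3 * x3 * x4 * x7 + 54 * x1^3 * x2^3 * x3 * x4 * x6 + 54 * x1^3 * x2^3 * x3 * x4 * x5 + 558 * x1^3 * x2^3 * x3 * x4^2 + 3093 * x1^3 * x2^3 * x3^2 + 38 * x1^3 * x2^3 * x3^2 * x7 + 38 * x1^3 * x2^3 * x3^2 * x6 + 38 * x1^3 * x2^3 * x3^2 * x5 + 738 * x1^3 * x2^3 * x3^2 * x4 + 310 * x1^3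 * x2^3 * x3^3 + 2594 * x1^3 * x2^4 + 96 * x1^3 * x2^4 * x7 + 96 * x1^3 * x2^4 * x6 + 114 * x1^3 * x2^4 * x5 + 1542 * x1^3 * x2^4 * x4 + 18 * x1^3 * x2^4 * x4 * x7 + 18 * x1^3 * x2^4 * x4 * x6 + 18 * x1^3 * x2^4 * x4 * x5 + 180 * x1^3 * x2^4 * x4^2 + 1766 * x1^3 * x2^4 * x3 + 24 * x1^3 * x2^4 * x3 * x7 + 24 * x1^3 * x2^4 * x3 * x6 + 24 * x1^3 * x2^4 * x3 * x5 + 450 * x1^3 * x2^4 * x3 * x4 + 272 * x1^3 * x2^4 * x3^2 + 398 * x1^3 * x2^5 + 6 * x1^3 * x2^5 * x7 + 6 * x1^3 * x2^5 * x6 + 6 * x1^3 * x2^5 * x5 + 108 * x1^3 * x2^5 * x4 + 126 * x1^3 * x2^5 * x3 + 24 * x1^3 * x2^6 + 756 * x1^4 + 52 * x1^4 * x7 + 52 * x1^4 * x6 + 204 * x1^4 * x5 + 4 * x1^4 * x5 * x7 + 8 * x1^4 * x5 * x6 + 4 * x1^4 * x5^2 + 1404 * x1^4 * x4 + 72 * x1^4 * x4 * x7 + 72 * x1^4 * x4 * x6 + 304 * x1^4 * x4 * x5 + 4 * x1^4 * x4 * x5 * x7 + 8 * x1^4 * x4 * x5 * x6 + 4 * x1^4 * x4 * x5^2 + 969 * x1^4 * x4^2 + 33 * x1^4 * x4^2 * x7 + 33 * x1^4 * x4^2 * x6 + 151 * x1^4 * x4^2 * x5 + x1^4 * x4^2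 * x5 * x7 + 2 * x1^4 * x4^2 * x5 * x6 + x1^4 * x4^2 * x5^2 + 294 * x1^4 * x4^3 + 5 * x1^4 * x4^3 * x7 + 5 * x1^4 * x4^3 * x6 + 25 * x1^4 * x4^3 * x5 + 33 * x1^4 * x4^4 + 1800 * x1^4 * x3 + 96 * x1^4 * x3 * x7 + 92 * x1^4 * x3 * x6 + 328 * x1^4 * x3 * x5 + 4 * x1^4 * x3 * x5 * x7 + 8 * x1^4 * x3 * x5 * x6 + 4 * x1^4 * x3 * x5^2 + 2694 * x1^4 * x3 * x4 + 98 * x1^4 * x3 * x4 * x7 + 94 * x1^4 * x3 * x4 * x6 + 338 * x1^4 * x3 * x4 * x5 + 2 * x1^4 * x3 * x4 * x5 * x7 + 4 * x1^4 * x3 * x4 * x5 * x6 + 2 * x1^4 * x3 * x4 * x5^2 + 1417 * x1^4 * x3 * x4^2 + 29 * x1^4 * x3 * x4^2 * x7 + 28 * x1^4 * x3 * x4^2 * x6 + 93 * x1^4 * x3 * x4^2 * x5 + 298 * x1^4 * x3 * x4^3 + 2 * x1^4 * x3 * x4^3 * x7 + 2 * x1^4 * x3 * x4^3 * x6 + 3 * x1^4 * x3 * x4^3 * x5 + 19 * x1^4 * x3 * x4^4 + 1725 * x1^4 * x3^2 + 65 * x1^4 * x3^2 * x7 + 61 * x1^4 * x3^2 * x6 + 187 * x1^4 * x3^2 * x5 + x1^4 * x3^2 * x5 * x7 + 2 * x1^4 * x3^2 * x5 * x6 + x1^4 * x3^2 * x5^2 + 1964 * x1^4 * x3^2 * x4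 + 43 * x1^4 * x3^2 * x4 * x7 + 41 * x1^4 * x3^2 * x4 * x6 + 111 * x1^4 * x3^2 * x4 * x5 + 712 * x1^4 * x3^2 * x4^2 + 6 * x1^4 * x3^2 * x4^2 * x7 + 6 * x1^4 * x3^2 * x4^2 * x6 + 9 * x1^4 * x3^2 * x4^2 * x5 + 83 * x1^4 * x3^2 * x4^3 + x1^4 * x3^2 * x4^4 + 841 * x1^4 * x3^3 + 19 * x1^4 * x3^3 * x7 + 18 * x1^4 * x3^3 * x6 + 43 * x1^4 * x3^3 * x5 + 662 * x1^4 * x3^3 * x4 + 6 * x1^4 * x3^3 * x4 * x7 + 6 * x1^4 * x3^3 * x4 * x6 + 9 * x1^4 * x3^3 * x4 * x5 + 135 * x1^4 * x3^3 * x4^2 + 4 * x1^4 * x3^3 * x4^3 + 215 * x1^4 * x3^4 + 2 * x1^4 * x3^4 * x7 + 2 * x1^4 * x3^4 * x6 + 3 * x1^4 * x3^4 * x5 + 97 * x1^4 * x3^4 * x4 + 6 * x1^4 * x3^4 * x4^2 + 26 * x1^4 * x3^5 + 4 * x1^4 * x3^5 * x4 + x1^4 * x3^6 + 2196 * x1^4 * x2 + 116 * x1^4 * x2 * x7 + 116 * x1^4 * x2 * x6 + 348 * x1^4 * x2 * x5 + 4 * x1^4 * x2 * x5 * x7 + 8 * x1^4 * x2 * x5 * x6 + 4 * x1^4 * x2 * x5^2 + 3450 * x1^4 * x2 * x4 + 126 * x1^4 * x2 * x4 * x7 + 126 * x1^4 * x2 * x4 * x6 + 370 * x1^4 * x2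 * x4 * x5 + 2 * x1^4 * x2 * x4 * x5 * x7 + 4 * x1^4 * x2 * x4 * x5 * x6 + 2 * x1^4 * x2 * x4 * x5^2 + 1952 * x1^4 * x2 * x4^2 + 42 * x1^4 * x2 * x4^2 * x7 + 42 * x1^4 * x2 * x4^2 * x6 + 110 * x1^4 * x2 * x4^2 * x5 + 464 * x1^4 * x2 * x4^3 + 4 * x1^4 * x2 * x4^3 * x7 + 4 * x1^4 * x2 * x4^3 * x6 + 6 * x1^4 * x2 * x4^3 * x5 + 38 * x1^4 * x2 * x4^4 + 4194 * x1^4 * x2 * x3 + 158 * x1^4 * x2 * x3 * x7 + 154 * x1^4 * x2 * x3 * x6 + 406 * x1^4 * x2 * x3 * x5 + 2 * x1^4 * x2 * x3 * x5 * x7 + 4 * x1^4 * x2 * x3 * x5 * x6 + 2 * x1^4 * x2 * x3 * x5^2 + 4994 * x1^4 * x2 * x3 * x4 + 112 * x1^4 * x2 * x3 * x4 * x7 + 110 * x1^4 * x2 * x3 * x4 * x6 + 256 * x1^4 * x2 * x3 * x4 * x5 + 1931 * x1^4 * x2 * x3 * x4^2 + 18 * x1^4 * x2 * x3 * x4^2 * x7 + 18 * x1^4 * x2 * x3 * x4^2 * x6 + 27 * x1^4 * x2 * x3 * x4^2 * x5 + 248 * x1^4 * x2 * x3 * x4^3 + 3 * x1^4 * x2 * x3 * x4^4 + 3054 * x1^4 * x2 * x3^2 + 70 * x1^4 * x2 * x3^2 * x7 + 68 * x1^4 * x2 * x3^2 * x6 + 146 * x1^4 * x2 * x3^2 * x5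 + 2502 * x1^4 * x2 * x3^2 * x4 + 24 * x1^4 * x2 * x3^2 * x4 * x7 + 24 * x1^4 * x2 * x3^2 * x4 * x6 + 36 * x1^4 * x2 * x3^2 * x4 * x5 + 537 * x1^4 * x2 * x3^2 * x4^2 + 16 * x1^4 * x2 * x3^2 * x4^3 + 1035 * x1^4 * x2 * x3^3 + 10 * x1^4 * x2 * x3^3 * x7 + 10 * x1^4 * x2 * x3^3 * x6 + 15 * x1^4 * x2 * x3^3 * x5 + 482 * x1^4 * x2 * x3^3 * x4 + 30 * x1^4 * x2 * x3^3 * x4^2 + 155 * x1^4 * x2 * x3^4 + 24 * x1^4 * x2 * x3^4 * x4 + 7 * x1^4 * x2 * x3^5 + 2469 * x1^4 * x2^2 + 93 * x1^4 * x2^2 * x7 + 93 * x1^4 * x2^2 * x6 + 219 * x1^4 * x2^2 * x5 + x1^4 * x2^2 * x5 * x7 + 2 * x1^4 * x2^2 * x5 * x6 + x1^4 * x2^2 * x5^2 + 3042 * x1^4 * x2^2 * x4 + 69 * x1^4 * x2^2 * x4 * x7 + 69 * x1^4 * x2^2 * x4 * x6 + 145 * x1^4 * x2^2 * x4 * x5 + 1235 * x1^4 * x2^2 * x4^2 + 12 * x1^4 * x2^2 * x4^2 * x7 + 12 * x1^4 * x2^2 * x4^2 * x6 + 18 * x1^4 * x2^2 * x4^2 * x5 + 172 * x1^4 * x2^2 * x4^3 + 3 * x1^4 * x2^2 * x4^4 + 3597 * x1^4 * x2^2 * x3 + 83 * x1^4 * x2^2 * x3 * x7 + 82 * x1^4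 * x2^2 * x3 * x6 + 163 * x1^4 * x2^2 * x3 * x5 + 3050 * x1^4 * x2^2 * x3 * x4 + 30 * x1^4 * x2^2 * x3 * x4 * x7 + 30 * x1^4 * x2^2 * x3 * x4 * x6 + 45 * x1^4 * x2^2 * x3 * x4 * x5 + 690 * x1^4 * x2^2 * x3 * x4^2 + 24 * x1^4 * x2^2 * x3 * x4^3 + 1831 * x1^4 * x2^2 * x3^2 + 18 * x1^4 * x2^2 * x3^2 * x7 + 18 * x1^4 * x2^2 * x3^2 * x6 + 27 * x1^4 * x2^2 * x3^2 * x5 + 885 * x1^4 * x2^2 * x3^2 * x4 + 60 * x1^4 * x2^2 * x3^2 * x4^2 + 367 * x1^4 * x2^2 * x3^3 + 60 * x1^4 * x2^2 * x3^3 * x4 + 21 * x1^4 * x2^2 * x3^4 + 1384 * x1^4 * x2^3 + 32 * x1^4 * x2^3 * x7 + 32 * x1^4 * x2^3 * x6 + 60 * x1^4 * x2^3 * x5 + 1210 * x1^4 * x2^3 * x4 + 12 * x1^4 * x2^3 * x4 * x7 + 12 * x1^4 * x2^3 * x4 * x6 + 18 * x1^4 * x2^3 * x4 * x5 + 288 * x1^4 * x2^3 * x4^2 + 12 * x1^4 * x2^3 * x4^3 + 1417 * x1^4 * x2^3 * x3 + 14 * x1^4 * x2^3 * x3 * x7 + 14 * x1^4 * x2^3 * x3 * x6 + 21 * x1^4 * x2^3 * x3 * x5 + 712 * x1^4 * x2^3 * x3 * x4 + 54 * x1^4 * x2^3 * x3 * x4^2 + 431 * x1^4 * x2^3 * x3^2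 + 76 * x1^4 * x2^3 * x3^2 * x4 + 34 * x1^4 * x2^3 * x3^3 + 406 * x1^4 * x2^4 + 4 * x1^4 * x2^4 * x7 + 4 * x1^4 * x2^4 * x6 + 6 * x1^4 * x2^4 * x5 + 212 * x1^4 * x2^4 * x4 + 18 * x1^4 * x2^4 * x4^2 + 251 * x1^4 * x2^4 * x3 + 48 * x1^4 * x2^4 * x3 * x4 + 31 * x1^4 * x2^4 * x3^2 + 58 * x1^4 * x2^5 + 12 * x1^4 * x2^5 * x4 + 15 * x1^4 * x2^5 * x3 + 3 * x1^4 * x2^6 + 48 * x1^5 + 8 * x1^5 * x5 + 88 * x1^5 * x4 + 12 * x1^5 * x4 * x5 + 60 * x1^5 * x4^2 + 6 * x1^5 * x4^2 * x5 + 18 * x1^5 * x4^3 + x1^5 * x4^3 * x5 + 2 * x1^5 * x4^4 + 112 * x1^5 * x3 + 12 * x1^5 * x3 * x5 + 164 * x1^5 * x3 * x4 + 12 * x1^5 * x3 * x4 * x5 + 84 * x1^5 * x3 * x4^2 + 3 * x1^5 * x3 * x4^2 * x5 + 17 * x1^5 * x3 * x4^3 + x1^5 * x3 * x4^4 + 104 * x1^5 * x3^2 + 6 * x1^5 * x3^2 * x5 + 114 * x1^5 * x3^2 * x4 + 3 * x1^5 * x3^2 * x4 * x5 + 39 * x1^5 * x3^2 * x4^2 + 4 * x1^5 * x3^2 * x4^3 + 48 * x1^5 * x3^3 + x1^5 * x3^3 * x5 + 35 * x1^5 * x3^3 * x4 + 6 * x1^5 * x3^3 * x4^2 + 11 *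 x1^5 * x3^4 + 4 * x1^5 * x3^4 * x4 + x1^5 * x3^5 + 136 * x1^5 * x2 + 12 * x1^5 * x2 * x5 + 208 * x1^5 * x2 * x4 + 12 * x1^5 * x2 * x4 * x5 + 114 * x1^5 * x2 * x4^2 + 3 * x1^5 * x2 * x4^2 * x5 + 26 * x1^5 * x2 * x4^3 + 2 * x1^5 * x2 * x4^4 + 252 * x1^5 * x2 * x3 + 12 * x1^5 * x2 * x3 * x5 + 288 * x1^5 * x2 * x3 * x4 + 6 * x1^5 * x2 * x3 * x4 * x5 + 105 * x1^5 * x2 * x3 * x4^2 + 12 * x1^5 * x2 * x3 * x4^3 + 174 * x1^5 * x2 * x3^2 + 3 * x1^5 * x2 * x3^2 * x5 + 132 * x1^5 * x2 * x3^2 * x4 + 24 * x1^5 * x2 * x3^2 * x4^2 + 53 * x1^5 * x2 * x3^3 + 20 * x1^5 * x2 * x3^3 * x4 + 6 * x1^5 * x2 * x3^4 + 148 * x1^5 * x2^2 + 6 * x1^5 * x2^2 * x5 + 174 * x1^5 * x2^2 * x4 + 3 * x1^5 * x2^2 * x4 * x5 + 66 * x1^5 * x2^2 * x4^2 + 8 * x1^5 * x2^2 * x4^3 + 204 * x1^5 * x2^2 * x3 + 3 * x1^5 * x2^2 * x3 * x5 + 159 * x1^5 * x2^2 * x3 * x4 + 30 * x1^5 * x2^2 * x3 * x4^2 + 93 * x1^5 * x2^2 * x3^2 + 36 * x1^5 * x2^2 * x3^2 * x4 + 14 * x1^5 * x2^2 * x3^3 + 78 * x1^5 * x2^3 + x1^5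 * x2^3 * x5 + 62 * x1^5 * x2^3 * x4 + 12 * x1^5 * x2^3 * x4^2 + 71 * x1^5 * x2^3 * x3 + 28 * x1^5 * x2^3 * x3 * x4 + 16 * x1^5 * x2^3 * x3^2 + 20 * x1^5 * x2^4 + 8 * x1^5 * x2^4 * x4 + 9 * x1^5 * x2^4 * x3 + 2 * x1^5 * x2^5))"
    unfolding assms S_def T_def
    by (simp only: of_nat_add of_nat_mult of_nat_power of_nat_numeral of_nat_1) algebra
  show ?thesis unfolding eq by (rule pos_int_add) simp
qed

lemma poly_pos2:
  fixes x1 x2 x3 x4 x5 x6 x7 :: nat and n m k l s t i :: int
  assumes "t = int x1 + 3" "i = int x1 + int x2 + 5" "s = int x1 + 2 * int x2 + int x3 + 7"
    "k = int x1 + int x2 + int x3 + int x4 + 5" "l = int x1 + int x2 + int x3 + int x4 + 5 - int x5"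
    "n = (int x1 + 4) * (int x2 + int x3 + int x4 + 3) + int x6"
    "m = (int x1 + 4) * (int x2 + int x3 + int x4 + 3) + int x7"
  shows "0 < (m - l + t - i) * (n - s - k + i) * S n s i k * S m s (s + t - i) l
       - (m - s + 1) * (n - s + 1) * T n s i k * T m s (s + t - i) l"
proof -
  have eq: "(m - l + t - i) * (n - s - k + i) * S n s i k * S m s (s + t - i) l
       - (m - s + 1) * (n - s + 1) * T n s i k * T m s (s + t - i) l = int (7236 + (4266 * x7 + 510 * x7^2 + 4266 * x6 + 2085 * x6 * x7 + 229 * x6 * x7^2 + 510 * x6^2 + 229 * x6^2 * x7 + 24 * x6^2 * x7^2 + 10614 * x5 + 1944 * x5 * x7 + 4043 * x5 * x6 + 738 * x5 * x6 * x7 + 379 * x5 * x6^2 + 69 * x5 * x6^2 * x7 + 1050 * x5^2 + 385 * x5^2 * x6 + 35 * x5^2 * x6^2 + 12900 * x4 + 6433 * x4 * x7 + 537 * x4 * x7^2 + 6433 * x4 * x6 + 2188 * x4 * x6 * x7 + 123 * x4 * x6 * x7^2 + 537 * x4 * x6^2 + 123 * x4 * x6^2 * x7 + 17683 * x4 * x5 + 2202 * x4 * x5 * x7 + 4464 * x4 * x5 * x6 + 417 * x4 * x5 * x6 * x7 + 206 * x4 * x5 * x6^2 + 1205 * x4 * x5^2 + 220 * x4 * x5^2 * x6 + 8049 * x4^2 + 3191 * x4^2 * x7 + 143 * x4^2 * x7^2 + 3191 * x4^2 * x6 + 567 * x4^2 * x6 * x7 + 143 * x4^2 * x6^2 + 9797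 * x4^2 * x5 + 624 * x4^2 * x5 * x7 + 1228 * x4^2 * x5 * x6 + 345 * x4^2 * x5^2 + 1978 * x4^3 + 520 * x4^3 * x7 + 520 * x4^3 * x6 + 1806 * x4^3 * x5 + 137 * x4^4 + 19518 * x3 + 7216 * x3 * x7 + 506 * x3 * x7^2 + 9567 * x3 * x6 + 2898 * x3 * x6 * x7 + 162 * x3 * x6 * x7^2 + 927 * x3 * x6^2 + 238 * x3 * x6^2 * x7 + 9 * x3 * x6^2 * x7^2 + 16856 * x3 * x5 + 2034 * x3 * x5 * x7 + 4932 * x3 * x5 * x6 + 500 * x3 * x5 * x6 * x7 + 321 * x3 * x5 * x6^2 + 21 * x3 * x5 * x6^2 * x7 + 1180 * x3 * x5^2 + 282 * x3 * x5^2 * x6 + 12 * x3 * x5^2 * x6^2 + 30641 * x3 * x4 + 8533 * x3 * x4 * x7 + 390 * x3 * x4 * x7^2 + 11208 * x3 * x4 * x6 + 2051 * x3 * x4 * x6 * x7 + 51 * x3 * x4 * x6 * x7^2 + 631 * x3 * x4 * x6^2 + 51 * x3 * x4 * x6^2 * x7 + 20535 * x3 * x4 * x5 + 1509 * x3 * x4 * x5 * x7 + 3400 * x3 * x4 * x5 * x6 + 132 * x3 * x4 * x5 * x6 * x7 + 60 * x3 * x4 * x5 * x6^2 + 901 * x3 * x4 * x5^2 + 79 * x3 * x4 * x5^2 * x6 + 17122 * x3 * x4^2 + 3088 * x3 * x4^2 * x7 + 65 * x3 * x4^2 * x7^2 + 3930 * x3 * x4^2 * x6 + 276 * x3 * x4^2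 * x6 * x7 + 72 * x3 * x4^2 * x6^2 + 7189 * x3 * x4^2 * x5 + 202 * x3 * x4^2 * x5 * x7 + 370 * x3 * x4^2 * x5 * x6 + 129 * x3 * x4^2 * x5^2 + 4058 * x3 * x4^3 + 318 * x3 * x4^3 * x7 + 367 * x3 * x4^3 * x6 + 550 * x3 * x4^3 * x5 + 361 * x3 * x4^4 + 20364 * x3^2 + 4835 * x3^2 * x7 + 208 * x3^2 * x7^2 + 7713 * x3^2 * x6 + 1410 * x3^2 * x6 * x7 + 43 * x3^2 * x6 * x7^2 + 528 * x3^2 * x6^2 + 65 * x3^2 * x6^2 * x7 + x3^2 * x6^2 * x7^2 + 10335 * x3^2 * x5 + 787 * x3^2 * x5 * x7 + 2100 * x3^2 * x5 * x6 + 111 * x3^2 * x5 * x6 * x7 + 74 * x3^2 * x5 * x6^2 + 2 * x3^2 * x5 * x6^2 * x7 + 489 * x3^2 * x5^2 + 66 * x3^2 * x5^2 * x6 + x3^2 * x5^2 * x6^2 + 25991 * x3^2 * x4 + 4236 * x3^2 * x4 * x7 + 107 * x3^2 * x4 * x7^2 + 6372 * x3^2 * x4 * x6 + 604 * x3^2 * x4 * x6 * x7 + 6 * x3^2 * x4 * x6 * x7^2 + 186 * x3^2 * x4 * x6^2 + 6 * x3^2 * x4 * x6^2 * x7 + 8508 * x3^2 * x4 * x5 + 338 * x3^2 * x4 * x5 * x7 + 779 * x3^2 * x4 * x5 * x6 + 13 * x3^2 * x4 * x5 * x6 * x7 + 6 * x3^2 * x4 * x5 * x6^2 + 217 * x3^2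 * x4 * x5^2 + 7 * x3^2 * x4 * x5^2 * x6 + 11127 * x3^2 * x4^2 + 992 * x3^2 * x4^2 * x7 + 8 * x3^2 * x4^2 * x7^2 + 1327 * x3^2 * x4^2 * x6 + 35 * x3^2 * x4^2 * x6 * x7 + 9 * x3^2 * x4^2 * x6^2 + 1632 * x3^2 * x4^2 * x5 + 20 * x3^2 * x4^2 * x5 * x7 + 38 * x3^2 * x4^2 * x5 * x6 + 12 * x3^2 * x4^2 * x5^2 + 1759 * x3^2 * x4^3 + 44 * x3^2 * x4^3 * x7 + 51 * x3^2 * x4^3 * x6 + 56 * x3^2 * x4^3 * x5 + 60 * x3^2 * x4^4 + 10785 * x3^3 + 1633 * x3^3 * x7 + 41 * x3^3 * x7^2 + 2886 * x3^3 * x6 + 301 * x3^3 * x6 * x7 + 4 * x3^3 * x6 * x7^2 + 114 * x3^3 * x6^2 + 6 * x3^3 * x6^2 * x7 + 3088 * x3^3 * x5 + 136 * x3^3 * x5 * x7 + 382 * x3^3 * x5 * x6 + 9 * x3^3 * x5 * x6 * x7 + 6 * x3^3 * x5 * x6^2 + 89 * x3^3 * x5^2 + 5 * x3^3 * x5^2 * x6 + 10269 * x3^3 * x4 + 937 * x3^3 * x4 * x7 + 10 * x3^3 * x4 * x7^2 + 1476 * x3^3 * x4 * x6 + 59 * x3^3 * x4 * x6 * x7 + 18 * x3^3 * x4 * x6^2 + 1525 * x3^3 * x4 * x5 + 27 * x3^3 * x4 * x5 * x7 + 65 * x3^3 * x4 * x5 * x6 + 17 * x3^3 * x4 * x5^2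 + 2859 * x3^3 * x4^2 + 101 * x3^3 * x4^2 * x7 + 138 * x3^3 * x4^2 * x6 + 134 * x3^3 * x4^2 * x5 + 201 * x3^3 * x4^3 + 3099 * x3^4 + 276 * x3^4 * x7 + 3 * x3^4 * x7^2 + 516 * x3^4 * x6 + 24 * x3^4 * x6 * x7 + 9 * x3^4 * x6^2 + 456 * x3^4 * x5 + 9 * x3^4 * x5 * x7 + 27 * x3^4 * x5 * x6 + 6 * x3^4 * x5^2 + 1920 * x3^4 * x4 + 75 * x3^4 * x4 * x7 + 123 * x3^4 * x4 * x6 + 105 * x3^4 * x4 * x5 + 249 * x3^4 * x4^2 + 459 * x3^5 + 18 * x3^5 * x7 + 36 * x3^5 * x6 + 27 * x3^5 * x5 + 135 * x3^5 * x4 + 27 * x3^6 + 26136 * x2 + 10350 * x2 * x7 + 896 * x2 * x7^2 + 10350 * x2 * x6 + 3608 * x2 * x6 * x7 + 277 * x2 * x6 * x7^2 + 896 * x2 * x6^2 + 277 * x2 * x6^2 * x7 + 18 * x2 * x6^2 * x7^2 + 18808 * x2 * x5 + 2700 * x2 * x5 * x7 + 5541 * x2 * x5 * x6 + 732 * x2 * x5 * x6 * x7 + 373 * x2 * x5 * x6^2 + 42 * x2 * x5 * x6^2 * x7 + 1280 * x2 * x5^2 + 327 * x2 * x5^2 * x6 + 17 * x2 * x5^2 * x6^2 + 45184 * x2 * x4 + 13359 * x2 * x4 * x7 + 735 * x2 * x4 * x7^2 + 13359 * x2 * x4 * x6 + 2968 * x2 * x4 * x6 * x7 + 102 * x2 *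 x4 * x6 * x7^2 + 735 * x2 * x4 * x6^2 + 102 * x2 * x4 * x6^2 * x7 + 25126 * x2 * x4 * x5 + 2253 * x2 * x4 * x5 * x7 + 4583 * x2 * x4 * x5 * x6 + 264 * x2 * x4 * x5 * x6 * x7 + 134 * x2 * x4 * x5 * x6^2 + 1036 * x2 * x4 * x5^2 + 109 * x2 * x4 * x5^2 * x6 + 28310 * x2 * x4^2 + 5458 * x2 * x4^2 * x7 + 137 * x2 * x4^2 * x7^2 + 5458 * x2 * x4^2 * x6 + 552 * x2 * x4^2 * x6 * x7 + 137 * x2 * x4^2 * x6^2 + 10480 * x2 * x4^2 * x5 + 411 * x2 * x4^2 * x5 * x7 + 838 * x2 * x4^2 * x5 * x6 + 174 * x2 * x4^2 * x5^2 + 7568 * x2 * x4^3 + 685 * x2 * x4^3 * x7 + 685 * x2 * x4^3 * x6 + 1296 * x2 * x4^3 * x5 + 722 * x2 * x4^4 + 53408 * x2 * x3 + 13965 * x2 * x3 * x7 + 704 * x2 * x3 * x7^2 + 17046 * x2 * x3 * x6 + 3631 * x2 * x3 * x6 * x7 + 132 * x2 * x3 * x6 * x7^2 + 1103 * x2 * x3 * x6^2 + 176 * x2 * x3 * x6^2 * x7 + 3 * x2 * x3 * x6^2 * x7^2 + 23891 * x2 * x3 * x5 + 2131 * x2 * x3 * x5 * x7 + 5008 * x2 * x3 * x5 * x6 + 328 * x2 * x3 * x5 * x6 * x7 + 201 * x2 * x3 * x5 * x6^2 + 6 * x2 * x3 * x5 * x6^2 * x7 + 1063 * x2 * x3 *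 x5^2 + 156 * x2 * x3 * x5^2 * x6 + 3 * x2 * x3 * x5^2 * x6^2 + 72850 * x2 * x3 * x4 + 12894 * x2 * x3 * x4 * x7 + 359 * x2 * x3 * x4 * x7^2 + 15482 * x2 * x3 * x4 * x6 + 1732 * x2 * x3 * x4 * x6 * x7 + 18 * x2 * x3 * x4 * x6 * x7^2 + 503 * x2 * x3 * x4 * x6^2 + 18 * x2 * x3 * x4 * x6^2 * x7 + 21825 * x2 * x3 * x4 * x5 + 1026 * x2 * x3 * x4 * x5 * x7 + 2270 * x2 * x3 * x4 * x5 * x6 + 39 * x2 * x3 * x4 * x5 * x6 * x7 + 18 * x2 * x3 * x4 * x5 * x6^2 + 506 * x2 * x3 * x4 * x5^2 + 20 * x2 * x3 * x4 * x5^2 * x6 + 33285 * x2 * x3 * x4^2 + 3179 * x2 * x3 * x4^2 * x7 + 25 * x2 * x3 * x4^2 * x7^2 + 3702 * x2 * x3 * x4^2 * x6 + 105 * x2 * x3 * x4^2 * x6 * x7 + 27 * x2 * x3 * x4^2 * x6^2 + 5068 * x2 * x3 * x4^2 * x5 + 62 * x2 * x3 * x4^2 * x5 * x7 + 116 * x2 * x3 * x4^2 * x5 * x6 + 33 * x2 * x3 * x4^2 * x5^2 + 5502 * x2 * x3 * x4^3 + 138 * x2 * x3 * x4^3 * x7 + 152 * x2 * x3 * x4^3 * x6 + 182 * x2 * x3 * x4^3 * x5 + 185 * x2 * x3 * x4^4 + 41677 * x2 * x3^2 + 6928 * x2 * x3^2 * x7 + 194 * x2 * x3^2 * x7^2 +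 9708 * x2 * x3^2 * x6 + 1132 * x2 * x3^2 * x6 * x7 + 16 * x2 * x3^2 * x6 * x7^2 + 388 * x2 * x3^2 * x6^2 + 22 * x2 * x3^2 * x6^2 * x7 + 10983 * x2 * x3^2 * x5 + 551 * x2 * x3^2 * x5 * x7 + 1398 * x2 * x3^2 * x5 * x6 + 35 * x2 * x3^2 * x5 * x6 * x7 + 22 * x2 * x3^2 * x5 * x6^2 + 290 * x2 * x3^2 * x5^2 + 18 * x2 * x3^2 * x5^2 * x6 + 41411 * x2 * x3^2 * x4 + 4027 * x2 * x3^2 * x4 * x7 + 44 * x2 * x3^2 * x4 * x7^2 + 5354 * x2 * x3^2 * x4 * x6 + 225 * x2 * x3^2 * x4 * x6 * x7 + 66 * x2 * x3^2 * x4 * x6^2 + 5984 * x2 * x3^2 * x4 * x5 + 111 * x2 * x3^2 * x4 * x5 * x7 + 247 * x2 * x3^2 * x4 * x5 * x6 + 60 * x2 * x3^2 * x4 * x5^2 + 11868 * x2 * x3^2 * x4^2 + 423 * x2 * x3^2 * x4^2 * x7 + 519 * x2 * x3^2 * x4^2 * x6 + 550 * x2 * x3^2 * x4^2 * x5 + 822 * x2 * x3^2 * x4^3 + 15656 * x2 * x3^3 + 1509 * x2 * x3^3 * x7 + 18 * x2 * x3^3 * x7^2 + 2294 * x2 * x3^3 * x6 + 112 * x2 * x3^3 * x6 * x7 + 39 * x2 * x3^3 * x6^2 + 2181 * x2 * x3^3 * x5 + 47 * x2 * x3^3 * x5 * x7 + 123 * x2 * x3^3 * x5 * x6 + 26 *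 x2 * x3^3 * x5^2 + 9908 * x2 * x3^3 * x4 + 401 * x2 * x3^3 * x4 * x7 + 559 * x2 * x3^3 * x4 * x6 + 523 * x2 * x3^3 * x4 * x5 + 1276 * x2 * x3^3 * x4^2 + 2841 * x2 * x3^4 + 120 * x2 * x3^4 * x7 + 192 * x2 * x3^4 * x6 + 159 * x2 * x3^4 * x5 + 837 * x2 * x3^4 * x4 + 198 * x2 * x3^5 + 30816 * x2^2 + 8826 * x2^2 * x7 + 536 * x2^2 * x7^2 + 8826 * x2^2 * x6 + 2147 * x2^2 * x6 * x7 + 103 * x2^2 * x6 * x7^2 + 536 * x2^2 * x6^2 + 103 * x2^2 * x6^2 * x7 + 3 * x2^2 * x6^2 * x7^2 + 13034 * x2^2 * x5 + 1368 * x2^2 * x5 * x7 + 2778 * x2^2 * x5 * x6 + 234 * x2^2 * x5 * x6 * x7 + 118 * x2^2 * x5 * x6^2 + 6 * x2^2 * x5 * x6^2 * x7 + 574 * x2^2 * x5^2 + 90 * x2^2 * x5^2 * x6 + 2 * x2^2 * x5^2 * x6^2 + 44540 * x2^2 * x4 + 8730 * x2^2 * x4 * x7 + 294 * x2^2 * x4 * x7^2 + 8730 * x2^2 * x4 * x6 + 1180 * x2^2 * x4 * x6 * x7 + 18 * x2^2 * x4 * x6 * x7^2 + 294 * x2^2 * x4 * x6^2 + 18 * x2^2 * x4 * x6^2 * x7 + 12987 * x2^2 * x4 * x5 + 741 * x2^2 * x4 * x5 * x7 + 1505 * x2^2 * x4 * x5 * x6 + 39 * x2^2 * x4 * x5 *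 x6 * x7 + 20 * x2^2 * x4 * x5 * x6^2 + 289 * x2^2 * x4 * x5^2 + 13 * x2^2 * x4 * x5^2 * x6 + 21933 * x2^2 * x4^2 + 2413 * x2^2 * x4^2 * x7 + 26 * x2^2 * x4^2 * x7^2 + 2413 * x2^2 * x4^2 * x6 + 105 * x2^2 * x4^2 * x6 * x7 + 26 * x2^2 * x4^2 * x6^2 + 3565 * x2^2 * x4^2 * x5 + 63 * x2^2 * x4^2 * x5 * x7 + 130 * x2^2 * x4^2 * x5 * x6 + 21 * x2^2 * x4^2 * x5^2 + 4058 * x2^2 * x4^3 + 145 * x2^2 * x4^3 * x7 + 145 * x2^2 * x4^3 * x6 + 210 * x2^2 * x4^3 * x5 + 185 * x2^2 * x4^4 + 48322 * x2^2 * x3 + 8869 * x2^2 * x3 * x7 + 287 * x2^2 * x3 * x7^2 + 10355 * x2^2 * x3 * x6 + 1394 * x2^2 * x3 * x6 * x7 + 24 * x2^2 * x3 * x6 * x7^2 + 409 * x2^2 * x3 * x6^2 + 30 * x2^2 * x3 * x6^2 * x7 + 12367 * x2^2 * x3 * x5 + 719 * x2^2 * x3 * x5 * x7 + 1643 * x2^2 * x3 * x5 * x6 + 51 * x2^2 * x3 * x5 * x6 * x7 + 30 * x2^2 * x3 * x5 * x6^2 + 313 * x2^2 * x3 * x5^2 + 21 * x2^2 * x3 * x5^2 * x6 + 50637 * x2^2 * x3 * x4 + 5479 * x2^2 * x3 * x4 * x7 + 70 * x2^2 * x3 * x4 * x7^2 + 6283 * x2^2 * x3 * x4 * x6 + 321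 * x2^2 * x3 * x4 * x6 * x7 + 90 * x2^2 * x3 * x4 * x6^2 + 7446 * x2^2 * x3 * x4 * x5 + 165 * x2^2 * x3 * x4 * x5 * x7 + 357 * x2^2 * x3 * x4 * x5 * x6 + 69 * x2^2 * x3 * x4 * x5^2 + 15609 * x2^2 * x3 * x4^2 + 651 * x2^2 * x3 * x4^2 * x7 + 726 * x2^2 * x3 * x4^2 * x6 + 835 * x2^2 * x3 * x4^2 * x5 + 1240 * x2^2 * x3 * x4^3 + 27325 * x2^2 * x3^2 + 2893 * x2^2 * x3^2 * x7 + 39 * x2^2 * x3^2 * x7^2 + 3763 * x2^2 * x3^2 * x6 + 208 * x2^2 * x3^2 * x6 * x7 + 67 * x2^2 * x3^2 * x6^2 + 3769 * x2^2 * x3^2 * x5 + 92 * x2^2 * x3^2 * x5 * x7 + 223 * x2^2 * x3^2 * x5 * x6 + 42 * x2^2 * x3^2 * x5^2 + 18179 * x2^2 * x3^2 * x4 + 816 * x2^2 * x3^2 * x4 * x7 + 1011 * x2^2 * x3^2 * x4 * x6 + 1001 * x2^2 * x3^2 * x4 * x5 + 2531 * x2^2 * x3^2 * x4^2 + 6622 * x2^2 * x3^3 + 306 * x2^2 * x3^3 * x7 + 424 * x2^2 * x3^3 * x6 + 370 * x2^2 * x3^3 * x5 + 2052 * x2^2 * x3^3 * x4 + 579 * x2^2 * x3^4 + 17368 * x2^3 + 3498 * x2^3 * x7 + 134 * x2^3 * x7^2 + 3498 * x2^3 * x6 + 536 * x2^3 * x6 * x7 + 12 * x2^3 * x6 *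 x7^2 + 134 * x2^3 * x6^2 + 12 * x2^3 * x6^2 * x7 + 4424 * x2^3 * x5 + 300 * x2^3 * x5 * x7 + 604 * x2^3 * x5 * x6 + 24 * x2^3 * x5 * x6 * x7 + 12 * x2^3 * x5 * x6^2 + 112 * x2^3 * x5^2 + 8 * x2^3 * x5^2 * x6 + 19136 * x2^3 * x4 + 2312 * x2^3 * x4 * x7 + 36 * x2^3 * x4 * x7^2 + 2312 * x2^3 * x4 * x6 + 144 * x2^3 * x4 * x6 * x7 + 36 * x2^3 * x4 * x6^2 + 2900 * x2^3 * x4 * x5 + 78 * x2^3 * x4 * x5 * x7 + 158 * x2^3 * x4 * x5 * x6 + 26 * x2^3 * x4 * x5^2 + 6348 * x2^3 * x4^2 + 314 * x2^3 * x4^2 * x7 + 314 * x2^3 * x4^2 * x6 + 386 * x2^3 * x4^2 * x5 + 580 * x2^3 * x4^3 + 19896 * x2^3 * x3 + 2320 * x2^3 * x3 * x7 + 36 * x2^3 * x3 * x7^2 + 2632 * x2^3 * x3 * x6 + 168 * x2^3 * x3 * x6 * x7 + 48 * x2^3 * x3 * x6^2 + 2776 * x2^3 * x3 * x5 + 78 * x2^3 * x3 * x5 * x7 + 174 * x2^3 * x3 * x5 * x6 + 30 * x2^3 * x3 * x5^2 + 13964 * x2^3 * x3 * x4 + 706 * x2^3 * x3 * x4 * x7 + 786 * x2^3 * x3 * x4 * x6 + 816 * x2^3 * x3 * x4 * x5 + 2126 * x2^3 * x3 * x4^2 + 7320 * x2^3 * x3^2 + 372 * x2^3 * x3^2 *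 x7 + 460 * x2^3 * x3^2 * x6 + 418 * x2^3 * x3^2 * x5 + 2410 * x2^3 * x3^2 * x4 + 864 * x2^3 * x3^3 + 5164 * x2^4 + 660 * x2^4 * x7 + 12 * x2^4 * x7^2 + 660 * x2^4 * x6 + 48 * x2^4 * x6 * x7 + 12 * x2^4 * x6^2 + 736 * x2^4 * x5 + 24 * x2^4 * x5 * x7 + 48 * x2^4 * x5 * x6 + 8 * x2^4 * x5^2 + 3808 * x2^4 * x4 + 216 * x2^4 * x4 * x7 + 216 * x2^4 * x4 * x6 + 236 * x2^4 * x4 * x5 + 628 * x2^4 * x4^2 + 3864 * x2^4 * x3 + 216 * x2^4 * x3 * x7 + 240 * x2^4 * x3 * x6 + 228 * x2^4 * x3 * x5 + 1348 * x2^4 * x3 * x4 + 696 * x2^4 * x3^2 + 784 * x2^5 + 48 * x2^5 * x7 + 48 * x2^5 * x6 + 48 * x2^5 * x5 + 288 * x2^5 * x4 + 288 * x2^5 * x3 + 48 * x2^6 + 15840 * x1 + 6294 * x1 * x7 + 506 * x1 * x7^2 + 6294 * x1 * x6 + 2038 * x1 * x6 * x7 + 128 * x1 * x6 * x7^2 + 506 * x1 * x6^2 + 128 * x1 * x6^2 * x7 + 4 * x1 * x6^2 * x7^2 + 14494 * x1 * x5 + 1956 * x1 * x5 * x7 + 3988 * x1 * x5 * x6 + 464 * x1 * x5 * x6 * x7 + 234 * x1 * x5 * x6^2 + 18 * x1 * x5 * x6^2 * x7 + 1130 * x1 * x5^2 + 272 * x1 * x5^2 * x6 + 12 * x1 *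 x5^2 * x6^2 + 29896 * x1 * x4 + 9361 * x1 * x4 * x7 + 507 * x1 * x4 * x7^2 + 9361 * x1 * x4 * x6 + 2036 * x1 * x4 * x6 * x7 + 62 * x1 * x4 * x6 * x7^2 + 507 * x1 * x4 * x6^2 + 62 * x1 * x4 * x6^2 * x7 + 23245 * x1 * x4 * x5 + 2094 * x1 * x4 * x5 * x7 + 4180 * x1 * x4 * x5 * x6 + 240 * x1 * x4 * x5 * x6 * x7 + 117 * x1 * x4 * x5 * x6^2 + 1231 * x1 * x4 * x5^2 + 144 * x1 * x4 * x5^2 * x6 + 20632 * x1 * x4^2 + 4594 * x1 * x4^2 * x7 + 127 * x1 * x4^2 * x7^2 + 4594 * x1 * x4^2 * x6 + 502 * x1 * x4^2 * x6 * x7 + 127 * x1 * x4^2 * x6^2 + 12384 * x1 * x4^2 * x5 + 559 * x1 * x4^2 * x5 * x7 + 1089 * x1 * x4^2 * x5 * x6 + 334 * x1 * x4^2 * x5^2 + 6122 * x1 * x4^3 + 743 * x1 * x4^3 * x7 + 743 * x1 * x4^3 * x6 + 2192 * x1 * x4^3 * x5 + 650 * x1 * x4^4 + 40370 * x1 * x3 + 10991 * x1 * x3 * x7 + 571 * x1 * x3 * x7^2 + 13227 * x1 * x3 * x6 + 2798 * x1 * x3 * x6 * x7 + 99 * x1 * x3 * x6 * x7^2 + 825 * x1 * x3 * x6^2 + 118 * x1 * x3 * x6^2 * x7 + x1 * x3 * x6^2 * x7^2 + 23497 * x1 * x3 * x5 + 2150 * x1 * x3 * x5 * x7 + 4854 *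 x1 * x3 * x5 * x6 + 319 * x1 * x3 * x5 * x6 * x7 + 181 * x1 * x3 * x5 * x6^2 + 3 * x1 * x3 * x5 * x6^2 * x7 + 1283 * x1 * x3 * x5^2 + 190 * x1 * x3 * x5^2 * x6 + 2 * x1 * x3 * x5^2 * x6^2 + 64071 * x1 * x3 * x4 + 12631 * x1 * x3 * x4 * x7 + 400 * x1 * x3 * x4 * x7^2 + 15000 * x1 * x3 * x4 * x6 + 1854 * x1 * x3 * x4 * x6 * x7 + 23 * x1 * x3 * x4 * x6 * x7^2 + 529 * x1 * x3 * x4 * x6^2 + 23 * x1 * x3 * x4 * x6^2 * x7 + 27403 * x1 * x3 * x4 * x5 + 1453 * x1 * x3 * x4 * x5 * x7 + 3120 * x1 * x3 * x4 * x5 * x6 + 60 * x1 * x3 * x4 * x5 * x6 * x7 + 29 * x1 * x3 * x4 * x5 * x6^2 + 885 * x1 * x3 * x4 * x5^2 + 37 * x1 * x3 * x4 * x5^2 * x6 + 36150 * x1 * x3 * x4^2 + 4391 * x1 * x3 * x4^2 * x7 + 56 * x1 * x3 * x4^2 * x7^2 + 5053 * x1 * x3 * x4^2 * x6 + 226 * x1 * x3 * x4^2 * x6 * x7 + 57 * x1 * x3 * x4^2 * x6^2 + 9104 * x1 * x3 * x4^2 * x5 + 158 * x1 * x3 * x4^2 * x5 * x7 + 298 * x1 * x3 * x4^2 * x5 * x6 + 100 * x1 * x3 * x4^2 * x5^2 + 8464 * x1 * x3 * x4^3 + 420 * x1 * x3 * x4^3 * x7 + 441 * x1 * x3 * x4^3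 * x6 + 634 * x1 * x3 * x4^3 * x5 + 682 * x1 * x3 * x4^4 + 41063 * x1 * x3^2 + 7597 * x1 * x3^2 * x7 + 252 * x1 * x3^2 * x7^2 + 10296 * x1 * x3^2 * x6 + 1349 * x1 * x3^2 * x6 * x7 + 25 * x1 * x3^2 * x6 * x7^2 + 434 * x1 * x3^2 * x6^2 + 28 * x1 * x3^2 * x6^2 * x7 + 14577 * x1 * x3^2 * x5 + 839 * x1 * x3^2 * x5 * x7 + 2014 * x1 * x3^2 * x5 * x6 + 62 * x1 * x3^2 * x5 * x6 * x7 + 34 * x1 * x3^2 * x5 * x6^2 + 515 * x1 * x3^2 * x5^2 + 37 * x1 * x3^2 * x5^2 * x6 + 51721 * x1 * x3^2 * x4 + 6317 * x1 * x3^2 * x4 * x7 + 111 * x1 * x3^2 * x4 * x7^2 + 8112 * x1 * x3^2 * x4 * x6 + 510 * x1 * x3^2 * x4 * x6 * x7 + 2 * x1 * x3^2 * x4 * x6 * x7^2 + 143 * x1 * x3^2 * x4 * x6^2 + 2 * x1 * x3^2 * x4 * x6^2 * x7 + 11287 * x1 * x3^2 * x4 * x5 + 303 * x1 * x3^2 * x4 * x5 * x7 + 645 * x1 * x3^2 * x4 * x5 * x6 + 4 * x1 * x3^2 * x4 * x5 * x6 * x7 + 2 * x1 * x3^2 * x4 * x5 * x6^2 + 188 * x1 * x3^2 * x4 * x5^2 + 2 * x1 * x3^2 * x4 * x5^2 * x6 + 21559 * x1 * x3^2 * x4^2 + 1362 * x1 * x3^2 * x4^2 * x7 + 6 * x1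 * x3^2 * x4^2 * x7^2 + 1577 * x1 * x3^2 * x4^2 * x6 + 24 * x1 * x3^2 * x4^2 * x6 * x7 + 6 * x1 * x3^2 * x4^2 * x6^2 + 1961 * x1 * x3^2 * x4^2 * x5 + 13 * x1 * x3^2 * x4^2 * x5 * x7 + 25 * x1 * x3^2 * x4^2 * x5 * x6 + 7 * x1 * x3^2 * x4^2 * x5^2 + 3209 * x1 * x3^2 * x4^3 + 51 * x1 * x3^2 * x4^3 * x7 + 53 * x1 * x3^2 * x4^3 * x6 + 58 * x1 * x3^2 * x4^3 * x5 + 95 * x1 * x3^2 * x4^4 + 21505 * x1 * x3^3 + 2618 * x1 * x3^3 * x7 + 52 * x1 * x3^3 * x7^2 + 3740 * x1 * x3^3 * x6 + 274 * x1 * x3^3 * x6 * x7 + 2 * x1 * x3^3 * x6 * x7^2 + 86 * x1 * x3^3 * x6^2 + 2 * x1 * x3^3 * x6^2 * x7 + 4330 * x1 * x3^3 * x5 + 140 * x1 * x3^3 * x5 * x7 + 337 * x1 * x3^3 * x5 * x6 + 4 * x1 * x3^3 * x5 * x6 * x7 + 2 * x1 * x3^3 * x5 * x6^2 + 86 * x1 * x3^3 * x5^2 + 2 * x1 * x3^3 * x5^2 * x6 + 19860 * x1 * x3^3 * x4 + 1386 * x1 * x3^3 * x4 * x7 + 10 * x1 * x3^3 * x4 * x7^2 + 1776 * x1 * x3^3 * x4 * x6 + 44 * x1 * x3^3 * x4 * x6 * x7 + 12 * x1 * x3^3 * x4 * x6^2 + 1945 * x1 * x3^3 * x4 * x5 +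 22 * x1 * x3^3 * x4 * x5 * x7 + 46 * x1 * x3^3 * x4 * x5 * x6 + 12 * x1 * x3^3 * x4 * x5^2 + 5255 * x1 * x3^3 * x4^2 + 130 * x1 * x3^3 * x4^2 * x7 + 148 * x1 * x3^3 * x4^2 * x6 + 150 * x1 * x3^3 * x4^2 * x5 + 334 * x1 * x3^3 * x4^3 + 6145 * x1 * x3^4 + 449 * x1 * x3^4 * x7 + 4 * x1 * x3^4 * x7^2 + 640 * x1 * x3^4 * x6 + 20 * x1 * x3^4 * x6 * x7 + 6 * x1 * x3^4 * x6^2 + 623 * x1 * x3^4 * x5 + 9 * x1 * x3^4 * x5 * x7 + 21 * x1 * x3^4 * x5 * x6 + 5 * x1 * x3^4 * x5^2 + 3637 * x1 * x3^4 * x4 + 109 * x1 * x3^4 * x4 * x7 + 137 * x1 * x3^4 * x4 * x6 + 128 * x1 * x3^4 * x4 * x5 + 437 * x1 * x3^4 * x4^2 + 909 * x1 * x3^5 + 30 * x1 * x3^5 * x7 + 42 * x1 * x3^5 * x6 + 36 * x1 * x3^5 * x5 + 252 * x1 * x3^5 * x4 + 54 * x1 * x3^6 + 50844 * x1 * x2 + 14857 * x1 * x2 * x7 + 889 * x1 * x2 * x7^2 + 14857 * x1 * x2 * x6 + 3560 * x1 * x2 * x6 * x7 + 155 * x1 * x2 * x6 * x7^2 + 889 * x1 * x2 * x6^2 + 155 * x1 * x2 * x6^2 * x7 + 2 * x1 * x2 * x6^2 * x7^2 + 26339 * x1 * x2 * x5 + 2746 * x1 * x2 * x5 * x7 + 5563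 * x1 * x2 * x5 * x6 + 442 * x1 * x2 * x5 * x6 * x7 + 222 * x1 * x2 * x5 * x6^2 + 6 * x1 * x2 * x5 * x6^2 * x7 + 1393 * x1 * x2 * x5^2 + 219 * x1 * x2 * x5^2 * x6 + 3 * x1 * x2 * x5^2 * x6^2 + 86878 * x1 * x2 * x4 + 18443 * x1 * x2 * x4 * x7 + 675 * x1 * x2 * x4 * x7^2 + 18443 * x1 * x2 * x4 * x6 + 2704 * x1 * x2 * x4 * x6 * x7 + 46 * x1 * x2 * x4 * x6 * x7^2 + 675 * x1 * x2 * x4 * x6^2 + 46 * x1 * x2 * x4 * x6^2 * x7 + 33197 * x1 * x2 * x4 * x5 + 2070 * x1 * x2 * x4 * x5 * x7 + 4154 * x1 * x2 * x4 * x5 * x6 + 120 * x1 * x2 * x4 * x5 * x6 * x7 + 60 * x1 * x2 * x4 * x5 * x6^2 + 1017 * x1 * x2 * x4 * x5^2 + 53 * x1 * x2 * x4 * x5^2 * x6 + 53934 * x1 * x2 * x4^2 + 7215 * x1 * x2 * x4^2 * x7 + 113 * x1 * x2 * x4^2 * x7^2 + 7215 * x1 * x2 * x4^2 * x6 + 452 * x1 * x2 * x4^2 * x6 * x7 + 113 * x1 * x2 * x4^2 * x6^2 + 12826 * x1 * x2 * x4^2 * x5 + 317 * x1 * x2 * x4^2 * x5 * x7 + 638 * x1 * x2 * x4^2 * x5 * x6 + 139 * x1 * x2 * x4^2 * x5^2 + 14328 * x1 * x2 * x4^3 + 861 * x1 * x2 * x4^3 * x7 + 861 * x1 * x2 *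 x4^3 * x6 + 1401 * x1 * x2 * x4^3 * x5 + 1364 * x1 * x2 * x4^4 + 102043 * x1 * x2 * x3 + 20441 * x1 * x2 * x3 * x7 + 757 * x1 * x2 * x3 * x7^2 + 23470 * x1 * x2 * x3 * x6 + 3500 * x1 * x2 * x3 * x6 * x7 + 76 * x1 * x2 * x3 * x6 * x7^2 + 992 * x1 * x2 * x3 * x6^2 + 82 * x1 * x2 * x3 * x6^2 * x7 + 33640 * x1 * x2 * x3 * x5 + 2207 * x1 * x2 * x3 * x5 * x7 + 4877 * x1 * x2 * x3 * x5 * x6 + 186 * x1 * x2 * x3 * x5 * x6 * x7 + 99 * x1 * x2 * x3 * x5 * x6^2 + 1136 * x1 * x2 * x3 * x5^2 + 91 * x1 * x2 * x3 * x5^2 * x6 + 136044 * x1 * x2 * x3 * x4 + 17967 * x1 * x2 * x3 * x4 * x7 + 343 * x1 * x2 * x3 * x4 * x7^2 + 20233 * x1 * x2 * x3 * x4 * x6 + 1496 * x1 * x2 * x3 * x4 * x6 * x7 + 6 * x1 * x2 * x3 * x4 * x6 * x7^2 + 405 * x1 * x2 * x3 * x4 * x6^2 + 6 * x1 * x2 * x3 * x4 * x6^2 * x7 + 28614 * x1 * x2 * x3 * x4 * x5 + 908 * x1 * x2 * x3 * x4 * x5 * x7 + 1910 * x1 * x2 * x3 * x4 * x5 * x6 + 12 * x1 * x2 * x3 * x4 * x5 * x6 * x7 + 6 * x1 * x2 * x3 * x4 * x5 * x6^2 + 451 * x1 * x2 * x3 * x4 * x5^2 + 6 * x1 * x2 *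 x3 * x4 * x5^2 * x6 + 60536 * x1 * x2 * x3 * x4^2 + 4148 * x1 * x2 * x3 * x4^2 * x7 + 18 * x1 * x2 * x3 * x4^2 * x7^2 + 4515 * x1 * x2 * x3 * x4^2 * x6 + 72 * x1 * x2 * x3 * x4^2 * x6 * x7 + 18 * x1 * x2 * x3 * x4^2 * x6^2 + 5974 * x1 * x2 * x3 * x4^2 * x5 + 39 * x1 * x2 * x3 * x4^2 * x5 * x7 + 75 * x1 * x2 * x3 * x4^2 * x5 * x6 + 20 * x1 * x2 * x3 * x4^2 * x5^2 + 9644 * x1 * x2 * x3 * x4^3 + 155 * x1 * x2 * x3 * x4^3 * x7 + 159 * x1 * x2 * x3 * x4^3 * x6 + 178 * x1 * x2 * x3 * x4^3 * x5 + 290 * x1 * x2 * x3 * x4^4 + 78962 * x1 * x2 * x3^2 + 10311 * x1 * x2 * x3^2 * x7 + 216 * x1 * x2 * x3^2 * x7^2 + 12938 * x1 * x2 * x3^2 * x6 + 1056 * x1 * x2 * x3^2 * x6 * x7 + 8 * x1 * x2 * x3^2 * x6 * x7^2 + 315 * x1 * x2 * x3^2 * x6^2 + 8 * x1 * x2 * x3^2 * x6^2 * x7 + 15365 * x1 * x2 * x3^2 * x5 + 556 * x1 * x2 * x3^2 * x5 * x7 + 1279 * x1 * x2 * x3^2 * x5 * x6 + 16 * x1 * x2 * x3^2 * x5 * x6 * x7 + 8 * x1 * x2 * x3^2 * x5 * x6^2 + 290 * x1 * x2 * x3^2 * x5^2 + 8 * x1 * x2 * x3^2 * x5^2 * x6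 + 75926 * x1 * x2 * x3^2 * x4 + 5591 * x1 * x2 * x3^2 * x4 * x7 + 40 * x1 * x2 * x3^2 * x4 * x7^2 + 6642 * x1 * x2 * x3^2 * x4 * x6 + 172 * x1 * x2 * x3^2 * x4 * x6 * x7 + 46 * x1 * x2 * x3^2 * x4 * x6^2 + 7588 * x1 * x2 * x3^2 * x4 * x5 + 87 * x1 * x2 * x3^2 * x4 * x5 * x7 + 179 * x1 * x2 * x3^2 * x4 * x5 * x6 + 45 * x1 * x2 * x3^2 * x4 * x5^2 + 20834 * x1 * x2 * x3^2 * x4^2 + 519 * x1 * x2 * x3^2 * x4^2 * x7 + 569 * x1 * x2 * x3^2 * x4^2 * x6 + 594 * x1 * x2 * x3^2 * x4^2 * x5 + 1327 * x1 * x2 * x3^2 * x4^3 + 29497 * x1 * x2 * x3^3 + 2257 * x1 * x2 * x3^3 * x7 + 20 * x1 * x2 * x3^3 * x7^2 + 2943 * x1 * x2 * x3^3 * x6 + 96 * x1 * x2 * x3^3 * x6 * x7 + 28 * x1 * x2 * x3^3 * x6^2 + 2970 * x1 * x2 * x3^3 * x5 + 44 * x1 * x2 * x3^3 * x5 * x7 + 100 * x1 * x2 * x3^3 * x5 * x6 + 23 * x1 * x2 * x3^3 * x5^2 + 17844 * x1 * x2 * x3^3 * x4 + 540 * x1 * x2 * x3^3 * x4 * x7 + 642 * x1 * x2 * x3^3 * x4 * x6 + 620 * x1 * x2 * x3^3 * x4 * x5 + 2141 * x1 * x2 * x3^3 * x4^2 + 5312 * x1 * x2 * x3^4 + 178 *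 x1 * x2 * x3^4 * x7 + 232 * x1 * x2 * x3^4 * x6 + 206 * x1 * x2 * x3^4 * x5 + 1470 * x1 * x2 * x3^4 * x4 + 366 * x1 * x2 * x3^5 + 58604 * x1 * x2^2 + 12734 * x1 * x2^2 * x7 + 537 * x1 * x2^2 * x7^2 + 12734 * x1 * x2^2 * x6 + 2148 * x1 * x2^2 * x6 * x7 + 56 * x1 * x2^2 * x6 * x7^2 + 537 * x1 * x2^2 * x6^2 + 56 * x1 * x2^2 * x6^2 * x7 + 18707 * x1 * x2^2 * x5 + 1400 * x1 * x2^2 * x5 * x7 + 2822 * x1 * x2^2 * x5 * x6 + 132 * x1 * x2^2 * x5 * x6 * x7 + 66 * x1 * x2^2 * x5 * x6^2 + 621 * x1 * x2^2 * x5^2 + 54 * x1 * x2^2 * x5^2 * x6 + 82110 * x1 * x2^2 * x4 + 11885 * x1 * x2^2 * x4 * x7 + 261 * x1 * x2^2 * x4 * x7^2 + 11885 * x1 * x2^2 * x4 * x6 + 1044 * x1 * x2^2 * x4 * x6 * x7 + 6 * x1 * x2^2 * x4 * x6 * x7^2 + 261 * x1 * x2^2 * x4 * x6^2 + 6 * x1 * x2^2 * x4 * x6^2 * x7 + 17226 * x1 * x2^2 * x4 * x5 + 648 * x1 * x2^2 * x4 * x5 * x7 + 1304 * x1 * x2^2 * x4 * x5 * x6 + 12 * x1 * x2^2 * x4 * x5 * x6 * x7 + 6 * x1 * x2^2 * x4 * x5 * x6^2 + 263 * x1 * x2^2 * x4 * x5^2 + 4 * x1 * x2^2 * x4 * x5^2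 * x6 + 39044 * x1 * x2^2 * x4^2 + 3040 * x1 * x2^2 * x4^2 * x7 + 18 * x1 * x2^2 * x4^2 * x7^2 + 3040 * x1 * x2^2 * x4^2 * x6 + 72 * x1 * x2^2 * x4^2 * x6 * x7 + 18 * x1 * x2^2 * x4^2 * x6^2 + 4199 * x1 * x2^2 * x4^2 * x5 + 39 * x1 * x2^2 * x4^2 * x5 * x7 + 79 * x1 * x2^2 * x4^2 * x5 * x6 + 13 * x1 * x2^2 * x4^2 * x5^2 + 6916 * x1 * x2^2 * x4^3 + 157 * x1 * x2^2 * x4^3 * x7 + 157 * x1 * x2^2 * x4^3 * x6 + 193 * x1 * x2^2 * x4^3 * x5 + 290 * x1 * x2^2 * x4^4 + 90825 * x1 * x2^2 * x3 + 12874 * x1 * x2^2 * x3 * x7 + 299 * x1 * x2^2 * x3 * x7^2 + 14368 * x1 * x2^2 * x3 * x6 + 1332 * x1 * x2^2 * x3 * x6 * x7 + 12 * x1 * x2^2 * x3 * x6 * x7^2 + 367 * x1 * x2^2 * x3 * x6^2 + 12 * x1 * x2^2 * x3 * x6^2 * x7 + 17573 * x1 * x2^2 * x3 * x5 + 724 * x1 * x2^2 * x3 * x5 * x7 + 1566 * x1 * x2^2 * x3 * x5 * x6 + 24 * x1 * x2^2 * x3 * x5 * x6 * x7 + 12 * x1 * x2^2 * x3 * x5 * x6^2 + 322 * x1 * x2^2 * x3 * x5^2 + 10 * x1 * x2^2 * x3 * x5^2 * x6 + 91508 * x1 * x2^2 * x3 * x4 + 7384 * x1 * x2^2 * x3 *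 x4 * x7 + 60 * x1 * x2^2 * x3 * x4 * x7^2 + 8068 * x1 * x2^2 * x3 * x4 * x6 + 252 * x1 * x2^2 * x3 * x4 * x6 * x7 + 66 * x1 * x2^2 * x3 * x4 * x6^2 + 9548 * x1 * x2^2 * x3 * x4 * x5 + 129 * x1 * x2^2 * x3 * x4 * x5 * x7 + 265 * x1 * x2^2 * x3 * x4 * x5 * x6 + 54 * x1 * x2^2 * x3 * x4 * x5^2 + 26829 * x1 * x2^2 * x3 * x4^2 + 773 * x1 * x2^2 * x3 * x4^2 * x7 + 817 * x1 * x2^2 * x3 * x4^2 * x6 + 893 * x1 * x2^2 * x3 * x4^2 * x5 + 1957 * x1 * x2^2 * x3 * x4^3 + 50874 * x1 * x2^2 * x3^2 + 4192 * x1 * x2^2 * x3^2 * x7 + 40 * x1 * x2^2 * x3^2 * x7^2 + 5008 * x1 * x2^2 * x3^2 * x6 + 184 * x1 * x2^2 * x3^2 * x6 * x7 + 52 * x1 * x2^2 * x3^2 * x6^2 + 5215 * x1 * x2^2 * x3^2 * x5 + 86 * x1 * x2^2 * x3^2 * x5 * x7 + 190 * x1 * x2^2 * x3^2 * x5 * x6 + 39 * x1 * x2^2 * x3^2 * x5^2 + 32171 * x1 * x2^2 * x3^2 * x4 + 1060 * x1 * x2^2 * x3^2 * x4 * x7 + 1200 * x1 * x2^2 * x3^2 * x4 * x6 + 1195 * x1 * x2^2 * x3^2 * x4 * x5 + 4146 * x1 * x2^2 * x3^2 * x4^2 + 12175 * x1 * x2^2 * x3^3 + 434 * x1 * x2^2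 * x3^3 * x7 + 532 * x1 * x2^2 * x3^3 * x6 + 485 * x1 * x2^2 * x3^3 * x5 + 3517 * x1 * x2^2 * x3^3 * x4 + 1042 * x1 * x2^2 * x3^4 + 33180 * x1 * x2^3 + 5119 * x1 * x2^3 * x7 + 135 * x1 * x2^3 * x7^2 + 5119 * x1 * x2^3 * x6 + 540 * x1 * x2^3 * x6 * x7 + 6 * x1 * x2^3 * x6 * x7^2 + 135 * x1 * x2^3 * x6^2 + 6 * x1 * x2^3 * x6^2 * x7 + 6486 * x1 * x2^3 * x5 + 306 * x1 * x2^3 * x5 * x7 + 614 * x1 * x2^3 * x5 * x6 + 12 * x1 * x2^3 * x5 * x6 * x7 + 6 * x1 * x2^3 * x5 * x6^2 + 118 * x1 * x2^3 * x5^2 + 4 * x1 * x2^3 * x5^2 * x6 + 34976 * x1 * x2^3 * x4 + 3124 * x1 * x2^3 * x4 * x7 + 30 * x1 * x2^3 * x4 * x7^2 + 3124 * x1 * x2^3 * x4 * x6 + 120 * x1 * x2^3 * x4 * x6 * x7 + 30 * x1 * x2^3 * x4 * x6^2 + 3838 * x1 * x2^3 * x4 * x5 + 63 * x1 * x2^3 * x4 * x5 * x7 + 127 * x1 * x2^3 * x4 * x5 * x6 + 21 * x1 * x2^3 * x4 * x5^2 + 10970 * x1 * x2^3 * x4^2 + 373 * x1 * x2^3 * x4^2 * x7 + 373 * x1 * x2^3 * x4^2 * x6 + 429 * x1 * x2^3 * x4^2 * x5 + 918 * x1 * x2^3 * x4^3 + 37496 * x1 * x2^3 * x3 + 3364 *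 x1 * x2^3 * x3 * x7 + 36 * x1 * x2^3 * x3 * x7^2 + 3680 * x1 * x2^3 * x3 * x6 + 156 * x1 * x2^3 * x3 * x6 * x7 + 42 * x1 * x2^3 * x3 * x6^2 + 3962 * x1 * x2^3 * x3 * x5 + 75 * x1 * x2^3 * x3 * x5 * x7 + 159 * x1 * x2^3 * x3 * x5 * x6 + 29 * x1 * x2^3 * x3 * x5^2 + 24906 * x1 * x2^3 * x3 * x4 + 917 * x1 * x2^3 * x3 * x4 * x7 + 981 * x1 * x2^3 * x3 * x4 * x6 + 1010 * x1 * x2^3 * x3 * x4 * x5 + 3497 * x1 * x2^3 * x3 * x4^2 + 13572 * x1 * x2^3 * x3^2 + 526 * x1 * x2^3 * x3^2 * x7 + 606 * x1 * x2^3 * x3^2 * x6 + 567 * x1 * x2^3 * x3^2 * x5 + 4151 * x1 * x2^3 * x3^2 * x4 + 1562 * x1 * x2^3 * x3^3 + 10004 * x1 * x2^4 + 980 * x1 * x2^4 * x7 + 12 * x1 * x2^4 * x7^2 + 980 * x1 * x2^4 * x6 + 48 * x1 * x2^4 * x6 * x7 + 12 * x1 * x2^4 * x6^2 + 1096 * x1 * x2^4 * x5 + 24 * x1 * x2^4 * x5 * x7 + 48 * x1 * x2^4 * x5 * x6 + 8 * x1 * x2^4 * x5^2 + 6968 * x1 * x2^4 * x4 + 288 * x1 * x2^4 * x4 * x7 + 288 * x1 * x2^4 * x4 * x6 + 308 * x1 * x2^4 * x4 * x5 + 1060 * x1 * x2^4 * x4^2 + 7344 * x1 * x2^4 * x3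 + 312 * x1 * x2^4 * x3 * x7 + 336 * x1 * x2^4 * x3 * x6 + 324 * x1 * x2^4 * x3 * x5 + 2380 * x1 * x2^4 * x3 * x4 + 1288 * x1 * x2^4 * x3^2 + 1544 * x1 * x2^5 + 72 * x1 * x2^5 * x7 + 72 * x1 * x2^5 * x6 + 72 * x1 * x2^5 * x5 + 528 * x1 * x2^5 * x4 + 552 * x1 * x2^5 * x3 + 96 * x1 * x2^6 + 12360 * x1^2 + 3250 * x1^2 * x7 + 154 * x1^2 * x7^2 + 3250 * x1^2 * x6 + 617 * x1^2 * x6 * x7 + 15 * x1^2 * x6 * x7^2 + 154 * x1^2 * x6^2 + 15 * x1^2 * x6^2 * x7 + 7534 * x1^2 * x5 + 676 * x1^2 * x5 * x7 + 1361 * x1^2 * x5 * x6 + 82 * x1^2 * x5 * x6 * x7 + 41 * x1^2 * x5 * x6^2 + x1^2 * x5 * x6^2 * x7 + 434 * x1^2 * x5^2 + 59 * x1^2 * x5^2 * x6 + x1^2 * x5^2 * x6^2 + 23520 * x1^2 * x4 + 4713 * x1^2 * x4 * x7 + 147 * x1^2 * x4 * x7^2 + 4713 * x1^2 * x4 * x6 + 588 * x1^2 * x4 * x6 * x7 + 7 * x1^2 * x4 * x6 * x7^2 + 147 * x1^2 * x4 * x6^2 + 7 * x1^2 * x4 * x6^2 * x7 + 11679 * x1^2 * x4 * x5 + 692 * x1^2 * x4 * x5 * x7 + 1370 * x1^2 * x4 * x5 * x6 + 41 * x1^2 * x4 * x5 * x6 * x7 + 20 * x1^2 * x4 * x5 *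 x6^2 + 453 * x1^2 * x4 * x5^2 + 30 * x1^2 * x4 * x5^2 * x6 + 16534 * x1^2 * x4^2 + 2258 * x1^2 * x4^2 * x7 + 35 * x1^2 * x4^2 * x7^2 + 2258 * x1^2 * x4^2 * x6 + 139 * x1^2 * x4^2 * x6 * x7 + 35 * x1^2 * x4^2 * x6^2 + 6018 * x1^2 * x4^2 * x5 + 177 * x1^2 * x4^2 * x5 * x7 + 344 * x1^2 * x4^2 * x5 * x6 + 118 * x1^2 * x4^2 * x5^2 + 5072 * x1^2 * x4^3 + 357 * x1^2 * x4^3 * x7 + 357 * x1^2 * x4^3 * x6 + 1031 * x1^2 * x4^3 * x5 + 570 * x1^2 * x4^4 + 30554 * x1^2 * x3 + 5780 * x1^2 * x3 * x7 + 186 * x1^2 * x3 * x7^2 + 6517 * x1^2 * x3 * x6 + 830 * x1^2 * x3 * x6 * x7 + 11 * x1^2 * x3 * x6 * x7^2 + 229 * x1^2 * x3 * x6^2 + 12 * x1^2 * x3 * x6^2 * x7 + 12334 * x1^2 * x3 * x5 + 756 * x1^2 * x3 * x5 * x7 + 1618 * x1^2 * x3 * x5 * x6 + 51 * x1^2 * x3 * x5 * x6 * x7 + 27 * x1^2 * x3 * x5 * x6^2 + 486 * x1^2 * x3 * x5^2 + 36 * x1^2 * x3 * x5^2 * x6 + 47907 * x1^2 * x3 * x4 + 6384 * x1^2 * x3 * x4 * x7 + 118 * x1^2 * x3 * x4 * x7^2 + 7122 * x1^2 * x3 * x4 * x6 + 513 * x1^2 * x3 * x4 * x6 * x7 + 2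 * x1^2 * x3 * x4 * x6 * x7^2 + 139 * x1^2 * x3 * x4 * x6^2 + 2 * x1^2 * x3 * x4 * x6^2 * x7 + 13760 * x1^2 * x3 * x4 * x5 + 464 * x1^2 * x3 * x4 * x5 * x7 + 966 * x1^2 * x3 * x4 * x5 * x6 + 6 * x1^2 * x3 * x4 * x5 * x6 * x7 + 3 * x1^2 * x3 * x4 * x5 * x6^2 + 302 * x1^2 * x3 * x4 * x5^2 + 4 * x1^2 * x3 * x4 * x5^2 * x6 + 26597 * x1^2 * x3 * x4^2 + 2109 * x1^2 * x3 * x4^2 * x7 + 14 * x1^2 * x3 * x4^2 * x7^2 + 2297 * x1^2 * x3 * x4^2 * x6 + 56 * x1^2 * x3 * x4^2 * x6 * x7 + 14 * x1^2 * x3 * x4^2 * x6^2 + 4320 * x1^2 * x3 * x4^2 * x5 + 39 * x1^2 * x3 * x4^2 * x5 * x7 + 76 * x1^2 * x3 * x4^2 * x5 * x6 + 25 * x1^2 * x3 * x4^2 * x5^2 + 6036 * x1^2 * x3 * x4^3 + 185 * x1^2 * x3 * x4^3 * x7 + 187 * x1^2 * x3 * x4^3 * x6 + 264 * x1^2 * x3 * x4^3 * x5 + 448 * x1^2 * x3 * x4^4 + 30487 * x1^2 * x3^2 + 4031 * x1^2 * x3^2 * x7 + 83 * x1^2 * x3^2 * x7^2 + 4894 * x1^2 * x3^2 * x6 + 384 * x1^2 * x3^2 * x6 * x7 + 2 * x1^2 * x3^2 * x6 * x7^2 + 110 * x1^2 * x3^2 * x6^2 + 2 * x1^2 * x3^2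 * x6^2 * x7 + 7619 * x1^2 * x3^2 * x5 + 284 * x1^2 * x3^2 * x5 * x7 + 628 * x1^2 * x3^2 * x5 * x6 + 6 * x1^2 * x3^2 * x5 * x6 * x7 + 3 * x1^2 * x3^2 * x5 * x6^2 + 181 * x1^2 * x3^2 * x5^2 + 4 * x1^2 * x3^2 * x5^2 * x6 + 37347 * x1^2 * x3^2 * x4 + 3142 * x1^2 * x3^2 * x4 * x7 + 30 * x1^2 * x3^2 * x4 * x7^2 + 3658 * x1^2 * x3^2 * x4 * x6 + 126 * x1^2 * x3^2 * x4 * x6 * x7 + 33 * x1^2 * x3^2 * x4 * x6^2 + 5494 * x1^2 * x3^2 * x4 * x5 + 80 * x1^2 * x3^2 * x4 * x5 * x7 + 164 * x1^2 * x3^2 * x4 * x5 * x6 + 50 * x1^2 * x3^2 * x4 * x5^2 + 14956 * x1^2 * x3^2 * x4^2 + 613 * x1^2 * x3^2 * x4^2 * x7 + x1^2 * x3^2 * x4^2 * x7^2 + 657 * x1^2 * x3^2 * x4^2 * x6 + 4 * x1^2 * x3^2 * x4^2 * x6 * x7 + x1^2 * x3^2 * x4^2 * x6^2 + 835 * x1^2 * x3^2 * x4^2 * x5 + 2 * x1^2 * x3^2 * x4^2 * x5 * x7 + 4 * x1^2 * x3^2 * x4^2 * x5 * x6 + x1^2 * x3^2 * x4^2 * x5^2 + 2077 * x1^2 * x3^2 * x4^3 + 18 * x1^2 * x3^2 * x4^3 * x7 + 18 * x1^2 * x3^2 * x4^3 * x6 + 19 * x1^2 * x3^2 * x4^3 *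 x5 + 52 * x1^2 * x3^2 * x4^4 + 15714 * x1^2 * x3^3 + 1375 * x1^2 * x3^3 * x7 + 16 * x1^2 * x3^3 * x7^2 + 1706 * x1^2 * x3^3 * x6 + 70 * x1^2 * x3^3 * x6 * x7 + 19 * x1^2 * x3^3 * x6^2 + 2192 * x1^2 * x3^3 * x5 + 41 * x1^2 * x3^3 * x5 * x7 + 88 * x1^2 * x3^3 * x5 * x6 + 25 * x1^2 * x3^3 * x5^2 + 13888 * x1^2 * x3^3 * x4 + 655 * x1^2 * x3^3 * x4 * x7 + 2 * x1^2 * x3^3 * x4 * x7^2 + 743 * x1^2 * x3^3 * x4 * x6 + 8 * x1^2 * x3^3 * x4 * x6 * x7 + 2 * x1^2 * x3^3 * x4 * x6^2 + 863 * x1^2 * x3^3 * x4 * x5 + 4 * x1^2 * x3^3 * x4 * x5 * x7 + 8 * x1^2 * x3^3 * x4 * x5 * x6 + 2 * x1^2 * x3^3 * x4 * x5^2 + 3438 * x1^2 * x3^3 * x4^2 + 50 * x1^2 * x3^3 * x4^2 * x7 + 52 * x1^2 * x3^3 * x4^2 * x6 + 53 * x1^2 * x3^3 * x4^2 * x5 + 191 * x1^2 * x3^3 * x4^3 + 4404 * x1^2 * x3^4 + 227 * x1^2 * x3^4 * x7 + x1^2 * x3^4 * x7^2 + 273 * x1^2 * x3^4 * x6 + 4 * x1^2 * x3^4 * x6 * x7 + x1^2 * x3^4 * x6^2 + 292 * x1^2 * x3^4 * x5 + 2 * x1^2 * x3^4 * x5 * x7 + 4 * x1^2 * x3^4 *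 x5 * x6 + x1^2 * x3^4 * x5^2 + 2442 * x1^2 * x3^4 * x4 + 46 * x1^2 * x3^4 * x4 * x7 + 50 * x1^2 * x3^4 * x4 * x6 + 49 * x1^2 * x3^4 * x4 * x5 + 262 * x1^2 * x3^4 * x4^2 + 633 * x1^2 * x3^5 + 14 * x1^2 * x3^5 * x7 + 16 * x1^2 * x3^5 * x6 + 15 * x1^2 * x3^5 * x5 + 159 * x1^2 * x3^5 * x4 + 36 * x1^2 * x3^6 + 37588 * x1^2 * x2 + 7584 * x1^2 * x2 * x7 + 268 * x1^2 * x2 * x7^2 + 7584 * x1^2 * x2 * x6 + 1072 * x1^2 * x2 * x6 * x7 + 16 * x1^2 * x2 * x6 * x7^2 + 268 * x1^2 * x2 * x6^2 + 16 * x1^2 * x2 * x6^2 * x7 + 13820 * x1^2 * x2 * x5 + 924 * x1^2 * x2 * x5 * x7 + 1856 * x1^2 * x2 * x5 * x6 + 64 * x1^2 * x2 * x5 * x6 * x7 + 32 * x1^2 * x2 * x5 * x6^2 + 524 * x1^2 * x2 * x5^2 + 40 * x1^2 * x2 * x5^2 * x6 + 62746 * x1^2 * x2 * x4 + 8990 * x1^2 * x2 * x4 * x7 + 187 * x1^2 * x2 * x4 * x7^2 + 8990 * x1^2 * x2 * x4 * x6 + 748 * x1^2 * x2 * x4 * x6 * x7 + 4 * x1^2 * x2 * x4 * x6 * x7^2 + 187 * x1^2 * x2 * x4 * x6^2 + 4 * x1^2 * x2 * x4 * x6^2 * x7 + 16425 * x1^2 * x2 * x4 * x5 + 626 * x1^2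 * x2 * x4 * x5 * x7 + 1246 * x1^2 * x2 * x4 * x5 * x6 + 12 * x1^2 * x2 * x4 * x5 * x6 * x7 + 6 * x1^2 * x2 * x4 * x5 * x6^2 + 343 * x1^2 * x2 * x4 * x5^2 + 6 * x1^2 * x2 * x4 * x5^2 * x6 + 37978 * x1^2 * x2 * x4^2 + 3335 * x1^2 * x2 * x4^2 * x7 + 28 * x1^2 * x2 * x4^2 * x7^2 + 3335 * x1^2 * x2 * x4^2 * x6 + 112 * x1^2 * x2 * x4^2 * x6 * x7 + 28 * x1^2 * x2 * x4^2 * x6^2 + 5867 * x1^2 * x2 * x4^2 * x5 + 78 * x1^2 * x2 * x4^2 * x5 * x7 + 156 * x1^2 * x2 * x4^2 * x5 * x6 + 36 * x1^2 * x2 * x4^2 * x5^2 + 9792 * x1^2 * x2 * x4^3 + 372 * x1^2 * x2 * x4^3 * x7 + 372 * x1^2 * x2 * x4^3 * x6 + 557 * x1^2 * x2 * x4^3 * x5 + 896 * x1^2 * x2 * x4^4 + 74302 * x1^2 * x2 * x3 + 10524 * x1^2 * x2 * x3 * x7 + 236 * x1^2 * x2 * x3 * x7^2 + 11512 * x1^2 * x2 * x3 * x6 + 1010 * x1^2 * x2 * x3 * x6 * x7 + 6 * x1^2 * x2 * x3 * x6 * x7^2 + 269 * x1^2 * x2 * x3 * x6^2 + 6 * x1^2 * x2 * x3 * x6^2 * x7 + 17543 * x1^2 * x2 * x3 * x5 + 725 * x1^2 * x2 * x3 * x5 * x7 + 1525 * x1^2 * x2 * x3 * x5 * x6 + 18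 * x1^2 * x2 * x3 * x5 * x6 * x7 + 9 * x1^2 * x2 * x3 * x5 * x6^2 + 401 * x1^2 * x2 * x3 * x5^2 + 10 * x1^2 * x2 * x3 * x5^2 * x6 + 95894 * x1^2 * x2 * x3 * x4 + 8696 * x1^2 * x2 * x3 * x4 * x7 + 91 * x1^2 * x2 * x3 * x4 * x7^2 + 9352 * x1^2 * x2 * x3 * x4 * x6 + 376 * x1^2 * x2 * x3 * x4 * x6 * x7 + 97 * x1^2 * x2 * x3 * x4 * x6^2 + 13767 * x1^2 * x2 * x3 * x4 * x5 + 240 * x1^2 * x2 * x3 * x4 * x5 * x7 + 490 * x1^2 * x2 * x3 * x4 * x5 * x6 + 123 * x1^2 * x2 * x3 * x4 * x5^2 + 41020 * x1^2 * x2 * x3 * x4^2 + 1840 * x1^2 * x2 * x3 * x4^2 * x7 + 3 * x1^2 * x2 * x3 * x4^2 * x7^2 + 1922 * x1^2 * x2 * x3 * x4^2 * x6 + 12 * x1^2 * x2 * x3 * x4^2 * x6 * x7 + 3 * x1^2 * x2 * x3 * x4^2 * x6^2 + 2520 * x1^2 * x2 * x3 * x4^2 * x5 + 6 * x1^2 * x2 * x3 * x4^2 * x5 * x7 + 12 * x1^2 * x2 * x3 * x4^2 * x5 * x6 + 3 * x1^2 * x2 * x3 * x4^2 * x5^2 + 6174 * x1^2 * x2 * x3 * x4^3 + 54 * x1^2 * x2 * x3 * x4^3 * x7 + 54 * x1^2 * x2 * x3 * x4^3 * x6 + 57 * x1^2 * x2 * x3 * x4^3 * x5 + 157 * x1^2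 * x2 * x3 * x4^4 + 56782 * x1^2 * x2 * x3^2 + 5288 * x1^2 * x2 * x3^2 * x7 + 65 * x1^2 * x2 * x3^2 * x7^2 + 6086 * x1^2 * x2 * x3^2 * x6 + 278 * x1^2 * x2 * x3^2 * x6 * x7 + 74 * x1^2 * x2 * x3^2 * x6^2 + 7798 * x1^2 * x2 * x3^2 * x5 + 164 * x1^2 * x2 * x3^2 * x5 * x7 + 346 * x1^2 * x2 * x3^2 * x5 * x6 + 87 * x1^2 * x2 * x3^2 * x5^2 + 52254 * x1^2 * x2 * x3^2 * x4 + 2608 * x1^2 * x2 * x3^2 * x4 * x7 + 8 * x1^2 * x2 * x3^2 * x4 * x7^2 + 2862 * x1^2 * x2 * x3^2 * x4 * x6 + 32 * x1^2 * x2 * x3^2 * x4 * x6 * x7 + 8 * x1^2 * x2 * x3^2 * x4 * x6^2 + 3391 * x1^2 * x2 * x3^2 * x4 * x5 + 16 * x1^2 * x2 * x3^2 * x4 * x5 * x7 + 32 * x1^2 * x2 * x3^2 * x4 * x5 * x6 + 8 * x1^2 * x2 * x3^2 * x4 * x5^2 + 13487 * x1^2 * x2 * x3^2 * x4^2 + 198 * x1^2 * x2 * x3^2 * x4^2 * x7 + 204 * x1^2 * x2 * x3^2 * x4^2 * x6 + 209 * x1^2 * x2 * x3^2 * x4^2 * x5 + 753 * x1^2 * x2 * x3^2 * x4^3 + 20879 * x1^2 * x2 * x3^3 + 1124 * x1^2 * x2 * x3^3 * x7 + 5 * x1^2 * x2 * x3^3 * x7^2 + 1302 * x1^2 * x2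 * x3^3 * x6 + 20 * x1^2 * x2 * x3^3 * x6 * x7 + 5 * x1^2 * x2 * x3^3 * x6^2 + 1413 * x1^2 * x2 * x3^3 * x5 + 10 * x1^2 * x2 * x3^3 * x5 * x7 + 20 * x1^2 * x2 * x3^3 * x5 * x6 + 5 * x1^2 * x2 * x3^3 * x5^2 + 11867 * x1^2 * x2 * x3^3 * x4 + 226 * x1^2 * x2 * x3^3 * x4 * x7 + 242 * x1^2 * x2 * x3^3 * x4 * x6 + 239 * x1^2 * x2 * x3^3 * x4 * x5 + 1274 * x1^2 * x2 * x3^3 * x4^2 + 3663 * x1^2 * x2 * x3^4 + 82 * x1^2 * x2 * x3^4 * x7 + 92 * x1^2 * x2 * x3^4 * x6 + 87 * x1^2 * x2 * x3^4 * x5 + 919 * x1^2 * x2 * x3^4 * x4 + 241 * x1^2 * x2 * x3^5 + 42929 * x1^2 * x2^2 + 6523 * x1^2 * x2^2 * x7 + 159 * x1^2 * x2^2 * x7^2 + 6523 * x1^2 * x2^2 * x6 + 636 * x1^2 * x2^2 * x6 * x7 + 4 * x1^2 * x2^2 * x6 * x7^2 + 159 * x1^2 * x2^2 * x6^2 + 4 * x1^2 * x2^2 * x6^2 * x7 + 9868 * x1^2 * x2^2 * x5 + 449 * x1^2 * x2^2 * x5 * x7 + 900 * x1^2 * x2^2 * x5 * x6 + 12 * x1^2 * x2^2 * x5 * x6 * x7 + 6 * x1^2 * x2^2 * x5 * x6^2 + 220 * x1^2 * x2^2 * x5^2 + 6 * x1^2 * x2^2 * x5^2 * x6 + 57916 *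 x1^2 * x2^2 * x4 + 5689 * x1^2 * x2^2 * x4 * x7 + 66 * x1^2 * x2^2 * x4 * x7^2 + 5689 * x1^2 * x2^2 * x4 * x6 + 264 * x1^2 * x2^2 * x4 * x6 * x7 + 66 * x1^2 * x2^2 * x4 * x6^2 + 8309 * x1^2 * x2^2 * x4 * x5 + 168 * x1^2 * x2^2 * x4 * x5 * x7 + 336 * x1^2 * x2^2 * x4 * x5 * x6 + 73 * x1^2 * x2^2 * x4 * x5^2 + 26332 * x1^2 * x2^2 * x4^2 + 1323 * x1^2 * x2^2 * x4^2 * x7 + 3 * x1^2 * x2^2 * x4^2 * x7^2 + 1323 * x1^2 * x2^2 * x4^2 * x6 + 12 * x1^2 * x2^2 * x4^2 * x6 * x7 + 3 * x1^2 * x2^2 * x4^2 * x6^2 + 1759 * x1^2 * x2^2 * x4^2 * x5 + 6 * x1^2 * x2^2 * x4^2 * x5 * x7 + 12 * x1^2 * x2^2 * x4^2 * x5 * x6 + 2 * x1^2 * x2^2 * x4^2 * x5^2 + 4382 * x1^2 * x2^2 * x4^3 + 54 * x1^2 * x2^2 * x4^3 * x7 + 54 * x1^2 * x2^2 * x4^3 * x6 + 59 * x1^2 * x2^2 * x4^3 * x5 + 157 * x1^2 * x2^2 * x4^4 + 65612 * x1^2 * x2^2 * x3 + 6556 * x1^2 * x2^2 * x3 * x7 + 87 * x1^2 * x2^2 * x3 * x7^2 + 7026 * x1^2 * x2^2 * x3 * x6 + 360 * x1^2 * x2^2 * x3 * x6 * x7 + 93 * x1^2 * x2^2 * x3 *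 x6^2 + 9031 * x1^2 * x2^2 * x3 * x5 + 213 * x1^2 * x2^2 * x3 * x5 * x7 + 438 * x1^2 * x2^2 * x3 * x5 * x6 + 99 * x1^2 * x2^2 * x3 * x5^2 + 63022 * x1^2 * x2^2 * x3 * x4 + 3415 * x1^2 * x2^2 * x3 * x4 * x7 + 12 * x1^2 * x2^2 * x3 * x4 * x7^2 + 3587 * x1^2 * x2^2 * x3 * x4 * x6 + 48 * x1^2 * x2^2 * x3 * x4 * x6 * x7 + 12 * x1^2 * x2^2 * x3 * x4 * x6^2 + 4310 * x1^2 * x2^2 * x3 * x4 * x5 + 24 * x1^2 * x2^2 * x3 * x4 * x5 * x7 + 48 * x1^2 * x2^2 * x3 * x4 * x5 * x6 + 10 * x1^2 * x2^2 * x3 * x4 * x5^2 + 17316 * x1^2 * x2^2 * x3 * x4^2 + 294 * x1^2 * x2^2 * x3 * x4^2 * x7 + 300 * x1^2 * x2^2 * x3 * x4^2 * x6 + 313 * x1^2 * x2^2 * x3 * x4^2 * x5 + 1109 * x1^2 * x2^2 * x3 * x4^3 + 36146 * x1^2 * x2^2 * x3^2 + 2078 * x1^2 * x2^2 * x3^2 * x7 + 10 * x1^2 * x2^2 * x3^2 * x7^2 + 2302 * x1^2 * x2^2 * x3^2 * x6 + 40 * x1^2 * x2^2 * x3^2 * x6 * x7 + 10 * x1^2 * x2^2 * x3^2 * x6^2 + 2530 * x1^2 * x2^2 * x3^2 * x5 + 20 * x1^2 * x2^2 * x3^2 * x5 * x7 + 40 * x1^2 * x2^2 * x3^2 * x5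 * x6 + 9 * x1^2 * x2^2 * x3^2 * x5^2 + 21424 * x1^2 * x2^2 * x3^2 * x4 + 444 * x1^2 * x2^2 * x3^2 * x4 * x7 + 468 * x1^2 * x2^2 * x3^2 * x4 * x6 + 468 * x1^2 * x2^2 * x3^2 * x4 * x5 + 2469 * x1^2 * x2^2 * x3^2 * x4^2 + 8426 * x1^2 * x2^2 * x3^3 + 200 * x1^2 * x2^2 * x3^3 * x7 + 220 * x1^2 * x2^2 * x3^3 * x6 + 210 * x1^2 * x2^2 * x3^3 * x5 + 2204 * x1^2 * x2^2 * x3^3 * x4 + 688 * x1^2 * x2^2 * x3^4 + 24436 * x1^2 * x2^3 + 2631 * x1^2 * x2^3 * x7 + 38 * x1^2 * x2^3 * x7^2 + 2631 * x1^2 * x2^3 * x6 + 152 * x1^2 * x2^3 * x6 * x7 + 38 * x1^2 * x2^3 * x6^2 + 3413 * x1^2 * x2^3 * x5 + 90 * x1^2 * x2^3 * x5 * x7 + 180 * x1^2 * x2^3 * x5 * x6 + 37 * x1^2 * x2^3 * x5^2 + 24460 * x1^2 * x2^3 * x4 + 1452 * x1^2 * x2^3 * x4 * x7 + 6 * x1^2 * x2^3 * x4 * x7^2 + 1452 * x1^2 * x2^3 * x4 * x6 + 24 * x1^2 * x2^3 * x4 * x6 * x7 + 6 * x1^2 * x2^3 * x4 * x6^2 + 1770 * x1^2 * x2^3 * x4 * x5 + 12 * x1^2 * x2^3 * x4 * x5 * x7 + 24 * x1^2 * x2^3 * x4 * x5 * x6 + 4 * x1^2 * x2^3 * x4 *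 x5^2 + 7162 * x1^2 * x2^3 * x4^2 + 144 * x1^2 * x2^3 * x4^2 * x7 + 144 * x1^2 * x2^3 * x4^2 * x6 + 154 * x1^2 * x2^3 * x4^2 * x5 + 530 * x1^2 * x2^3 * x4^3 + 27100 * x1^2 * x2^3 * x3 + 1682 * x1^2 * x2^3 * x3 * x7 + 9 * x1^2 * x2^3 * x3 * x7^2 + 1774 * x1^2 * x2^3 * x3 * x6 + 36 * x1^2 * x2^3 * x3 * x6 * x7 + 9 * x1^2 * x2^3 * x3 * x6^2 + 1977 * x1^2 * x2^3 * x3 * x5 + 18 * x1^2 * x2^3 * x3 * x5 * x7 + 36 * x1^2 * x2^3 * x3 * x5 * x6 + 7 * x1^2 * x2^3 * x3 * x5^2 + 16826 * x1^2 * x2^3 * x3 * x4 + 390 * x1^2 * x2^3 * x3 * x4 * x7 + 402 * x1^2 * x2^3 * x3 * x4 * x6 + 409 * x1^2 * x2^3 * x3 * x4 * x5 + 2117 * x1^2 * x2^3 * x3 * x4^2 + 9546 * x1^2 * x2^3 * x3^2 + 246 * x1^2 * x2^3 * x3^2 * x7 + 264 * x1^2 * x2^3 * x3^2 * x6 + 255 * x1^2 * x2^3 * x3^2 * x5 + 2645 * x1^2 * x2^3 * x3^2 * x4 + 1049 * x1^2 * x2^3 * x3^3 + 7435 * x1^2 * x2^4 + 501 * x1^2 * x2^4 * x7 + 3 * x1^2 * x2^4 * x7^2 + 501 * x1^2 * x2^4 * x6 + 12 * x1^2 * x2^4 * x6 * x7 + 3 * x1^2 * x2^4 * x6^2 +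 568 * x1^2 * x2^4 * x5 + 6 * x1^2 * x2^4 * x5 * x7 + 12 * x1^2 * x2^4 * x5 * x6 + 2 * x1^2 * x2^4 * x5^2 + 4832 * x1^2 * x2^4 * x4 + 126 * x1^2 * x2^4 * x4 * x7 + 126 * x1^2 * x2^4 * x4 * x6 + 131 * x1^2 * x2^4 * x4 * x5 + 661 * x1^2 * x2^4 * x4^2 + 5306 * x1^2 * x2^4 * x3 + 150 * x1^2 * x2^4 * x3 * x7 + 156 * x1^2 * x2^4 * x3 * x6 + 153 * x1^2 * x2^4 * x3 * x5 + 1561 * x1^2 * x2^4 * x3 * x4 + 890 * x1^2 * x2^4 * x3^2 + 1156 * x1^2 * x2^5 + 36 * x1^2 * x2^5 * x7 + 36 * x1^2 * x2^5 * x6 + 36 * x1^2 * x2^5 * x5 + 360 * x1^2 * x2^5 * x4 + 396 * x1^2 * x2^5 * x3 + 72 * x1^2 * x2^6 + 4464 * x1^3 + 698 * x1^3 * x7 + 14 * x1^3 * x7^2 + 698 * x1^3 * x6 + 56 * x1^3 * x6 * x7 + 14 * x1^3 * x6^2 + 1834 * x1^3 * x5 + 92 * x1^3 * x5 * x7 + 184 * x1^3 * x5 * x6 + 4 * x1^3 * x5 * x6 * x7 + 2 * x1^3 * x5 * x6^2 + 70 * x1^3 * x5^2 + 4 * x1^3 * x5^2 * x6 + 8416 * x1^3 * x4 + 985 * x1^3 * x4 * x7 + 13 * x1^3 * x4 * x7^2 + 985 * x1^3 * x4 * x6 + 52 * x1^3 * x4 * x6 * x7 + 13 * x1^3 * x4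 * x6^2 + 2769 * x1^3 * x4 * x5 + 92 * x1^3 * x4 * x5 * x7 + 182 * x1^3 * x4 * x5 * x6 + 2 * x1^3 * x4 * x5 * x6 * x7 + x1^3 * x4 * x5 * x6^2 + 71 * x1^3 * x4 * x5^2 + 2 * x1^3 * x4 * x5^2 * x6 + 5884 * x1^3 * x4^2 + 460 * x1^3 * x4^2 * x7 + 3 * x1^3 * x4^2 * x7^2 + 460 * x1^3 * x4^2 * x6 + 12 * x1^3 * x4^2 * x6 * x7 + 3 * x1^3 * x4^2 * x6^2 + 1392 * x1^3 * x4^2 * x5 + 23 * x1^3 * x4^2 * x5 * x7 + 45 * x1^3 * x4^2 * x5 * x6 + 18 * x1^3 * x4^2 * x5^2 + 1804 * x1^3 * x4^3 + 71 * x1^3 * x4^3 * x7 + 71 * x1^3 * x4^3 * x6 + 233 * x1^3 * x4^3 * x5 + 204 * x1^3 * x4^4 + 10814 * x1^3 * x3 + 1249 * x1^3 * x3 * x7 + 17 * x1^3 * x3 * x7^2 + 1345 * x1^3 * x3 * x6 + 72 * x1^3 * x3 * x6 * x7 + 19 * x1^3 * x3 * x6^2 + 2989 * x1^3 * x3 * x5 + 100 * x1^3 * x3 * x5 * x7 + 206 * x1^3 * x3 * x5 * x6 + 2 * x1^3 * x3 * x5 * x6 * x7 + x1^3 * x3 * x5 * x6^2 + 75 * x1^3 * x3 * x5^2 + 2 * x1^3 * x3 * x5^2 * x6 + 16591 * x1^3 * x3 * x4 + 1322 * x1^3 * x3 * x4 * x7 + 10 * x1^3 * x3 * x4 * x7^2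 + 1416 * x1^3 * x3 * x4 * x6 + 42 * x1^3 * x3 * x4 * x6 * x7 + 11 * x1^3 * x3 * x4 * x6^2 + 3196 * x1^3 * x3 * x4 * x5 + 56 * x1^3 * x3 * x4 * x5 * x7 + 114 * x1^3 * x3 * x4 * x5 * x6 + 42 * x1^3 * x3 * x4 * x5^2 + 8978 * x1^3 * x3 * x4^2 + 414 * x1^3 * x3 * x4^2 * x7 + x1^3 * x3 * x4^2 * x7^2 + 437 * x1^3 * x3 * x4^2 * x6 + 4 * x1^3 * x3 * x4^2 * x6 * x7 + x1^3 * x3 * x4^2 * x6^2 + 944 * x1^3 * x3 * x4^2 * x5 + 3 * x1^3 * x3 * x4^2 * x5 * x7 + 6 * x1^3 * x3 * x4^2 * x5 * x6 + 2 * x1^3 * x3 * x4^2 * x5^2 + 1963 * x1^3 * x3 * x4^3 + 33 * x1^3 * x3 * x4^3 * x7 + 33 * x1^3 * x3 * x4^3 * x6 + 47 * x1^3 * x3 * x4^3 * x5 + 135 * x1^3 * x3 * x4^4 + 10593 * x1^3 * x3^2 + 862 * x1^3 * x3^2 * x7 + 7 * x1^3 * x3^2 * x7^2 + 968 * x1^3 * x3^2 * x6 + 30 * x1^3 * x3^2 * x6 * x7 + 8 * x1^3 * x3^2 * x6^2 + 1798 * x1^3 * x3^2 * x5 + 33 * x1^3 * x3^2 * x5 * x7 + 69 * x1^3 * x3^2 * x5 * x6 + 24 * x1^3 * x3^2 * x5^2 + 12531 * x1^3 * x3^2 * x4 + 625 * x1^3 * x3^2 * x4 * x7 + 2 * x1^3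 * x3^2 * x4 * x7^2 + 683 * x1^3 * x3^2 * x4 * x6 + 8 * x1^3 * x3^2 * x4 * x6 * x7 + 2 * x1^3 * x3^2 * x4 * x6^2 + 1192 * x1^3 * x3^2 * x4 * x5 + 6 * x1^3 * x3^2 * x4 * x5 * x7 + 12 * x1^3 * x3^2 * x4 * x5 * x6 + 4 * x1^3 * x3^2 * x4 * x5^2 + 4787 * x1^3 * x3^2 * x4^2 + 108 * x1^3 * x3^2 * x4^2 * x7 + 111 * x1^3 * x3^2 * x4^2 * x6 + 148 * x1^3 * x3^2 * x4^2 * x5 + 614 * x1^3 * x3^2 * x4^3 + 2 * x1^3 * x3^2 * x4^3 * x7 + 2 * x1^3 * x3^2 * x4^3 * x6 + 2 * x1^3 * x3^2 * x4^3 * x5 + 12 * x1^3 * x3^2 * x4^4 + 5339 * x1^3 * x3^3 + 282 * x1^3 * x3^3 * x7 + x1^3 * x3^3 * x7^2 + 317 * x1^3 * x3^3 * x6 + 4 * x1^3 * x3^3 * x6 * x7 + x1^3 * x3^3 * x6^2 + 481 * x1^3 * x3^3 * x5 + 3 * x1^3 * x3^3 * x5 * x7 + 6 * x1^3 * x3^3 * x5 * x6 + 2 * x1^3 * x3^3 * x5^2 + 4474 * x1^3 * x3^3 * x4 + 117 * x1^3 * x3^3 * x4 * x7 + 123 * x1^3 * x3^3 * x4 * x6 + 155 * x1^3 * x3^3 * x4 * x5 + 1019 * x1^3 * x3^3 * x4^2 + 6 * x1^3 * x3^3 * x4^2 * x7 + 6 * x1^3 * x3^3 * x4^2 * x6 +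 6 * x1^3 * x3^3 * x4^2 * x5 + 46 * x1^3 * x3^3 * x4^3 + 1446 * x1^3 * x3^4 + 42 * x1^3 * x3^4 * x7 + 45 * x1^3 * x3^4 * x6 + 54 * x1^3 * x3^4 * x5 + 736 * x1^3 * x3^4 * x4 + 6 * x1^3 * x3^4 * x4 * x7 + 6 * x1^3 * x3^4 * x4 * x6 + 6 * x1^3 * x3^4 * x4 * x5 + 66 * x1^3 * x3^4 * x4^2 + 196 * x1^3 * x3^5 + 2 * x1^3 * x3^5 * x7 + 2 * x1^3 * x3^5 * x6 + 2 * x1^3 * x3^5 * x5 + 42 * x1^3 * x3^5 * x4 + 10 * x1^3 * x3^6 + 13212 * x1^3 * x2 + 1609 * x1^3 * x2 * x7 + 23 * x1^3 * x2 * x7^2 + 1609 * x1^3 * x2 * x6 + 92 * x1^3 * x2 * x6 * x7 + 23 * x1^3 * x2 * x6^2 + 3313 * x1^3 * x2 * x5 + 114 * x1^3 * x2 * x5 * x7 + 228 * x1^3 * x2 * x5 * x6 + 2 * x1^3 * x2 * x5 * x6 * x7 + x1^3 * x2 * x5 * x6^2 + 79 * x1^3 * x2 * x5^2 + 2 * x1^3 * x2 * x5^2 * x6 + 21414 * x1^3 * x2 * x4 + 1818 * x1^3 * x2 * x4 * x7 + 15 * x1^3 * x2 * x4 * x7^2 + 1818 * x1^3 * x2 * x4 * x6 + 60 * x1^3 * x2 * x4 * x6 * x7 + 15 * x1^3 * x2 * x4 * x6^2 + 3718 * x1^3 * x2 * x4 * x5 + 69 * x1^3 * x2 * x4 * x5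 * x7 + 137 * x1^3 * x2 * x4 * x5 * x6 + 46 * x1^3 * x2 * x4 * x5^2 + 12544 * x1^3 * x2 * x4^2 + 638 * x1^3 * x2 * x4^2 * x7 + 2 * x1^3 * x2 * x4^2 * x7^2 + 638 * x1^3 * x2 * x4^2 * x6 + 8 * x1^3 * x2 * x4^2 * x6 * x7 + 2 * x1^3 * x2 * x4^2 * x6^2 + 1222 * x1^3 * x2 * x4^2 * x5 + 6 * x1^3 * x2 * x4^2 * x5 * x7 + 12 * x1^3 * x2 * x4^2 * x5 * x6 + 3 * x1^3 * x2 * x4^2 * x5^2 + 3110 * x1^3 * x2 * x4^3 + 66 * x1^3 * x2 * x4^3 * x7 + 66 * x1^3 * x2 * x4^3 * x6 + 96 * x1^3 * x2 * x4^3 * x5 + 270 * x1^3 * x2 * x4^4 + 25721 * x1^3 * x2 * x3 + 2218 * x1^3 * x2 * x3 * x7 + 19 * x1^3 * x2 * x3 * x7^2 + 2336 * x1^3 * x2 * x3 * x6 + 78 * x1^3 * x2 * x3 * x6 * x7 + 20 * x1^3 * x2 * x3 * x6^2 + 4094 * x1^3 * x2 * x3 * x5 + 79 * x1^3 * x2 * x3 * x5 * x7 + 161 * x1^3 * x2 * x3 * x5 * x6 + 52 * x1^3 * x2 * x3 * x5^2 + 31938 * x1^3 * x2 * x3 * x4 + 1707 * x1^3 * x2 * x3 * x4 * x7 + 6 * x1^3 * x2 * x3 * x4 * x7^2 + 1777 * x1^3 * x2 * x3 * x4 * x6 + 24 * x1^3 * x2 * x3 * x4 * x6 * x7 + 6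 * x1^3 * x2 * x3 * x4 * x6^2 + 2924 * x1^3 * x2 * x3 * x4 * x5 + 18 * x1^3 * x2 * x3 * x4 * x5 * x7 + 36 * x1^3 * x2 * x3 * x4 * x5 * x6 + 10 * x1^3 * x2 * x3 * x4 * x5^2 + 13027 * x1^3 * x2 * x3 * x4^2 + 324 * x1^3 * x2 * x3 * x4^2 * x7 + 330 * x1^3 * x2 * x3 * x4^2 * x6 + 445 * x1^3 * x2 * x3 * x4^2 * x5 + 1826 * x1^3 * x2 * x3 * x4^3 + 6 * x1^3 * x2 * x3 * x4^3 * x7 + 6 * x1^3 * x2 * x3 * x4^3 * x6 + 6 * x1^3 * x2 * x3 * x4^3 * x5 + 36 * x1^3 * x2 * x3 * x4^4 + 19293 * x1^3 * x2 * x3^2 + 1079 * x1^3 * x2 * x3^2 * x7 + 4 * x1^3 * x2 * x3^2 * x7^2 + 1161 * x1^3 * x2 * x3^2 * x6 + 16 * x1^3 * x2 * x3^2 * x6 * x7 + 4 * x1^3 * x2 * x3^2 * x6^2 + 1705 * x1^3 * x2 * x3^2 * x5 + 12 * x1^3 * x2 * x3^2 * x5 * x7 + 24 * x1^3 * x2 * x3^2 * x5 * x6 + 7 * x1^3 * x2 * x3^2 * x5^2 + 16834 * x1^3 * x2 * x3^2 * x4 + 468 * x1^3 * x2 * x3^2 * x4 * x7 + 486 * x1^3 * x2 * x3^2 * x4 * x6 + 616 * x1^3 * x2 * x3^2 * x4 * x5 + 4015 * x1^3 * x2 * x3^2 * x4^2 + 24 * x1^3 * x2 * x3^2 * x4^2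 * x7 + 24 * x1^3 * x2 * x3^2 * x4^2 * x6 + 24 * x1^3 * x2 * x3^2 * x4^2 * x5 + 182 * x1^3 * x2 * x3^2 * x4^3 + 6890 * x1^3 * x2 * x3^3 + 210 * x1^3 * x2 * x3^3 * x7 + 222 * x1^3 * x2 * x3^3 * x6 + 267 * x1^3 * x2 * x3^3 * x5 + 3606 * x1^3 * x2 * x3^3 * x4 + 30 * x1^3 * x2 * x3^3 * x4 * x7 + 30 * x1^3 * x2 * x3^3 * x4 * x6 + 30 * x1^3 * x2 * x3^3 * x4 * x5 + 324 * x1^3 * x2 * x3^3 * x4^2 + 1147 * x1^3 * x2 * x3^4 + 12 * x1^3 * x2 * x3^4 * x7 + 12 * x1^3 * x2 * x3^4 * x6 + 12 * x1^3 * x2 * x3^4 * x5 + 246 * x1^3 * x2 * x3^4 * x4 + 68 * x1^3 * x2 * x3^5 + 15014 * x1^3 * x2^2 + 1368 * x1^3 * x2^2 * x7 + 12 * x1^3 * x2^2 * x7^2 + 1368 * x1^3 * x2^2 * x6 + 48 * x1^3 * x2^2 * x6 * x7 + 12 * x1^3 * x2^2 * x6^2 + 2298 * x1^3 * x2^2 * x5 + 46 * x1^3 * x2^2 * x5 * x7 + 92 * x1^3 * x2^2 * x5 * x6 + 28 * x1^3 * x2^2 * x5^2 + 19394 * x1^3 * x2^2 * x4 + 1104 * x1^3 * x2^2 * x4 * x7 + 4 * x1^3 * x2^2 * x4 * x7^2 + 1104 * x1^3 * x2^2 * x4 * x6 + 16 * x1^3 * x2^2 * x4 * x6 * x7 +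 4 * x1^3 * x2^2 * x4 * x6^2 + 1743 * x1^3 * x2^2 * x4 * x5 + 12 * x1^3 * x2^2 * x4 * x5 * x7 + 24 * x1^3 * x2^2 * x4 * x5 * x6 + 6 * x1^3 * x2^2 * x4 * x5^2 + 8362 * x1^3 * x2^2 * x4^2 + 228 * x1^3 * x2^2 * x4^2 * x7 + 228 * x1^3 * x2^2 * x4^2 * x6 + 306 * x1^3 * x2^2 * x4^2 * x5 + 1286 * x1^3 * x2^2 * x4^3 + 6 * x1^3 * x2^2 * x4^3 * x7 + 6 * x1^3 * x2^2 * x4^3 * x6 + 6 * x1^3 * x2^2 * x4^3 * x5 + 36 * x1^3 * x2^2 * x4^4 + 22522 * x1^3 * x2^2 * x3 + 1334 * x1^3 * x2^2 * x3 * x7 + 5 * x1^3 * x2^2 * x3 * x7^2 + 1381 * x1^3 * x2^2 * x3 * x6 + 20 * x1^3 * x2^2 * x3 * x6 * x7 + 5 * x1^3 * x2^2 * x3 * x6^2 + 1978 * x1^3 * x2^2 * x3 * x5 + 15 * x1^3 * x2^2 * x3 * x5 * x7 + 30 * x1^3 * x2^2 * x3 * x5 * x6 + 8 * x1^3 * x2^2 * x3 * x5^2 + 20437 * x1^3 * x2^2 * x3 * x4 + 609 * x1^3 * x2^2 * x3 * x4 * x7 + 621 * x1^3 * x2^2 * x3 * x4 * x6 + 785 * x1^3 * x2^2 * x3 * x4 * x5 + 5169 * x1^3 * x2^2 * x3 * x4^2 + 36 * x1^3 * x2^2 * x3 * x4^2 * x7 + 36 * x1^3 * x2^2 * x3 *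 x4^2 * x6 + 36 * x1^3 * x2^2 * x3 * x4^2 * x5 + 270 * x1^3 * x2^2 * x3 * x4^3 + 12063 * x1^3 * x2^2 * x3^2 + 390 * x1^3 * x2^2 * x3^2 * x7 + 405 * x1^3 * x2^2 * x3^2 * x6 + 486 * x1^3 * x2^2 * x3^2 * x5 + 6572 * x1^3 * x2^2 * x3^2 * x4 + 60 * x1^3 * x2^2 * x3^2 * x4 * x7 + 60 * x1^3 * x2^2 * x3^2 * x4 * x6 + 60 * x1^3 * x2^2 * x3^2 * x4 * x5 + 636 * x1^3 * x2^2 * x3^2 * x4^2 + 2676 * x1^3 * x2^2 * x3^3 + 30 * x1^3 * x2^2 * x3^3 * x7 + 30 * x1^3 * x2^2 * x3^3 * x6 + 30 * x1^3 * x2^2 * x3^3 * x5 + 600 * x1^3 * x2^2 * x3^3 * x4 + 198 * x1^3 * x2^2 * x3^4 + 8550 * x1^3 * x2^3 + 537 * x1^3 * x2^3 * x7 + 2 * x1^3 * x2^3 * x7^2 + 537 * x1^3 * x2^3 * x6 + 8 * x1^3 * x2^3 * x6 * x7 + 2 * x1^3 * x2^3 * x6^2 + 754 * x1^3 * x2^3 * x5 + 6 * x1^3 * x2^3 * x5 * x7 + 12 * x1^3 * x2^3 * x5 * x6 + 3 * x1^3 * x2^3 * x5^2 + 8050 * x1^3 * x2^3 * x4 + 258 * x1^3 * x2^3 * x4 * x7 + 258 * x1^3 * x2^3 * x4 * x6 + 324 * x1^3 * x2^3 * x4 * x5 + 2160 * x1^3 * x2^3 * x4^2 + 18 * x1^3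 * x2^3 * x4^2 * x7 + 18 * x1^3 * x2^3 * x4^2 * x6 + 18 * x1^3 * x2^3 * x4^2 * x5 + 132 * x1^3 * x2^3 * x4^3 + 9213 * x1^3 * x2^3 * x3 + 318 * x1^3 * x2^3 * x3 * x7 + 324 * x1^3 * x2^3 * x3 * x6 + 387 * x1^3 * x2^3 * x3 * x5 + 5244 * x1^3 * x2^3 * x3 * x4 + 54 * x1^3 * x2^3 * x3 * x4 * x7 + 54 * x1^3 * x2^3 * x3 * x4 * x6 + 54 * x1^3 * x2^3 * x3 * x4 * x5 + 558 * x1^3 * x2^3 * x3 * x4^2 + 3093 * x1^3 * x2^3 * x3^2 + 38 * x1^3 * x2^3 * x3^2 * x7 + 38 * x1^3 * x2^3 * x3^2 * x6 + 38 * x1^3 * x2^3 * x3^2 * x5 + 738 * x1^3 * x2^3 * x3^2 * x4 + 310 * x1^3 * x2^3 * x3^3 + 2594 * x1^3 * x2^4 + 96 * x1^3 * x2^4 * x7 + 96 * x1^3 * x2^4 * x6 + 114 * x1^3 * x2^4 * x5 + 1542 * x1^3 * x2^4 * x4 + 18 * x1^3 * x2^4 * x4 * x7 + 18 * x1^3 * x2^4 * x4 * x6 + 18 * x1^3 * x2^4 * x4 * x5 + 180 * x1^3 * x2^4 * x4^2 + 1766 * x1^3 * x2^4 * x3 + 24 * x1^3 * x2^4 * x3 * x7 + 24 * x1^3 * x2^4 * x3 * x6 + 24 * x1^3 * x2^4 * x3 * x5 + 450 * x1^3 * x2^4 * x3 * x4 + 272 * x1^3 * x2^4 * x3^2 +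 398 * x1^3 * x2^5 + 6 * x1^3 * x2^5 * x7 + 6 * x1^3 * x2^5 * x6 + 6 * x1^3 * x2^5 * x5 + 108 * x1^3 * x2^5 * x4 + 126 * x1^3 * x2^5 * x3 + 24 * x1^3 * x2^6 + 756 * x1^4 + 52 * x1^4 * x7 + 52 * x1^4 * x6 + 204 * x1^4 * x5 + 4 * x1^4 * x5 * x7 + 8 * x1^4 * x5 * x6 + 4 * x1^4 * x5^2 + 1404 * x1^4 * x4 + 72 * x1^4 * x4 * x7 + 72 * x1^4 * x4 * x6 + 304 * x1^4 * x4 * x5 + 4 * x1^4 * x4 * x5 * x7 + 8 * x1^4 * x4 * x5 * x6 + 4 * x1^4 * x4 * x5^2 + 969 * x1^4 * x4^2 + 33 * x1^4 * x4^2 * x7 + 33 * x1^4 * x4^2 * x6 + 151 * x1^4 * x4^2 * x5 + x1^4 * x4^2 * x5 * x7 + 2 * x1^4 * x4^2 * x5 * x6 + x1^4 * x4^2 * x5^2 + 294 * x1^4 * x4^3 + 5 * x1^4 * x4^3 * x7 + 5 * x1^4 * x4^3 * x6 + 25 * x1^4 * x4^3 * x5 + 33 * x1^4 * x4^4 + 1800 * x1^4 * x3 + 92 * x1^4 * x3 * x7 + 96 * x1^4 * x3 * x6 + 324 * x1^4 * x3 * x5 + 4 * x1^4 * x3 * x5 * x7 + 8 * x1^4 * x3 * x5 * x6 + 4 * x1^4 * x3 * x5^2 + 2694 * x1^4 * x3 * x4 + 94 * x1^4 * x3 * x4 * x7 + 98 * x1^4 * x3 * x4 * x6 + 334 * x1^4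 * x3 * x4 * x5 + 2 * x1^4 * x3 * x4 * x5 * x7 + 4 * x1^4 * x3 * x4 * x5 * x6 + 2 * x1^4 * x3 * x4 * x5^2 + 1417 * x1^4 * x3 * x4^2 + 28 * x1^4 * x3 * x4^2 * x7 + 29 * x1^4 * x3 * x4^2 * x6 + 92 * x1^4 * x3 * x4^2 * x5 + 298 * x1^4 * x3 * x4^3 + 2 * x1^4 * x3 * x4^3 * x7 + 2 * x1^4 * x3 * x4^3 * x6 + 3 * x1^4 * x3 * x4^3 * x5 + 19 * x1^4 * x3 * x4^4 + 1725 * x1^4 * x3^2 + 61 * x1^4 * x3^2 * x7 + 65 * x1^4 * x3^2 * x6 + 183 * x1^4 * x3^2 * x5 + x1^4 * x3^2 * x5 * x7 + 2 * x1^4 * x3^2 * x5 * x6 + x1^4 * x3^2 * x5^2 + 1964 * x1^4 * x3^2 * x4 + 41 * x1^4 * x3^2 * x4 * x7 + 43 * x1^4 * x3^2 * x4 * x6 + 109 * x1^4 * x3^2 * x4 * x5 + 712 * x1^4 * x3^2 * x4^2 + 6 * x1^4 * x3^2 * x4^2 * x7 + 6 * x1^4 * x3^2 * x4^2 * x6 + 9 * x1^4 * x3^2 * x4^2 * x5 + 83 * x1^4 * x3^2 * x4^3 + x1^4 * x3^2 * x4^4 + 841 * x1^4 * x3^3 + 18 * x1^4 * x3^3 * x7 + 19 * x1^4 * x3^3 * x6 + 42 * x1^4 * x3^3 * x5 + 662 * x1^4 * x3^3 * x4 + 6 * x1^4 * x3^3 * x4 * x7 + 6 * x1^4 * x3^3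 * x4 * x6 + 9 * x1^4 * x3^3 * x4 * x5 + 135 * x1^4 * x3^3 * x4^2 + 4 * x1^4 * x3^3 * x4^3 + 215 * x1^4 * x3^4 + 2 * x1^4 * x3^4 * x7 + 2 * x1^4 * x3^4 * x6 + 3 * x1^4 * x3^4 * x5 + 97 * x1^4 * x3^4 * x4 + 6 * x1^4 * x3^4 * x4^2 + 26 * x1^4 * x3^5 + 4 * x1^4 * x3^5 * x4 + x1^4 * x3^6 + 2196 * x1^4 * x2 + 116 * x1^4 * x2 * x7 + 116 * x1^4 * x2 * x6 + 348 * x1^4 * x2 * x5 + 4 * x1^4 * x2 * x5 * x7 + 8 * x1^4 * x2 * x5 * x6 + 4 * x1^4 * x2 * x5^2 + 3450 * x1^4 * x2 * x4 + 126 * x1^4 * x2 * x4 * x7 + 126 * x1^4 * x2 * x4 * x6 + 370 * x1^4 * x2 * x4 * x5 + 2 * x1^4 * x2 * x4 * x5 * x7 + 4 * x1^4 * x2 * x4 * x5 * x6 + 2 * x1^4 * x2 * x4 * x5^2 + 1952 * x1^4 * x2 * x4^2 + 42 * x1^4 * x2 * x4^2 * x7 + 42 * x1^4 * x2 * x4^2 * x6 + 110 * x1^4 * x2 * x4^2 * x5 + 464 * x1^4 * x2 * x4^3 + 4 * x1^4 * x2 * x4^3 * x7 + 4 * x1^4 * x2 * x4^3 * x6 + 6 * x1^4 * x2 * x4^3 * x5 + 38 * x1^4 * x2 * x4^4 + 4194 * x1^4 * x2 * x3 + 154 * x1^4 * x2 * x3 * x7 + 158 * x1^4 * x2 * x3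 * x6 + 402 * x1^4 * x2 * x3 * x5 + 2 * x1^4 * x2 * x3 * x5 * x7 + 4 * x1^4 * x2 * x3 * x5 * x6 + 2 * x1^4 * x2 * x3 * x5^2 + 4994 * x1^4 * x2 * x3 * x4 + 110 * x1^4 * x2 * x3 * x4 * x7 + 112 * x1^4 * x2 * x3 * x4 * x6 + 254 * x1^4 * x2 * x3 * x4 * x5 + 1931 * x1^4 * x2 * x3 * x4^2 + 18 * x1^4 * x2 * x3 * x4^2 * x7 + 18 * x1^4 * x2 * x3 * x4^2 * x6 + 27 * x1^4 * x2 * x3 * x4^2 * x5 + 248 * x1^4 * x2 * x3 * x4^3 + 3 * x1^4 * x2 * x3 * x4^4 + 3054 * x1^4 * x2 * x3^2 + 68 * x1^4 * x2 * x3^2 * x7 + 70 * x1^4 * x2 * x3^2 * x6 + 144 * x1^4 * x2 * x3^2 * x5 + 2502 * x1^4 * x2 * x3^2 * x4 + 24 * x1^4 * x2 * x3^2 * x4 * x7 + 24 * x1^4 * x2 * x3^2 * x4 * x6 + 36 * x1^4 * x2 * x3^2 * x4 * x5 + 537 * x1^4 * x2 * x3^2 * x4^2 + 16 * x1^4 * x2 * x3^2 * x4^3 + 1035 * x1^4 * x2 * x3^3 + 10 * x1^4 * x2 * x3^3 * x7 + 10 * x1^4 * x2 * x3^3 * x6 + 15 * x1^4 * x2 * x3^3 * x5 + 482 * x1^4 * x2 * x3^3 * x4 + 30 * x1^4 * x2 * x3^3 * x4^2 + 155 * x1^4 * x2 * x3^4 + 24 * x1^4 * x2 * x3^4 * x4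 + 7 * x1^4 * x2 * x3^5 + 2469 * x1^4 * x2^2 + 93 * x1^4 * x2^2 * x7 + 93 * x1^4 * x2^2 * x6 + 219 * x1^4 * x2^2 * x5 + x1^4 * x2^2 * x5 * x7 + 2 * x1^4 * x2^2 * x5 * x6 + x1^4 * x2^2 * x5^2 + 3042 * x1^4 * x2^2 * x4 + 69 * x1^4 * x2^2 * x4 * x7 + 69 * x1^4 * x2^2 * x4 * x6 + 145 * x1^4 * x2^2 * x4 * x5 + 1235 * x1^4 * x2^2 * x4^2 + 12 * x1^4 * x2^2 * x4^2 * x7 + 12 * x1^4 * x2^2 * x4^2 * x6 + 18 * x1^4 * x2^2 * x4^2 * x5 + 172 * x1^4 * x2^2 * x4^3 + 3 * x1^4 * x2^2 * x4^4 + 3597 * x1^4 * x2^2 * x3 + 82 * x1^4 * x2^2 * x3 * x7 + 83 * x1^4 * x2^2 * x3 * x6 + 162 * x1^4 * x2^2 * x3 * x5 + 3050 * x1^4 * x2^2 * x3 * x4 + 30 * x1^4 * x2^2 * x3 * x4 * x7 + 30 * x1^4 * x2^2 * x3 * x4 * x6 + 45 * x1^4 * x2^2 * x3 * x4 * x5 + 690 * x1^4 * x2^2 * x3 * x4^2 + 24 * x1^4 * x2^2 * x3 * x4^3 + 1831 * x1^4 * x2^2 * x3^2 + 18 * x1^4 * x2^2 * x3^2 * x7 + 18 * x1^4 * x2^2 * x3^2 * x6 + 27 * x1^4 * x2^2 * x3^2 * x5 + 885 * x1^4 * x2^2 * x3^2 * x4 + 60 * x1^4 * x2^2 * x3^2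 * x4^2 + 367 * x1^4 * x2^2 * x3^3 + 60 * x1^4 * x2^2 * x3^3 * x4 + 21 * x1^4 * x2^2 * x3^4 + 1384 * x1^4 * x2^3 + 32 * x1^4 * x2^3 * x7 + 32 * x1^4 * x2^3 * x6 + 60 * x1^4 * x2^3 * x5 + 1210 * x1^4 * x2^3 * x4 + 12 * x1^4 * x2^3 * x4 * x7 + 12 * x1^4 * x2^3 * x4 * x6 + 18 * x1^4 * x2^3 * x4 * x5 + 288 * x1^4 * x2^3 * x4^2 + 12 * x1^4 * x2^3 * x4^3 + 1417 * x1^4 * x2^3 * x3 + 14 * x1^4 * x2^3 * x3 * x7 + 14 * x1^4 * x2^3 * x3 * x6 + 21 * x1^4 * x2^3 * x3 * x5 + 712 * x1^4 * x2^3 * x3 * x4 + 54 * x1^4 * x2^3 * x3 * x4^2 + 431 * x1^4 * x2^3 * x3^2 + 76 * x1^4 * x2^3 * x3^2 * x4 + 34 * x1^4 * x2^3 * x3^3 + 406 * x1^4 * x2^4 + 4 * x1^4 * x2^4 * x7 + 4 * x1^4 * x2^4 * x6 + 6 * x1^4 * x2^4 * x5 + 212 * x1^4 * x2^4 * x4 + 18 * x1^4 * x2^4 * x4^2 + 251 * x1^4 * x2^4 * x3 + 48 * x1^4 * x2^4 * x3 * x4 + 31 * x1^4 * x2^4 * x3^2 + 58 * x1^4 * x2^5 + 12 * x1^4 * x2^5 * x4 + 15 * x1^4 * x2^5 * x3 + 3 * x1^4 * x2^6 + 48 * x1^5 + 8 * x1^5 * x5 + 88 * x1^5 * x4 + 12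 * x1^5 * x4 * x5 + 60 * x1^5 * x4^2 + 6 * x1^5 * x4^2 * x5 + 18 * x1^5 * x4^3 + x1^5 * x4^3 * x5 + 2 * x1^5 * x4^4 + 112 * x1^5 * x3 + 12 * x1^5 * x3 * x5 + 164 * x1^5 * x3 * x4 + 12 * x1^5 * x3 * x4 * x5 + 84 * x1^5 * x3 * x4^2 + 3 * x1^5 * x3 * x4^2 * x5 + 17 * x1^5 * x3 * x4^3 + x1^5 * x3 * x4^4 + 104 * x1^5 * x3^2 + 6 * x1^5 * x3^2 * x5 + 114 * x1^5 * x3^2 * x4 + 3 * x1^5 * x3^2 * x4 * x5 + 39 * x1^5 * x3^2 * x4^2 + 4 * x1^5 * x3^2 * x4^3 + 48 * x1^5 * x3^3 + x1^5 * x3^3 * x5 + 35 * x1^5 * x3^3 * x4 + 6 * x1^5 * x3^3 * x4^2 + 11 * x1^5 * x3^4 + 4 * x1^5 * x3^4 * x4 + x1^5 * x3^5 + 136 * x1^5 * x2 + 12 * x1^5 * x2 * x5 + 208 * x1^5 * x2 * x4 + 12 * x1^5 * x2 * x4 * x5 + 114 * x1^5 * x2 * x4^2 + 3 * x1^5 * x2 * x4^2 * x5 + 26 * x1^5 * x2 * x4^3 + 2 * x1^5 * x2 * x4^4 + 252 * x1^5 * x2 * x3 + 12 * x1^5 * x2 * x3 * x5 + 288 * x1^5 * x2 * x3 * x4 + 6 * x1^5 * x2 * x3 * x4 * x5 + 105 * x1^5 * x2 * x3 * x4^2 + 12 * x1^5 * x2 * x3 * x4^3 + 174 * x1^5 *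 x2 * x3^2 + 3 * x1^5 * x2 * x3^2 * x5 + 132 * x1^5 * x2 * x3^2 * x4 + 24 * x1^5 * x2 * x3^2 * x4^2 + 53 * x1^5 * x2 * x3^3 + 20 * x1^5 * x2 * x3^3 * x4 + 6 * x1^5 * x2 * x3^4 + 148 * x1^5 * x2^2 + 6 * x1^5 * x2^2 * x5 + 174 * x1^5 * x2^2 * x4 + 3 * x1^5 * x2^2 * x4 * x5 + 66 * x1^5 * x2^2 * x4^2 + 8 * x1^5 * x2^2 * x4^3 + 204 * x1^5 * x2^2 * x3 + 3 * x1^5 * x2^2 * x3 * x5 + 159 * x1^5 * x2^2 * x3 * x4 + 30 * x1^5 * x2^2 * x3 * x4^2 + 93 * x1^5 * x2^2 * x3^2 + 36 * x1^5 * x2^2 * x3^2 * x4 + 14 * x1^5 * x2^2 * x3^3 + 78 * x1^5 * x2^3 + x1^5 * x2^3 * x5 + 62 * x1^5 * x2^3 * x4 + 12 * x1^5 * x2^3 * x4^2 + 71 * x1^5 * x2^3 * x3 + 28 * x1^5 * x2^3 * x3 * x4 + 16 * x1^5 * x2^3 * x3^2 + 20 * x1^5 * x2^4 + 8 * x1^5 * x2^4 * x4 + 9 * x1^5 * x2^4 * x3 + 2 * x1^5 * x2^5))"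
    unfolding assms S_def T_def
    by (simp only: of_nat_add of_nat_mult of_nat_power of_nat_numeral of_nat_1) algebra
  show ?thesis unfolding eq by (rule pos_int_add) simp
qed

theorem lemma3p1:
  fixes n m k l s t i :: int
  assumes "n > 0" "m > 0" "k > 0" "l > 0" "s > 0" "t > 0" "i > 0"
    and "min m n \<ge> (t + 1) * (k - t + 1)"
    and "k \<ge> l" "l > t" "t \<ge> 3"
    and "i + 2 \<le> s" "s \<le> i + k - t"
    and "t + 2 \<le> i" "i \<le> k"
  shows "real_of_int ((m - l + t - i) * (n - s - k + i) * S n s i k * S m s (s + t - i) l)
       / real_of_int ((m - s + 1) * (n - s + 1) * T n s i k * T m s (s + t - i) l) > 1"
proof -
  have hn: "n \<ge> (t + 1) * (k - t + 1)" and hm: "m \<ge> (t + 1) * (k - t + 1)"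
    using assms(8) by auto
  have N4: "(t + 1) * (k - t - 1) \<ge> 4 * (k - t - 1)"
    by (rule mult_right_mono) (use assms in auto)
  have Neq: "(t + 1) * (k - t + 1) = (t + 1) * (k - t - 1) + 2 * (t + 1)"
    by (simp add: algebra_simps)
  have Nb: "(t + 1) * (k - t + 1) \<ge> 4 * (k - t - 1) + 2 * (t + 1)"
    using N4 Neq by linarith
  define nu where "nu = (m - l + t - i) * (n - s - k + i) * S n s i k * S m s (s + t - i) l"
  define de where "de = (m - s + 1) * (n - s + 1) * T n s i k * T m s (s + t - i) l"
  have nb: "n \<ge> 4 * (k - t - 1) + 2 * (t + 1)" using hn Nb by linarith
  have mb: "m \<ge> 4 * (k - t - 1) + 2 * (t + 1)" using hm Nb by linarith
  have ga: "n - s - k + i > 0" using nb assms(3,11,13,14,15) by arith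
  have gb: "m - l + t - i + 1 - (i - t) \<ge> 0" using mb assms(3,9,11,13,14,15) by arith
  have T1: "T n s i k > 0"
  proof -
    have "T n s i k = i * ((n - s - k + i) + 1) + (s - i) * (k - i + 1)"
      unfolding T_def by (simp add: algebra_simps)
    moreover have "i * ((n - s - k + i) + 1) > 0" using ga assms by simp
    moreover have "(s - i) * (k - i + 1) > 0" using assms by simp
    ultimately show ?thesis by linarith
  qed
  have T2: "T m s (s + t - i) l > 0"
  proof -
    have "T m s (s + t - i) l = (s + t - i) * (m - l + t - i + 1 - (i - t)) + (i - t) + (i - t) * l"
      unfolding T_def by (simp add: algebra_simps)
    moreover have "(s + t - i) * (m - l + t - i + 1 - (i - t)) \<ge> 0" using gb assms by simp
    moreover have "(i - t) * l > 0" using assms by simp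
    moreover have "i - t > 0" using assms by simp
    ultimately show ?thesis by linarith
  qed
  have u: "n - s + 1 > 0" using ga assms by linarith
  have w: "m - s + 1 > 0" using mb assms(3,9,11,13,14,15) by arith
  have de_pos: "de > 0" unfolding de_def using T1 T2 u w by simp
  have diff: "nu - de > 0"
  proof (cases "s - i \<le> i - t")
    case True
    define x1 where "x1 = nat (t - 3)"
    define x2 where "x2 = nat (s - i - 2)"
    define x3 where "x3 = nat ((i - t) - (s - i))"
    define x4 where "x4 = nat (k - i)"
    define x5 where "x5 = nat (k - l)"
    define x6 where "x6 = nat (n - (t + 1) * (k - t + 1))"
    define x7 where "x7 = nat (m - (t + 1) * (k - t + 1))"
    have e1: "int x1 + 4 = t + 1" "int x2 + int x3 + int x4 + 3 = k - t + 1"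
      unfolding x1_def x2_def x3_def x4_def using assms True by auto
    show ?thesis unfolding nu_def de_def
    proof (rule poly_pos1[of t x1 i x2 x3 s k x4 l x5 n x6 m x7])
      show "t = int x1 + 3" using e1 by linarith
      show "i = int x1 + int x2 + int x3 + 5" unfolding x1_def x2_def x3_def using assms True by auto
      show "s = int x1 + 2 * int x2 + int x3 + 7" unfolding x1_def x2_def x3_def using assms True by auto
      show "k = int x1 + int x2 + int x3 + int x4 + 5" using e1 by linarith
      show "l = int x1 + int x2 + int x3 + int x4 + 5 - int x5" using e1 assms unfolding x5_def by auto
      show "n = (int x1 + 4) * (int x2 + int x3 + int x4 + 3) + int x6" unfolding e1 x6_def using hn by auto
      show "m = (int x1 + 4) * (int x2 + int x3 + int x4 + 3) + int x7" unfolding e1 x7_def using hm by auto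
    qed
  next
    case False
    define x1 where "x1 = nat (t - 3)"
    define x2 where "x2 = nat (i - t - 2)"
    define x3 where "x3 = nat ((s - i) - (i - t))"
    define x4 where "x4 = nat (k - t - (s - i))"
    define x5 where "x5 = nat (k - l)"
    define x6 where "x6 = nat (n - (t + 1) * (k - t + 1))"
    define x7 where "x7 = nat (m - (t + 1) * (k - t + 1))"
    have e1: "int x1 + 4 = t + 1" "int x2 + int x3 + int x4 + 3 = k - t + 1"
      unfolding x1_def x2_def x3_def x4_def using assms False by auto
    show ?thesis unfolding nu_def de_def
    proof (rule poly_pos2[of t x1 i x2 s x3 k x4 l x5 n x6 m x7])
      show "t = int x1 + 3" using e1 by linarith
      show "i = int x1 + int x2 + 5" unfolding x1_def x2_def using assms False by auto
      show "s = int x1 + 2 * int x2 + int x3 + 7" unfolding x1_def x2_def x3_def using assms False by auto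
      show "k = int x1 + int x2 + int x3 + int x4 + 5" using e1 by linarith
      show "l = int x1 + int x2 + int x3 + int x4 + 5 - int x5" using e1 assms unfolding x5_def by auto
      show "n = (int x1 + 4) * (int x2 + int x3 + int x4 + 3) + int x6" unfolding e1 x6_def using hn by auto
      show "m = (int x1 + 4) * (int x2 + int x3 + int x4 + 3) + int x7" unfolding e1 x7_def using hm by auto
    qed
  qed
  have "real_of_int de > 0" using de_pos by simp
  moreover have "real_of_int nu > real_of_int de" using diff by simp
  ultimately have "real_of_int nu / real_of_int de > 1" by simp
  then show ?thesis unfolding nu_def de_def .
qed

end
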